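(* With $u_e:\mathbf{k}\to\text{Ш}_e(A)$, $c\mapsto c1_A$, the quintuple $(\text{Ш}_e(A),\diamond,u_e,\Delta_e,\varepsilon_e)$ is a bialgebra.
   Context: $\mathbf{k}$ is a commutative unitary ring, $\lambda,\kappa\in\mathbf{k}$, $\mu$ a root of $t^2-\lambda t+\kappa$. An extended Rota-Baxter operator of weight $(\lambda,\kappa)$ satisfies $P(x)P(y)=P(xP(y))+P(P(x)y)+\lambda P(xy)+\kappa xy$. $A=(A,m_A,\mu_A,\Delta_A,\varepsilon_A)$ is a commutative bialgebra and $(\text{Ш}_e(A),\diamond,P_e,j_A)$ is the free commutative extended Rota-Baxter algebra of weight $(\lambda,\kappa)$ on $A$, with $\text{Ш}_e(A)=\bigoplus_{n\ge1}A^{\otimes n}$, $P_e(\mathfrak{a})=1_A\otimes\mathfrak{a}$, and the recursively defined generalized quasi-shuffle product $\diamond$. $\varepsilon_e:\text{Ш}_e(A)\to\mathbf{k}$ is the unique extended Rota-Baxter algebra homomorphism with $\varepsilon_e\circ j_A=\varepsilon_A$, $\varepsilon_e\circ P_e=-\mu\varepsilon_e$; $\Delta_e:\text{Ш}_e(A)\to\text{Ш}_e(A)\bar\otimes\text{Ш}_e(A)$ is the unique extended Rota-Baxter algebra homomorphism with $\Delta_e\circ j_A=\Delta_A$ and $\Delta_e\circ P_e=\bar P\circ\Delta_e$, where $\bar P(\mathfrak{a}\bar\otimes\mathfrak{b})=P_e(\mathfrak{a})\bar\otimes\varepsilon_e(\mathfrak{b})1_A+\mu\mathfrak{a}\bar\otimes\varepsilon_e(\mathfrak{b})1_A+\mathfrak{a}\bar\otimes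 P_e(\mathfrak{b})$ and $\bar\otimes$ is the tensor product between copies of $\text{Ш}_e(A)$. *)

theory Defs
  imports Main "HOL.Modules" "HOL-Library.Poly_Mapping"
begin

text \<open>A tensor word of type 'a list list represents a pure tensor
  (v_1) (x) ... (x) (v_m), each v_i = a_1 (x) ... (x) a_n being a pure tensor of
  A^{(x) n}; the outer list ranges over the tensor factors of Sh_e(A)^{(x) m}.
  The empty outer list [] represents the scalar 1 in k = Sh_e(A)^{(x) 0}.
  Elements are finite k-linear combinations of words, taken modulo the
  multilinearity relations (this is the usual construction of tensor products
  as a quotient of a free module).  Words containing an empty inner list are
  killed, since Sh_e(A) is the sum over n >= 1 only.\<close>

type_synonym ('a,'k) tw = "'a list list \<Rightarrow>\<^sub>0 'k"

definition tsmult :: "'k::comm_ring_1 \<Rightarrow> ('w \<Rightarrow>\<^sub>0 'k) \<Rightarrow> ('w \<Rightarrow>\<^sub>0 'k)" where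
  "tsmult c x = Poly_Mapping.map (\<lambda>v. c * v) x"

definition wd :: "'w \<Rightarrow> ('w \<Rightarrow>\<^sub>0 'k::comm_ring_1)" where
  "wd w = Poly_Mapping.single w 1"

definition lin :: "('w \<Rightarrow> ('v \<Rightarrow>\<^sub>0 'k::comm_ring_1)) \<Rightarrow> ('w \<Rightarrow>\<^sub>0 'k) \<Rightarrow> ('v \<Rightarrow>\<^sub>0 'k)" where
  "lin f x = (\<Sum>w\<in>Poly_Mapping.keys x. tsmult (Poly_Mapping.lookup x w) (f w))"

definition linf :: "('w \<Rightarrow> 'k::comm_ring_1) \<Rightarrow> ('w \<Rightarrow>\<^sub>0 'k) \<Rightarrow> 'k" where
  "linf f x = (\<Sum>w\<in>Poly_Mapping.keys x. Poly_Mapping.lookup x w * f w)"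

definition bilin :: "('w \<Rightarrow> 'u \<Rightarrow> ('v \<Rightarrow>\<^sub>0 'k::comm_ring_1)) \<Rightarrow> ('w \<Rightarrow>\<^sub>0 'k) \<Rightarrow> ('u \<Rightarrow>\<^sub>0 'k) \<Rightarrow> ('v \<Rightarrow>\<^sub>0 'k)" where
  "bilin f x y = lin (\<lambda>v. lin (\<lambda>w. f v w) y) x"

definition tensor_rels :: "('k::comm_ring_1 \<Rightarrow> 'a::ab_group_add \<Rightarrow> 'a) \<Rightarrow> ('a,'k) tw set" where
  "tensor_rels s =
     {wd (us @ (xs @ (x + y) # ys) # vs) - wd (us @ (xs @ x # ys) # vs) - wd (us @ (xs @ y # ys) # vs)
       | us xs x y ys vs. True}
   \<union> {wd (us @ (xs @ s c x # ys) # vs) - tsmult c (wd (us @ (xs @ x # ys) # vs))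
       | us xs c x ys vs. True}
   \<union> {wd w | w. [] \<in> set w}"

inductive_set kspan :: "('w \<Rightarrow>\<^sub>0 'k::comm_ring_1) set \<Rightarrow> ('w \<Rightarrow>\<^sub>0 'k) set" for G where
  kspan_zero: "0 \<in> kspan G"
| kspan_step: "x \<in> kspan G \<Longrightarrow> g \<in> G \<Longrightarrow> tsmult c g + x \<in> kspan G"

definition teq :: "('k::comm_ring_1 \<Rightarrow> 'a::ab_group_add \<Rightarrow> 'a) \<Rightarrow> ('a,'k) tw \<Rightarrow> ('a,'k) tw \<Rightarrow> bool" where
  "teq s x y \<longleftrightarrow> x - y \<in> kspan (tensor_rels s)"

text \<open>Representatives of elements of Sh_e(A) (one tensor factor) and of Sh_e(A) (x) Sh_e(A).\<close>
definition Sh :: "('a,'k::comm_ring_1) tw set" where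
  "Sh = {x. \<forall>w\<in>Poly_Mapping.keys x. \<exists>v. w = [v]}"

definition Sh2 :: "('a,'k::comm_ring_1) tw set" where
  "Sh2 = {x. \<forall>w\<in>Poly_Mapping.keys x. \<exists>v u. w = [v, u]}"

definition tprod :: "('a,'k::comm_ring_1) tw \<Rightarrow> ('a,'k) tw \<Rightarrow> ('a,'k) tw" where
  "tprod x y = bilin (\<lambda>v w. wd (v @ w)) x y"

text \<open>c (x) w  and  (c a_1) (x) ... for w = a_1 (x) ... in Sh_e(A).\<close>
definition pre :: "'a \<Rightarrow> ('a,'k::comm_ring_1) tw \<Rightarrow> ('a,'k) tw" where
  "pre c x = lin (\<lambda>w. case w of [v] \<Rightarrow> wd [c # v] | _ \<Rightarrow> 0) x"

definition mfirst :: "('a \<Rightarrow> 'a \<Rightarrow> 'a) \<Rightarrow> 'a \<Rightarrow> ('a,'k::comm_ring_1) tw \<Rightarrow> ('a,'k) tw" where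
  "mfirst m c x = lin (\<lambda>w. case w of [b # v] \<Rightarrow> wd [m c b # v] | _ \<Rightarrow> 0) x"

function qs :: "('a::ab_group_add \<Rightarrow> 'a \<Rightarrow> 'a) \<Rightarrow> 'a \<Rightarrow> 'k::comm_ring_1 \<Rightarrow> 'k \<Rightarrow> 'a list \<Rightarrow> 'a list \<Rightarrow> ('a,'k) tw" where
  "qs m e lam kap (a # xs) (b # ys) =
     (if xs = [] then wd [m a b # ys]
      else if ys = [] then wd [m a b # xs]
      else pre (m a b) (qs m e lam kap xs (e # ys))
         + pre (m a b) (qs m e lam kap (e # xs) ys)
         + tsmult lam (pre (m a b) (qs m e lam kap xs ys))
         + tsmult kap (mfirst m (m a b) (qs m e lam kap xs ys)))"
| "qs m e lam kap [] _ = 0"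
| "qs m e lam kap _ [] = 0"
  by pat_completeness auto
termination
  by (relation "measure (\<lambda>(m,e,lam,kap,u,v). length u + length v)") auto

text \<open>Componentwise product on Sh_e(A)^{(x) n} (tensor product of algebras).\<close>
fun wprod :: "('a::ab_group_add \<Rightarrow> 'a \<Rightarrow> 'a) \<Rightarrow> 'a \<Rightarrow> 'k::comm_ring_1 \<Rightarrow> 'k \<Rightarrow> 'a list list \<Rightarrow> 'a list list \<Rightarrow> ('a,'k) tw" where
  "wprod m e lam kap [] [] = wd []"
| "wprod m e lam kap (v # vs) (w # ws) = tprod (qs m e lam kap v w) (wprod m e lam kap vs ws)"
| "wprod m e lam kap _ _ = 0"

definition dprod :: "('a::ab_group_add \<Rightarrow> 'a \<Rightarrow> 'a) \<Rightarrow> 'a \<Rightarrow> 'k::comm_ring_1 \<Rightarrow> 'k \<Rightarrow> ('a,'k) tw \<Rightarrow> ('a,'k) tw \<Rightarrow> ('a,'k) tw" where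
  "dprod m e lam kap x y = bilin (wprod m e lam kap) x y"

definition ue :: "'a \<Rightarrow> 'k::comm_ring_1 \<Rightarrow> ('a,'k) tw" where
  "ue e c = tsmult c (wd [[e]])"

text \<open>Counit: the extended Rota-Baxter homomorphism with eps_e o j_A = eps_A and
  eps_e o P_e = -mu eps_e; since a_1 (x) ... (x) a_n = a_1 <> P_e(a_2 (x) ... (x) a_n) this forces
  eps_e(a_1 (x) ... (x) a_n) = eps_A(a_1) (-mu) eps_e(a_2 (x) ... (x) a_n).\<close>
fun epsw :: "('a \<Rightarrow> 'k::comm_ring_1) \<Rightarrow> 'k \<Rightarrow> 'a list \<Rightarrow> 'k" where
  "epsw epsA mu [] = 0"
| "epsw epsA mu [a] = epsA a"
| "epsw epsA mu (a # b # bs) = epsA a * (- mu) * epsw epsA mu (b # bs)"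

definition epse :: "('a \<Rightarrow> 'k::comm_ring_1) \<Rightarrow> 'k \<Rightarrow> ('a,'k) tw \<Rightarrow> 'k" where
  "epse epsA mu x = linf (\<lambda>w. case w of [v] \<Rightarrow> epsw epsA mu v | _ \<Rightarrow> 0) x"

definition Pbar :: "'a \<Rightarrow> ('a \<Rightarrow> 'k::comm_ring_1) \<Rightarrow> 'k \<Rightarrow> ('a,'k) tw \<Rightarrow> ('a,'k) tw" where
  "Pbar e epsA mu x = lin (\<lambda>w. case w of
       [v, u] \<Rightarrow> tsmult (epsw epsA mu u) (wd [e # v, [e]])
               + tsmult (mu * epsw epsA mu u) (wd [v, [e]])
               + wd [v, e # u]
     | _ \<Rightarrow> 0) x"

text \<open>Comultiplication: the extended Rota-Baxter homomorphism with Delta_e o j_A = Delta_A and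
  Delta_e o P_e = Pbar o Delta_e; on pure tensors this forces
  Delta_e(a_1 (x) a') = Delta_A(a_1) <> Pbar(Delta_e(a')).
  Delta_A(a) is represented by a combination of words [[x],[y]] (i.e. of A (x) A).\<close>
fun Dw :: "('a::ab_group_add \<Rightarrow> 'a \<Rightarrow> 'a) \<Rightarrow> 'a \<Rightarrow> 'k::comm_ring_1 \<Rightarrow> 'k \<Rightarrow> 'k \<Rightarrow>
    ('a \<Rightarrow> ('a,'k) tw) \<Rightarrow> ('a \<Rightarrow> 'k) \<Rightarrow> 'a list \<Rightarrow> ('a,'k) tw" where
  "Dw m e lam kap mu DA epsA [] = 0"
| "Dw m e lam kap mu DA epsA [a] = DA a"
| "Dw m e lam kap mu DA epsA (a # b # bs) =
     dprod m e lam kap (DA a) (Pbar e epsA mu (Dw m e lam kap mu DA epsA (b # bs)))"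

definition De :: "('a::ab_group_add \<Rightarrow> 'a \<Rightarrow> 'a) \<Rightarrow> 'a \<Rightarrow> 'k::comm_ring_1 \<Rightarrow> 'k \<Rightarrow> 'k \<Rightarrow>
    ('a \<Rightarrow> ('a,'k) tw) \<Rightarrow> ('a \<Rightarrow> 'k) \<Rightarrow> ('a,'k) tw \<Rightarrow> ('a,'k) tw" where
  "De m e lam kap mu DA epsA x = lin (\<lambda>w. case w of [v] \<Rightarrow> Dw m e lam kap mu DA epsA v | _ \<Rightarrow> 0) x"

definition tmap2 :: "('a list \<Rightarrow> ('a,'k::comm_ring_1) tw) \<Rightarrow> ('a list \<Rightarrow> ('a,'k) tw) \<Rightarrow> ('a,'k) tw \<Rightarrow> ('a,'k) tw" where
  "tmap2 f g x = lin (\<lambda>w. case w of [v, u] \<Rightarrow> tprod (f v) (g u) | _ \<Rightarrow> 0) x"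

end

theory Submission
  imports Defs
begin

section \<open>Linear algebra on formal combinations\<close>

lemma lookup_tsmult [simp]: "Poly_Mapping.lookup (tsmult c x) w = c * Poly_Mapping.lookup x w"
  by (simp add: tsmult_def Poly_Mapping.map.rep_eq when_def)

lemma lookup_wd: "Poly_Mapping.lookup (wd w) u = (if u = w then 1 else 0)"
  by (simp add: wd_def lookup_single when_def)

lemma keys_wd [simp]: "Poly_Mapping.keys (wd w :: 'w \<Rightarrow>\<^sub>0 'k::comm_ring_1) = {w}"
  by (simp add: wd_def)

lemma keys_tsmult: "Poly_Mapping.keys (tsmult c x) \<subseteq> Poly_Mapping.keys x"
  by (auto simp: in_keys_iff)

lemma tsmult_add_right: "tsmult c (x + y) = tsmult c x + tsmult c y"
  by (rule poly_mapping_eqI) (simp add: lookup_add algebra_simps)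
lemma tsmult_add_left: "tsmult (c + d) x = tsmult c x + tsmult d x"
  by (rule poly_mapping_eqI) (simp add: lookup_add algebra_simps)
lemma tsmult_tsmult [simp]: "tsmult c (tsmult d x) = tsmult (c * d) x"
  by (rule poly_mapping_eqI) (simp add: algebra_simps)
lemma tsmult_one [simp]: "tsmult 1 x = x"
  by (rule poly_mapping_eqI) simp
lemma tsmult_zero_left [simp]: "tsmult 0 x = 0"
  by (rule poly_mapping_eqI) simp
lemma tsmult_zero_right [simp]: "tsmult c 0 = 0"
  by (rule poly_mapping_eqI) simp
lemma tsmult_uminus_right: "tsmult c (- x) = - tsmult c x"
  by (rule poly_mapping_eqI) (simp add: lookup_minus)
lemma tsmult_uminus_left: "tsmult (- c) x = - tsmult c x"
  by (rule poly_mapping_eqI) (simp add: lookup_minus)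
lemma tsmult_diff_right: "tsmult c (x - y) = tsmult c x - tsmult c y"
  by (rule poly_mapping_eqI) (simp add: lookup_minus algebra_simps)
lemma tsmult_diff_left: "tsmult (c - d) x = tsmult c x - tsmult d x"
  by (rule poly_mapping_eqI) (simp add: lookup_minus algebra_simps)
lemma tsmult_sum: "tsmult c (sum f A) = (\<Sum>a\<in>A. tsmult c (f a))"
  by (induction A rule: infinite_finite_induct) (auto simp: tsmult_add_right)
lemma tsmult_sum_left: "tsmult (sum f A) x = (\<Sum>a\<in>A. tsmult (f a) x)"
  by (induction A rule: infinite_finite_induct) (auto simp: tsmult_add_left)

lemmas tsmult_simps = tsmult_add_right tsmult_add_left tsmult_uminus_right tsmult_uminus_left
  tsmult_diff_right tsmult_diff_left

lemma lin_superset: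
  assumes "finite S" "Poly_Mapping.keys x \<subseteq> S"
  shows "lin f x = (\<Sum>w\<in>S. tsmult (Poly_Mapping.lookup x w) (f w))"
  unfolding lin_def
  by (rule sum.mono_neutral_left) (use assms in \<open>auto simp: in_keys_iff\<close>)

lemma lin_zero [simp]: "lin f 0 = 0"
  by (simp add: lin_def)

lemma lin_add: "lin f (x + y) = lin f x + lin f y"
proof -
  let ?S = "Poly_Mapping.keys x \<union> Poly_Mapping.keys y"
  have f: "finite ?S" by simp
  have "lin f (x + y) = (\<Sum>w\<in>?S. tsmult (Poly_Mapping.lookup (x + y) w) (f w))"
    by (rule lin_superset[OF f]) (rule keys_add)
  also have "\<dots> = (\<Sum>w\<in>?S. tsmult (Poly_Mapping.lookup x w) (f w)) + (\<Sum>w\<in>?S. tsmult (Poly_Mapping.lookup y w) (f w))"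
    by (simp add: lookup_add tsmult_add_left sum.distrib)
  also have "\<dots> = lin f x + lin f y"
    by (simp add: lin_superset[OF f])
  finally show ?thesis .
qed

lemma lin_tsmult: "lin f (tsmult c x) = tsmult c (lin f x)"
proof -
  have "lin f (tsmult c x) = (\<Sum>w\<in>Poly_Mapping.keys x. tsmult (Poly_Mapping.lookup (tsmult c x) w) (f w))"
    by (rule lin_superset) (simp_all add: keys_tsmult)
  also have "\<dots> = tsmult c (lin f x)"
    by (simp add: lin_def tsmult_sum)
  finally show ?thesis .
qed

lemma lin_uminus: "lin f (- x) = - lin f x"
  by (metis add.right_inverse add_eq_0_iff lin_add lin_zero)
  
lemma lin_diff: "lin f (x - y) = lin f x - lin f y"
  using lin_add[of f x "- y"] by (simp add: lin_uminus)

lemma lin_wd [simp]: "lin f (wd w) = f w"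
  by (simp add: lin_def wd_def)

lemma lin_sum: "lin f (sum g A) = (\<Sum>a\<in>A. lin f (g a))"
  by (induction A rule: infinite_finite_induct) (auto simp: lin_add)

lemma lin_cong: "(\<And>w. w \<in> Poly_Mapping.keys x \<Longrightarrow> f w = g w) \<Longrightarrow> lin f x = lin g x"
  by (simp add: lin_def)

lemma lin_fun_add: "lin (\<lambda>w. f w + g w) x = lin f x + lin g x"
  by (simp add: lin_def tsmult_add_right sum.distrib)
lemma lin_fun_diff: "lin (\<lambda>w. f w - g w) x = lin f x - lin g x"
  by (simp add: lin_def tsmult_diff_right sum_subtractf)
lemma lin_fun_tsmult: "lin (\<lambda>w. tsmult c (f w)) x = tsmult c (lin f x)"
  by (simp add: lin_def tsmult_sum mult.commute)
lemma lin_fun_zero [simp]: "lin (\<lambda>w. 0) x = 0"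
  by (simp add: lin_def)
lemma lin_fun_sum: "lin (\<lambda>w. \<Sum>i\<in>I. f i w) x = (\<Sum>i\<in>I. lin (f i) x)"
  by (induction I rule: infinite_finite_induct) (auto simp: lin_fun_add)

lemma lin_lin: "lin f (lin g x) = lin (\<lambda>w. lin f (g w)) x"
  by (simp add: lin_def[of _ x] lin_sum lin_tsmult)

lemma lin_wd_id: "lin wd x = x"
proof (rule poly_mapping_eqI)
  fix u
  show "Poly_Mapping.lookup (lin wd x) u = Poly_Mapping.lookup x u"
  proof -
    have "Poly_Mapping.lookup (lin wd x) u = (\<Sum>w\<in>Poly_Mapping.keys x. if w = u then Poly_Mapping.lookup x w else 0)"
    proof -
      have "Poly_Mapping.lookup (lin wd x) u = (\<Sum>w\<in>Poly_Mapping.keys x. Poly_Mapping.lookup x w * (if u = w then 1 else 0))"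
        by (simp add: lin_def lookup_sum lookup_wd)
      also have "\<dots> = (\<Sum>w\<in>Poly_Mapping.keys x. if w = u then Poly_Mapping.lookup x w else 0)"
        by (rule sum.cong) auto
      finally show ?thesis .
    qed
    also have "\<dots> = Poly_Mapping.lookup x u"
      by (simp add: sum.delta in_keys_iff)
    finally show ?thesis .
  qed
qed

lemma lin_eq_linear:
  assumes "\<And>x y. F (x + y) = F x + F y" "\<And>c x. F (tsmult c x) = tsmult c (F x)"
  shows "F x = lin (\<lambda>w. F (wd w)) x"
proof -
  have Fsum: "F (sum g A) = (\<Sum>a\<in>A. F (g a))" for g :: "_ \<Rightarrow> _" and A
  proof (induction A rule: infinite_finite_induct)
    case (infinite A)
    have "F 0 = 0" using assms(2)[of 0 0] by simp
    then show ?case using infinite by simp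
  next
    case empty
    have "F 0 = 0" using assms(2)[of 0 0] by simp
    then show ?case by simp
  qed (simp add: assms(1))
  have "F x = F (lin wd x)" by (simp add: lin_wd_id)
  also have "\<dots> = (\<Sum>w\<in>Poly_Mapping.keys x. F (tsmult (Poly_Mapping.lookup x w) (wd w)))"
    unfolding lin_def by (rule Fsum)
  also have "\<dots> = lin (\<lambda>w. F (wd w)) x"
    by (simp add: assms(2) lin_def)
  finally show ?thesis .
qed

lemma keys_sum_sub: "Poly_Mapping.keys (sum g A) \<subseteq> (\<Union>a\<in>A. Poly_Mapping.keys (g a))"
  by (rule keys_sum)

lemma keys_lin: "Poly_Mapping.keys (lin f x) \<subseteq> (\<Union>w\<in>Poly_Mapping.keys x. Poly_Mapping.keys (f w))"
  unfolding lin_def using keys_sum_sub keys_tsmult by fastforce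

lemma lin_const: "lin (\<lambda>w. tsmult (g w) T) x = tsmult (linf g x) T"
  by (simp add: lin_def linf_def tsmult_sum_left)

lemma linf_superset:
  assumes "finite S" "Poly_Mapping.keys x \<subseteq> S"
  shows "linf f x = (\<Sum>w\<in>S. Poly_Mapping.lookup x w * f w)"
  unfolding linf_def
  by (rule sum.mono_neutral_left) (use assms in \<open>auto simp: in_keys_iff\<close>)

lemma linf_add: "linf f (x + y) = linf f x + linf f y"
proof -
  let ?S = "Poly_Mapping.keys x \<union> Poly_Mapping.keys y"
  have f: "finite ?S" by simp
  have "linf f (x + y) = (\<Sum>w\<in>?S. Poly_Mapping.lookup (x + y) w * f w)"
    by (rule linf_superset[OF f]) (rule keys_add)
  also have "\<dots> = linf f x + linf f y"
    by (simp add: lookup_add algebra_simps sum.distrib linf_superset[OF f])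
  finally show ?thesis .
qed

lemma linf_tsmult: "linf f (tsmult c x) = c * linf f x"
proof -
  have "linf f (tsmult c x) = (\<Sum>w\<in>Poly_Mapping.keys x. Poly_Mapping.lookup (tsmult c x) w * f w)"
    by (rule linf_superset) (simp_all add: keys_tsmult)
  then show ?thesis by (simp add: linf_def sum_distrib_left mult.assoc)
qed

lemma linf_zero [simp]: "linf f 0 = 0"
  by (simp add: linf_def)
lemma linf_uminus: "linf f (- x) = - linf f x"
  by (metis add.right_inverse add_eq_0_iff linf_add linf_zero)
lemma linf_diff: "linf f (x - y) = linf f x - linf f y"
  using linf_add[of f x "- y"] by (simp add: linf_uminus)
lemma linf_wd [simp]: "linf f (wd w) = f w"
  by (simp add: linf_def wd_def)
lemma linf_sum: "linf f (sum g A) = (\<Sum>a\<in>A. linf f (g a))"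
  by (induction A rule: infinite_finite_induct) (auto simp: linf_add)
lemma linf_lin: "linf f (lin g x) = linf (\<lambda>w. linf f (g w)) x"
  by (simp add: lin_def linf_def[of _ x] linf_sum linf_tsmult)
lemma linf_cong: "(\<And>w. w \<in> Poly_Mapping.keys x \<Longrightarrow> f w = g w) \<Longrightarrow> linf f x = linf g x"
  by (simp add: linf_def)
lemma linf_fun_add: "linf (\<lambda>w. f w + g w) x = linf f x + linf g x"
  by (simp add: linf_def algebra_simps sum.distrib)
lemma linf_fun_mult: "linf (\<lambda>w. c * f w) x = c * linf f x"
  by (simp add: linf_def algebra_simps sum_distrib_left)

lemma lin_swap: "lin (\<lambda>v. lin (\<lambda>w. h v w) y) x = lin (\<lambda>w. lin (\<lambda>v. h v w) x) y"
proof -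
  have "lin (\<lambda>v. lin (\<lambda>w. h v w) y) x = (\<Sum>v\<in>Poly_Mapping.keys x. \<Sum>w\<in>Poly_Mapping.keys y.
      tsmult (Poly_Mapping.lookup x v * Poly_Mapping.lookup y w) (h v w))"
    by (simp add: lin_def tsmult_sum)
  also have "\<dots> = (\<Sum>w\<in>Poly_Mapping.keys y. \<Sum>v\<in>Poly_Mapping.keys x.
      tsmult (Poly_Mapping.lookup y w * Poly_Mapping.lookup x v) (h v w))"
    by (subst sum.swap) (simp add: mult.commute)
  also have "\<dots> = lin (\<lambda>w. lin (\<lambda>v. h v w) x) y"
    by (simp add: lin_def tsmult_sum)
  finally show ?thesis .
qed

lemma bilin_add_left: "bilin f (x + x') y = bilin f x y + bilin f x' y"
  by (simp add: bilin_def lin_add)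
lemma bilin_add_right: "bilin f x (y + y') = bilin f x y + bilin f x y'"
  by (simp add: bilin_def lin_add lin_fun_add)
lemma bilin_tsmult_left: "bilin f (tsmult c x) y = tsmult c (bilin f x y)"
  by (simp add: bilin_def lin_tsmult)
lemma bilin_tsmult_right: "bilin f x (tsmult c y) = tsmult c (bilin f x y)"
  by (simp add: bilin_def lin_tsmult lin_fun_tsmult)
lemma bilin_zero_left [simp]: "bilin f 0 y = 0"
  by (simp add: bilin_def)
lemma bilin_zero_right [simp]: "bilin f x 0 = 0"
  by (simp add: bilin_def)
lemma bilin_diff_left: "bilin f (x - x') y = bilin f x y - bilin f x' y"
  by (simp add: bilin_def lin_diff)
lemma bilin_diff_right: "bilin f x (y - y') = bilin f x y - bilin f x y'"
  by (simp add: bilin_def lin_diff lin_fun_diff)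
lemma bilin_wd_wd [simp]: "bilin f (wd v) (wd w) = f v w"
  by (simp add: bilin_def)
lemma bilin_wd_left: "bilin f (wd v) y = lin (f v) y"
  by (simp add: bilin_def)
lemma bilin_lin_left: "bilin f (lin g x) y = lin (\<lambda>v. bilin f (g v) y) x"
  by (simp add: bilin_def lin_lin)
lemma bilin_lin_right: "bilin f x (lin g y) = lin (\<lambda>w. bilin f x (g w)) y"
proof -
  have "bilin f x (lin g y) = lin (\<lambda>v. lin (\<lambda>w. lin (f v) (g w)) y) x"
    by (simp add: bilin_def lin_lin)
  also have "\<dots> = lin (\<lambda>w. lin (\<lambda>v. lin (f v) (g w)) x) y"
    by (rule lin_swap)
  finally show ?thesis by (simp add: bilin_def)
qed

lemma bilin_right_wd: "bilin f x (wd w) = lin (\<lambda>v. f v w) x"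
  by (simp add: bilin_def)

lemma bilin_sym:
  assumes "\<And>v w. f v w = g w v"
  shows "bilin f x y = bilin g y x"
proof -
  have "bilin f x y = lin (\<lambda>v. lin (\<lambda>w. g w v) y) x" by (simp add: bilin_def assms)
  also have "\<dots> = lin (\<lambda>w. lin (\<lambda>v. g w v) x) y"
    by (rule lin_swap)
  finally show ?thesis by (simp add: bilin_def)
qed

lemma keys_bilin: "Poly_Mapping.keys (bilin f x y) \<subseteq> (\<Union>v\<in>Poly_Mapping.keys x. \<Union>w\<in>Poly_Mapping.keys y. Poly_Mapping.keys (f v w))"
  unfolding bilin_def
  apply (rule subset_trans[OF keys_lin])
  apply (rule UN_mono[OF order_refl])
  apply (rule keys_lin)
  done

lemma kspan_add: "x \<in> kspan G \<Longrightarrow> y \<in> kspan G \<Longrightarrow> x + y \<in> kspan G"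
proof (induction x rule: kspan.induct)
  case kspan_zero
  then show ?case by simp
next
  case (kspan_step x g c)
  then show ?case using kspan.kspan_step[of "x + y" G g c] by (simp add: add.assoc)
qed

lemma kspan_tsmult: "x \<in> kspan G \<Longrightarrow> tsmult c x \<in> kspan G"
proof (induction x rule: kspan.induct)
  case kspan_zero
  then show ?case by (simp add: kspan.kspan_zero)
next
  case (kspan_step x g d)
  then show ?case using kspan.kspan_step[of "tsmult c x" G g "c * d"] by (simp add: tsmult_add_right)
qed

lemma kspan_gen: "g \<in> G \<Longrightarrow> g \<in> kspan G"
  using kspan_step[OF kspan_zero, of g G 1] by simp

lemma kspan_uminus: "x \<in> kspan G \<Longrightarrow> - x \<in> kspan G"
  using kspan_tsmult[of x G "-1"] tsmult_uminus_left[of 1 x] by simp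

lemma kspan_diff: "x \<in> kspan G \<Longrightarrow> y \<in> kspan G \<Longrightarrow> x - y \<in> kspan G"
  using kspan_add[of x G "- y"] kspan_uminus by auto

lemma kspan_sum: "(\<And>a. a \<in> A \<Longrightarrow> f a \<in> kspan G) \<Longrightarrow> sum f A \<in> kspan G"
  by (induction A rule: infinite_finite_induct) (auto intro: kspan_add kspan.kspan_zero)

lemma kspan_mono: assumes "G \<subseteq> H" "x \<in> kspan G" shows "x \<in> kspan H"
  using assms(2)
proof (induction x rule: kspan.induct)
  case kspan_zero
  then show ?case by (simp add: kspan.kspan_zero)
next
  case (kspan_step x g c)
  then show ?case using kspan.kspan_step[of x H g c] assms(1) by blast
qed

lemma kspan_lin:
  assumes "\<And>g. g \<in> G \<Longrightarrow> lin f g \<in> kspan H" "x \<in> kspan G"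
  shows "lin f x \<in> kspan H"
  using assms(2)
proof (induction x rule: kspan.induct)
  case kspan_zero
  then show ?case by (simp add: kspan.kspan_zero)
next
  case (kspan_step x g c)
  then show ?case by (simp add: lin_add lin_tsmult kspan_add kspan_tsmult assms(1))
qed

lemma linf_kspan:
  assumes "\<And>g. g \<in> G \<Longrightarrow> linf f g = 0" "x \<in> kspan G"
  shows "linf f x = 0"
  using assms(2) by (induction x rule: kspan.induct) (auto simp: linf_add linf_tsmult assms(1))

lemma lin_cong_kspan:
  assumes "\<And>w. w \<in> Poly_Mapping.keys x \<Longrightarrow> f w - g w \<in> kspan H"
  shows "lin f x - lin g x \<in> kspan H"
proof -
  have "lin f x - lin g x = lin (\<lambda>w. f w - g w) x" by (simp add: lin_fun_diff)
  also have "\<dots> \<in> kspan H" unfolding lin_def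
    by (rule kspan_sum) (auto intro!: kspan_tsmult assms)
  finally show ?thesis .
qed

lemma kspan_lin_keys:
  assumes "\<And>w. w \<in> Poly_Mapping.keys x \<Longrightarrow> f w \<in> kspan H"
  shows "lin f x \<in> kspan H"
  using lin_cong_kspan[of x f "\<lambda>_. 0" H] assms by simp


lemma pre_wd: "pre c (wd w) = (case w of [v] \<Rightarrow> wd [c # v] | _ \<Rightarrow> 0)"
  by (simp add: pre_def)
lemma pre_wd1 [simp]: "pre c (wd [v]) = wd [c # v]"
  by (simp add: pre_def)
lemma pre_add: "pre c (x + y) = pre c x + pre c y"
  by (simp add: pre_def lin_add)
lemma pre_tsmult: "pre c (tsmult k x) = tsmult k (pre c x)"
  by (simp add: pre_def lin_tsmult)
lemma pre_zero [simp]: "pre c 0 = 0"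
  by (simp add: pre_def)
lemma pre_diff: "pre c (x - y) = pre c x - pre c y"
  by (simp add: pre_def lin_diff)
lemma pre_sum: "pre c (sum f A) = (\<Sum>a\<in>A. pre c (f a))"
  by (simp add: pre_def lin_sum)

lemma mfirst_wd: "mfirst m c (wd w) = (case w of [b # v] \<Rightarrow> wd [m c b # v] | _ \<Rightarrow> 0)"
  by (simp add: mfirst_def)
lemma mfirst_wd1 [simp]: "mfirst m c (wd [b # v]) = wd [m c b # v]"
  by (simp add: mfirst_def)
lemma mfirst_add: "mfirst m c (x + y) = mfirst m c x + mfirst m c y"
  by (simp add: mfirst_def lin_add)
lemma mfirst_tsmult: "mfirst m c (tsmult k x) = tsmult k (mfirst m c x)"
  by (simp add: mfirst_def lin_tsmult)
lemma mfirst_zero [simp]: "mfirst m c 0 = 0"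
  by (simp add: mfirst_def)
lemma mfirst_diff: "mfirst m c (x - y) = mfirst m c x - mfirst m c y"
  by (simp add: mfirst_def lin_diff)

lemma tprod_wd [simp]: "tprod (wd v) (wd w) = wd (v @ w)"
  by (simp add: tprod_def)
lemma tprod_add_left: "tprod (x + x') y = tprod x y + tprod x' y"
  by (simp add: tprod_def bilin_add_left)
lemma tprod_add_right: "tprod x (y + y') = tprod x y + tprod x y'"
  by (simp add: tprod_def bilin_add_right)
lemma tprod_tsmult_left: "tprod (tsmult c x) y = tsmult c (tprod x y)"
  by (simp add: tprod_def bilin_tsmult_left)
lemma tprod_tsmult_right: "tprod x (tsmult c y) = tsmult c (tprod x y)"
  by (simp add: tprod_def bilin_tsmult_right)
lemma tprod_zero_left [simp]: "tprod 0 y = 0"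
  by (simp add: tprod_def)
lemma tprod_zero_right [simp]: "tprod x 0 = 0"
  by (simp add: tprod_def)
lemma tprod_diff_left: "tprod (x - x') y = tprod x y - tprod x' y"
  by (simp add: tprod_def bilin_diff_left)
lemma tprod_diff_right: "tprod x (y - y') = tprod x y - tprod x y'"
  by (simp add: tprod_def bilin_diff_right)
lemma tprod_lin_left: "tprod (lin g x) y = lin (\<lambda>v. tprod (g v) y) x"
  by (simp add: tprod_def bilin_lin_left)
lemma tprod_lin_right: "tprod x (lin g y) = lin (\<lambda>w. tprod x (g w)) y"
  by (simp add: tprod_def bilin_lin_right)
lemma tprod_expand_left: "tprod x y = lin (\<lambda>v. tprod (wd v) y) x"
  using tprod_lin_left[of wd x y] by (simp add: lin_wd_id)
lemma tprod_expand_right: "tprod x y = lin (\<lambda>w. tprod x (wd w)) y"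
  using tprod_lin_right[of x wd y] by (simp add: lin_wd_id)
lemma tprod_nil_right [simp]: "tprod x (wd []) = x"
  by (subst tprod_expand_left) (simp add: lin_wd_id)
lemma tprod_nil_left [simp]: "tprod (wd []) y = y"
  by (subst tprod_expand_right) (simp add: lin_wd_id)
lemma tprod_assoc: "tprod (tprod x y) z = tprod x (tprod y z)"
proof -
  have "tprod (tprod x y) z = lin (\<lambda>v. lin (\<lambda>w. lin (\<lambda>u. wd (v @ w @ u)) z) y) x"
    apply (subst tprod_expand_left[of x y])
    apply (simp add: tprod_lin_left)
    apply (rule lin_cong)
    apply (subst tprod_expand_right[of "wd _" y])
    apply (simp add: tprod_lin_left)
    apply (rule lin_cong)
    apply (subst tprod_expand_right)
    apply simp
    done
  also have "\<dots> = tprod x (tprod y z)"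
    apply (subst tprod_expand_left[of x])
    apply (rule lin_cong)
    apply (subst tprod_expand_left[of y z])
    apply (simp add: tprod_lin_right)
    apply (rule lin_cong)
    apply (subst tprod_expand_right[of "wd _" z])
    apply (simp add: tprod_lin_right)
    done
  finally show ?thesis .
qed

lemma keys_tprod: "Poly_Mapping.keys (tprod x (y :: ('a,'k::comm_ring_1) tw)) \<subseteq> {v @ w | v w. v \<in> Poly_Mapping.keys x \<and> w \<in> Poly_Mapping.keys y}"
proof
  fix z assume "z \<in> Poly_Mapping.keys (tprod x y)"
  then have "z \<in> (\<Union>v\<in>Poly_Mapping.keys x. \<Union>w\<in>Poly_Mapping.keys y. Poly_Mapping.keys (wd (v @ w) :: ('a,'k) tw))"
    unfolding tprod_def by (rule subsetD[OF keys_bilin[of "\<lambda>v w. wd (v @ w)" x y]])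
  then show "z \<in> {v @ w | v w. v \<in> Poly_Mapping.keys x \<and> w \<in> Poly_Mapping.keys y}" by auto
qed

definition s1 :: "('a,'k::comm_ring_1) tw \<Rightarrow> bool" where
  "s1 x \<longleftrightarrow> (\<forall>w\<in>Poly_Mapping.keys x. \<exists>v. w = [v] \<and> v \<noteq> [])"

definition bnd :: "nat \<Rightarrow> ('a,'k::comm_ring_1) tw \<Rightarrow> bool" where
  "bnd n x \<longleftrightarrow> (\<forall>w\<in>Poly_Mapping.keys x. \<exists>v. w = [v] \<and> v \<noteq> [] \<and> length v \<le> n)"

lemma s1_wd [simp]: "s1 (wd [v]) \<longleftrightarrow> v \<noteq> []"
  by (simp add: s1_def)
lemma s1_zero [simp]: "s1 0"
  by (simp add: s1_def)
lemma s1_add: "s1 x \<Longrightarrow> s1 y \<Longrightarrow> s1 (x + y)"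
  unfolding s1_def using keys_add[of x y] by blast
lemma s1_tsmult: "s1 x \<Longrightarrow> s1 (tsmult c x)"
  unfolding s1_def using keys_tsmult[of c x] by blast
lemma s1_diff: "s1 x \<Longrightarrow> s1 y \<Longrightarrow> s1 (x - y)"
  unfolding s1_def using keys_diff[of x y] by blast
lemma s1_lin: "(\<And>w. w \<in> Poly_Mapping.keys x \<Longrightarrow> s1 (f w)) \<Longrightarrow> s1 (lin f x)"
  unfolding s1_def using keys_lin[of f x] by blast
lemma s1_keys: "s1 x \<Longrightarrow> w \<in> Poly_Mapping.keys x \<Longrightarrow> \<exists>v. w = [v] \<and> v \<noteq> []"
  by (simp add: s1_def)

lemma bnd_s1: "bnd n x \<Longrightarrow> s1 x"
  unfolding bnd_def s1_def by blast
lemma bnd_wd [simp]: "bnd n (wd [v]) \<longleftrightarrow> v \<noteq> [] \<and> length v \<le> n"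
  by (simp add: bnd_def)
lemma bnd_zero [simp]: "bnd n 0"
  by (simp add: bnd_def)
lemma bnd_add: "bnd n x \<Longrightarrow> bnd n y \<Longrightarrow> bnd n (x + y)"
  unfolding bnd_def using keys_add[of x y] by blast
lemma bnd_tsmult: "bnd n x \<Longrightarrow> bnd n (tsmult c x)"
  unfolding bnd_def using keys_tsmult[of c x] by blast
lemma bnd_lin: "(\<And>w. w \<in> Poly_Mapping.keys x \<Longrightarrow> bnd n (f w)) \<Longrightarrow> bnd n (lin f x)"
  unfolding bnd_def using keys_lin[of f x] by blast
lemma bnd_mono: "bnd n x \<Longrightarrow> n \<le> k \<Longrightarrow> bnd k x"
  unfolding bnd_def by fastforce
lemma s1_bnd: "s1 x \<Longrightarrow> \<exists>n. bnd n x"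
proof -
  assume a: "s1 x"
  define n where "n = Max (length ` (\<lambda>w. hd w) ` Poly_Mapping.keys x)"
  have "bnd n x" unfolding bnd_def
  proof
    fix w assume w: "w \<in> Poly_Mapping.keys x"
    then obtain v where v: "w = [v]" "v \<noteq> []" using a s1_def by blast
    have "length v \<le> n" unfolding n_def
      by (rule Max_ge) (use w v in force)+
    then show "\<exists>v. w = [v] \<and> v \<noteq> [] \<and> length v \<le> n" using v by blast
  qed
  then show ?thesis by blast
qed

lemma pre_s1: "s1 (pre c x)"
  unfolding pre_def by (rule s1_lin) (auto split: list.split)
lemma pre_bnd: "bnd n x \<Longrightarrow> bnd (Suc n) (pre c x)"
  unfolding pre_def by (rule bnd_lin) (auto simp: bnd_def split: list.split)
lemma mfirst_s1: "s1 (mfirst m c x)"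
  unfolding mfirst_def by (rule s1_lin) (auto split: list.split)
lemma mfirst_bnd: "bnd n x \<Longrightarrow> bnd n (mfirst m c x)"
  unfolding mfirst_def by (rule bnd_lin) (auto simp: bnd_def split: list.split)


section \<open>Exact facts about the quasi-shuffle product\<close>

locale qsl =
  fixes m :: "'a::ab_group_add \<Rightarrow> 'a \<Rightarrow> 'a" and e :: 'a and lam kap :: "'k::comm_ring_1"
  assumes m_assoc: "\<And>x y z. m (m x y) z = m x (m y z)"
    and m_comm: "\<And>x y. m x y = m y x"
    and m_unit: "\<And>x. m e x = x"
begin

abbreviation Q :: "'a list \<Rightarrow> 'a list \<Rightarrow> ('a,'k) tw" where "Q \<equiv> qs m e lam kap"
abbreviation dp :: "('a,'k) tw \<Rightarrow> ('a,'k) tw \<Rightarrow> ('a,'k) tw" where "dp \<equiv> dprod m e lam kap"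
abbreviation mf :: "'a \<Rightarrow> ('a,'k) tw \<Rightarrow> ('a,'k) tw" where "mf \<equiv> mfirst m"
abbreviation P :: "('a,'k) tw \<Rightarrow> ('a,'k) tw" where "P \<equiv> pre e"
abbreviation one :: "('a,'k) tw" where "one \<equiv> wd [[e]]"
abbreviation W :: "'a list list \<Rightarrow> 'a list list \<Rightarrow> ('a,'k) tw" where "W \<equiv> wprod m e lam kap"

lemma m_unit_r: "m x e = x"
  using m_comm m_unit by metis

lemma Q_nil_l [simp]: "Q [] ys = 0"
  by simp
lemma Q_nil_r [simp]: "Q xs [] = 0"
  by (cases xs) simp_all

lemma Q_single: "Q [a] (b # ys) = wd [m a b # ys]"
  by simp

lemma Q_s1: "s1 (Q xs ys)"
proof (induction "length xs + length ys" arbitrary: xs ys rule: less_induct)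
  case less
  show ?case
  proof (cases xs)
    case Nil then show ?thesis by simp
  next
    case (Cons a xs')
    show ?thesis
    proof (cases ys)
      case Nil then show ?thesis by simp
    next
      case (Cons b ys')
      show ?thesis using \<open>xs = a # xs'\<close> Cons
        by (simp add: s1_add s1_tsmult pre_s1 mfirst_s1)
    qed
  qed
qed

lemma Q_bnd: "bnd (length xs + length ys) (Q xs ys)"
proof (induction "length xs + length ys" arbitrary: xs ys rule: less_induct)
  case less
  show ?case
  proof (cases xs)
    case Nil then show ?thesis by simp
  next
    case (Cons a xs')
    show ?thesis
    proof (cases ys)
      case Nil then show ?thesis by simp
    next
      case (Cons b ys')
      have ih1: "bnd (length xs' + length (e # ys')) (Q xs' (e # ys'))"
        using less[of xs' "e # ys'"] \<open>xs = a # xs'\<close> Cons by simp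
      have ih2: "bnd (length (e # xs') + length ys') (Q (e # xs') ys')"
        using less[of "e # xs'" ys'] \<open>xs = a # xs'\<close> Cons by simp
      have ih3: "bnd (length xs' + length ys') (Q xs' ys')"
        using less[of xs' ys'] \<open>xs = a # xs'\<close> Cons by simp
      let ?n = "length xs + length ys"
      have "bnd ?n (pre (m a b) (Q xs' (e # ys')))"
        using pre_bnd[OF ih1] \<open>xs = a # xs'\<close> Cons by simp
      moreover have "bnd ?n (pre (m a b) (Q (e # xs') ys'))"
        using pre_bnd[OF ih2] \<open>xs = a # xs'\<close> Cons by simp
      moreover have "bnd ?n (pre (m a b) (Q xs' ys'))"
        using bnd_mono[OF pre_bnd[OF ih3, of "m a b"], of ?n] \<open>xs = a # xs'\<close> Cons by simp
      moreover have "bnd ?n (mf (m a b) (Q xs' ys'))"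
        using bnd_mono[OF mfirst_bnd[OF ih3, of m "m a b"], of ?n] \<open>xs = a # xs'\<close> Cons by simp
      ultimately show ?thesis using \<open>xs = a # xs'\<close> Cons
        by (auto simp: bnd_add bnd_tsmult)
    qed
  qed
qed

lemma Q_comm: "Q xs ys = Q ys xs"
proof (induction "length xs + length ys" arbitrary: xs ys rule: less_induct)
  case less
  show ?case
  proof (cases xs)
    case Nil then show ?thesis by simp
  next
    case (Cons a xs')
    show ?thesis
    proof (cases ys)
      case Nil then show ?thesis using \<open>xs = a # xs'\<close> by simp
    next
      case (Cons b ys')
      have ih1: "Q xs' (e # ys') = Q (e # ys') xs'"
        using less[of xs' "e # ys'"] \<open>xs = a # xs'\<close> Cons by simp
      have ih2: "Q (e # xs') ys' = Q ys' (e # xs')"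
        using less[of "e # xs'" ys'] \<open>xs = a # xs'\<close> Cons by simp
      have ih3: "Q xs' ys' = Q ys' xs'"
        using less[of xs' ys'] \<open>xs = a # xs'\<close> Cons by simp
      show ?thesis using \<open>xs = a # xs'\<close> Cons ih1 ih2 ih3
        by (simp add: m_comm[of a b] ac_simps)
    qed
  qed
qed

lemma mfirst_expand: "mfirst m c x = lin (\<lambda>w. mfirst m c (wd w)) x"
  unfolding mfirst_def[of m c x] by (rule lin_cong) (simp add: mfirst_wd)
lemma mfirst_lin: "mfirst m c (lin g x) = lin (\<lambda>w. mfirst m c (g w)) x"
  by (simp add: mfirst_def lin_lin)
lemma pre_expand: "pre c x = lin (\<lambda>w. pre c (wd w)) x"
  unfolding pre_def[of c x] by (rule lin_cong) (simp add: pre_wd)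
lemma pre_lin: "pre c (lin g x) = lin (\<lambda>w. pre c (g w)) x"
  by (simp add: pre_def lin_lin)

lemma mf_pre: "mf c (pre d x) = pre (m c d) x"
  apply (subst pre_expand[of d x])
  apply (subst pre_expand[of "m c d" x])
  apply (subst mfirst_lin)
  apply (rule lin_cong)
  apply (simp add: pre_wd split: list.split)
  done

lemma mf_mf: "mf c (mf d x) = mf (m c d) x"
  apply (subst mfirst_expand[of d x])
  apply (subst mfirst_expand[of "m c d" x])
  apply (subst mfirst_lin)
  apply (rule lin_cong)
  apply (simp add: mfirst_wd m_assoc split: list.split)
  done

lemma mf_e: "s1 x \<Longrightarrow> mf e x = x"
proof -
  assume "s1 x"
  have "mf e x = lin wd x"
    unfolding mfirst_def
  proof (rule lin_cong)
    fix w assume "w \<in> Poly_Mapping.keys x"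
    then obtain v where "w = [v]" "v \<noteq> []" using \<open>s1 x\<close> s1_def by blast
    then show "(case w of [b # v] \<Rightarrow> wd [m e b # v] | _ \<Rightarrow> 0) = wd w"
      by (cases v) (simp_all add: m_unit)
  qed
  then show ?thesis by (simp add: lin_wd_id)
qed

lemma mf_P: "mf a (P x) = pre a x"
  by (simp add: mf_pre m_unit_r)

lemma Q_mf: "Q (m c a # xs) ys = mf c (Q (a # xs) ys)"
proof (cases ys)
  case Nil then show ?thesis by simp
next
  case (Cons b ys')
  then show ?thesis
    by (simp add: mfirst_add mfirst_tsmult mf_pre mf_mf m_assoc)
qed

lemma Q_ee:
  assumes "xs \<noteq> []" "ys \<noteq> []"
  shows "Q (e # xs) (e # ys) = P (Q xs (e # ys)) + P (Q (e # xs) ys) + tsmult lam (P (Q xs ys)) + tsmult kap (Q xs ys)"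
  using assms by (simp add: m_unit mf_e Q_s1)

lemma W_len: "length V \<noteq> length U \<Longrightarrow> W V U = 0"
proof (induction V arbitrary: U)
  case Nil then show ?case by (cases U) auto
next
  case (Cons v V) then show ?case by (cases U) auto
qed

lemma W_comm: "W V U = W U V"
proof (induction V arbitrary: U)
  case Nil then show ?case by (cases U) auto
next
  case (Cons v V) then show ?case by (cases U) (auto simp: Q_comm)
qed

lemma W_append: "length V = length U \<Longrightarrow> W (V @ V') (U @ U') = tprod (W V U) (W V' U')"
proof (induction V arbitrary: U)
  case Nil then show ?case by simp
next
  case (Cons v V) then show ?case by (cases U) (auto simp: tprod_assoc)
qed

lemma W_1: "W V [q] = (case V of [p] \<Rightarrow> Q p q | _ \<Rightarrow> 0)"
  by (cases V rule: remdups_adj.cases) (auto simp: W_len)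
lemma W_1': "W [p] U = (case U of [q] \<Rightarrow> Q p q | _ \<Rightarrow> 0)"
  using W_1 W_comm Q_comm by (simp split: list.split)

lemma dp_wd [simp]: "dp (wd V) (wd U) = W V U"
  by (simp add: dprod_def)
lemma dp_11: "dp (wd [v]) (wd [w]) = Q v w"
  by simp
lemma dp_add_left: "dp (x + x') y = dp x y + dp x' y"
  by (simp add: dprod_def bilin_add_left)
lemma dp_add_right: "dp x (y + y') = dp x y + dp x y'"
  by (simp add: dprod_def bilin_add_right)
lemma dp_tsmult_left: "dp (tsmult c x) y = tsmult c (dp x y)"
  by (simp add: dprod_def bilin_tsmult_left)
lemma dp_tsmult_right: "dp x (tsmult c y) = tsmult c (dp x y)"
  by (simp add: dprod_def bilin_tsmult_right)
lemma dp_zero_left [simp]: "dp 0 y = 0"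
  by (simp add: dprod_def)
lemma dp_zero_right [simp]: "dp x 0 = 0"
  by (simp add: dprod_def)
lemma dp_diff_left: "dp (x - x') y = dp x y - dp x' y"
  by (simp add: dprod_def bilin_diff_left)
lemma dp_diff_right: "dp x (y - y') = dp x y - dp x y'"
  by (simp add: dprod_def bilin_diff_right)
lemma dp_lin_left: "dp (lin g x) y = lin (\<lambda>v. dp (g v) y) x"
  by (simp add: dprod_def bilin_lin_left)
lemma dp_lin_right: "dp x (lin g y) = lin (\<lambda>w. dp x (g w)) y"
  by (simp add: dprod_def bilin_lin_right)
lemma dp_expand_left: "dp x y = lin (\<lambda>v. dp (wd v) y) x"
  using dp_lin_left[of wd x y] by (simp add: lin_wd_id)
lemma dp_expand_right: "dp x y = lin (\<lambda>w. dp x (wd w)) y"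
  using dp_lin_right[of x wd y] by (simp add: lin_wd_id)
lemma dp_comm: "dp x y = dp y x"
  unfolding dprod_def by (rule bilin_sym) (rule W_comm)

lemmas dp_lin_simps = dp_add_left dp_add_right dp_tsmult_left dp_tsmult_right dp_diff_left dp_diff_right

lemma dp_s1_expand:
  assumes "s1 x" "s1 y"
  shows "dp x y = lin (\<lambda>w. lin (\<lambda>u. Q (hd w) (hd u)) y) x"
  apply (subst dp_expand_left)
  apply (rule lin_cong)
  apply (subst dp_expand_right)
  apply (rule lin_cong)
  subgoal for w u
    using s1_keys[OF assms(1), of w] s1_keys[OF assms(2), of u] by auto
  done

lemma dp_s1: "s1 x \<Longrightarrow> s1 y \<Longrightarrow> s1 (dp x y)"
  by (simp add: dp_s1_expand s1_lin Q_s1)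

lemma dp_bnd:
  assumes x: "bnd i x" and y: "bnd j y"
  shows "bnd (i + j) (dp x y)"
proof -
  have "bnd (i + j) (lin (\<lambda>w. lin (\<lambda>u. Q (hd w) (hd u)) y) x)"
  proof (rule bnd_lin, rule bnd_lin)
    fix w u assume w: "w \<in> Poly_Mapping.keys x" and u: "u \<in> Poly_Mapping.keys y"
    obtain v where "w = [v]" "length v \<le> i" using x w bnd_def by blast
    moreover obtain q where "u = [q]" "length q \<le> j" using y u bnd_def by blast
    ultimately show "bnd (i + j) (Q (hd w) (hd u))"
      using bnd_mono[OF Q_bnd[of v q]] by simp
  qed
  then show ?thesis using dp_s1_expand[OF bnd_s1[OF x] bnd_s1[OF y]] by simp
qed

lemma dp_mf_left:
  assumes "s1 y"
  shows "dp (mf a x) y = mf a (dp x y)"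
proof -
  have "dp (mf a x) y = lin (\<lambda>v. dp (mf a (wd v)) y) x"
    unfolding mfirst_def by (simp add: dp_lin_left)
  also have "\<dots> = lin (\<lambda>v. mf a (dp (wd v) y)) x"
  proof (rule lin_cong)
    fix v
    show "dp (mf a (wd v)) y = mf a (dp (wd v) y)"
    proof -
      have "dp (mf a (wd v)) y = lin (\<lambda>w. dp (mf a (wd v)) (wd w)) y"
        by (rule dp_expand_right)
      also have "\<dots> = lin (\<lambda>w. mf a (dp (wd v) (wd w))) y"
      proof (rule lin_cong)
        fix w assume "w \<in> Poly_Mapping.keys y"
        then obtain q where q: "w = [q]" "q \<noteq> []" using assms s1_def by blast
        show "dp (mf a (wd v)) (wd w) = mf a (dp (wd v) (wd w))"
        proof (cases v rule: remdups_adj.cases)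
          case 1 then show ?thesis using q by (simp add: mfirst_wd)
        next
          case (2 p) then show ?thesis using q
            by (cases p) (simp_all add: mfirst_wd Q_mf[of a _ _ q, symmetric])
        next
          case (3 p1 p2 r) then show ?thesis using q by (cases p1) (simp_all add: mfirst_wd)
        qed
      qed
      also have "\<dots> = mf a (dp (wd v) y)"
        by (subst dp_expand_right[of "wd v"]) (simp add: mfirst_def lin_lin)
      finally show ?thesis .
    qed
  qed
  also have "\<dots> = mf a (dp x y)"
    by (subst dp_expand_left[of x]) (simp add: mfirst_def[of m a "lin _ _"] lin_lin mfirst_def)
  finally show ?thesis .
qed

lemma dp_mf_right: "s1 x \<Longrightarrow> dp x (mf a y) = mf a (dp x y)"
  using dp_mf_left[of x a y] dp_comm by metis

lemma dp_one_left: "s1 y \<Longrightarrow> dp one y = y"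
proof -
  assume y: "s1 y"
  have "dp one y = lin wd y"
    apply (subst dp_expand_right)
    apply (rule lin_cong)
    using y by (auto simp: s1_def m_unit neq_Nil_conv)
  then show ?thesis by (simp add: lin_wd_id)
qed

lemma dp_one_right: "s1 y \<Longrightarrow> dp y one = y"
  using dp_one_left dp_comm by metis

lemma dp_single: "s1 y \<Longrightarrow> dp (wd [[a]]) y = mf a y"
proof -
  assume y: "s1 y"
  show ?thesis
    apply (subst dp_expand_right)
    apply (subst mfirst_expand)
    apply (rule lin_cong)
    subgoal for w using s1_keys[OF y, of w] by (auto simp: neq_Nil_conv)
    done
qed

lemma wd_cons: "wd [a # v] = mf a (P (wd [v]))"
  by (simp add: m_unit_r)

end


lemma bilin_ext:
  fixes F G :: "('w \<Rightarrow>\<^sub>0 'k::comm_ring_1) \<Rightarrow> ('u \<Rightarrow>\<^sub>0 'k) \<Rightarrow> ('v \<Rightarrow>\<^sub>0 'k)"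
  assumes F1: "\<And>x x' y. F (x + x') y = F x y + F x' y" and F2: "\<And>c x y. F (tsmult c x) y = tsmult c (F x y)"
    and F3: "\<And>x y y'. F x (y + y') = F x y + F x y'" and F4: "\<And>c x y. F x (tsmult c y) = tsmult c (F x y)"
    and G1: "\<And>x x' y. G (x + x') y = G x y + G x' y" and G2: "\<And>c x y. G (tsmult c x) y = tsmult c (G x y)"
    and G3: "\<And>x y y'. G x (y + y') = G x y + G x y'" and G4: "\<And>c x y. G x (tsmult c y) = tsmult c (G x y)"
    and eq: "\<And>v w. v \<in> Poly_Mapping.keys x \<Longrightarrow> w \<in> Poly_Mapping.keys y \<Longrightarrow> F (wd v) (wd w) = G (wd v) (wd w)"
  shows "F x y = G x y"
proof -
  have "F x y = lin (\<lambda>v. F (wd v) y) x"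
    by (rule lin_eq_linear[of "\<lambda>x. F x y"]) (simp_all add: F1 F2)
  also have "\<dots> = lin (\<lambda>v. lin (\<lambda>w. F (wd v) (wd w)) y) x"
    by (rule lin_cong, rule lin_eq_linear) (simp_all add: F3 F4)
  also have "\<dots> = lin (\<lambda>v. lin (\<lambda>w. G (wd v) (wd w)) y) x"
    by (rule lin_cong, rule lin_cong) (simp add: eq)
  also have "\<dots> = lin (\<lambda>v. G (wd v) y) x"
    by (rule lin_cong, rule lin_eq_linear[symmetric]) (simp_all add: G3 G4)
  also have "\<dots> = G x y"
    by (rule lin_eq_linear[symmetric]) (simp_all add: G1 G2)
  finally show ?thesis .
qed

context qsl
begin

lemma erb:
  assumes "s1 x" "s1 y"
  shows "dp (P x) (P y) = P (dp x (P y)) + P (dp (P x) y) + tsmult lam (P (dp x y)) + tsmult kap (dp x y)"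
proof (rule bilin_ext[where F = "\<lambda>x y. dp (P x) (P y)" and
      G = "\<lambda>x y. P (dp x (P y)) + P (dp (P x) y) + tsmult lam (P (dp x y)) + tsmult kap (dp x y)"])
  fix v w assume v: "v \<in> Poly_Mapping.keys x" and w: "w \<in> Poly_Mapping.keys y"
  obtain p where p: "v = [p]" "p \<noteq> []" using s1_keys[OF assms(1) v] by blast
  obtain q where q: "w = [q]" "q \<noteq> []" using s1_keys[OF assms(2) w] by blast
  show "dp (P (wd v)) (P (wd w)) = P (dp (wd v) (P (wd w))) + P (dp (P (wd v)) (wd w)) +
      tsmult lam (P (dp (wd v) (wd w))) + tsmult kap (dp (wd v) (wd w))"
    using p q by (simp add: m_unit mf_e Q_s1)
qed (simp_all add: dp_lin_simps pre_add pre_tsmult tsmult_add_right ac_simps)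

definition assoc3 where "assoc3 x y z \<longleftrightarrow> dp (dp x y) z = dp x (dp y z)"

lemma assoc3_ext:
  assumes "\<And>v w u. v \<in> Poly_Mapping.keys x \<Longrightarrow> w \<in> Poly_Mapping.keys y \<Longrightarrow> u \<in> Poly_Mapping.keys z \<Longrightarrow>
    assoc3 (wd v) (wd w) (wd u)"
  shows "assoc3 x y z"
proof -
  have "dp (dp x y) z = lin (\<lambda>v. dp (dp (wd v) y) z) x"
    by (subst dp_expand_left[of x y]) (simp add: dp_lin_left)
  also have "\<dots> = lin (\<lambda>v. dp (wd v) (dp y z)) x"
  proof (rule lin_cong)
    fix v assume v: "v \<in> Poly_Mapping.keys x"
    have "dp (dp (wd v) y) z = lin (\<lambda>w. dp (dp (wd v) (wd w)) z) y"
      by (subst dp_expand_right[of "wd v" y]) (simp add: dp_lin_left)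
    also have "\<dots> = lin (\<lambda>w. dp (wd v) (dp (wd w) z)) y"
    proof (rule lin_cong)
      fix w assume w: "w \<in> Poly_Mapping.keys y"
      have "dp (dp (wd v) (wd w)) z = lin (\<lambda>u. dp (dp (wd v) (wd w)) (wd u)) z"
        by (rule dp_expand_right)
      also have "\<dots> = lin (\<lambda>u. dp (wd v) (dp (wd w) (wd u))) z"
        by (rule lin_cong) (use assms v w in \<open>simp add: assoc3_def\<close>)
      also have "\<dots> = dp (wd v) (dp (wd w) z)"
        by (subst dp_expand_right[of "wd w" z]) (simp add: dp_lin_right)
      finally show "dp (dp (wd v) (wd w)) z = dp (wd v) (dp (wd w) z)" .
    qed
    also have "\<dots> = dp (wd v) (dp y z)"
      by (subst dp_expand_left[of y z]) (simp add: dp_lin_right)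
    finally show "dp (dp (wd v) y) z = dp (wd v) (dp y z)" .
  qed
  also have "\<dots> = dp x (dp y z)"
    by (rule dp_expand_left[symmetric])
  finally show ?thesis by (simp add: assoc3_def)
qed

lemma erb_assoc_step:
  assumes x: "bnd i x" and y: "bnd j y" and z: "bnd l z"
    and IH: "\<And>x' y' z' i' j' l'. bnd i' x' \<Longrightarrow> bnd j' y' \<Longrightarrow> bnd l' z' \<Longrightarrow> i' + j' + l' < i + j + l + 3 \<Longrightarrow>
      dp (dp x' y') z' = dp x' (dp y' z')"
  shows "dp (dp (P x) (P y)) (P z) = dp (P x) (dp (P y) (P z))"
proof -
  have sx: "s1 x" by (rule bnd_s1[OF x])
  have sy: "s1 y" by (rule bnd_s1[OF y])
  have sz: "s1 z" by (rule bnd_s1[OF z])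
  have X: "bnd (Suc i) (P x)" by (rule pre_bnd[OF x])
  have Y: "bnd (Suc j) (P y)" by (rule pre_bnd[OF y])
  have Z: "bnd (Suc l) (P z)" by (rule pre_bnd[OF z])
  have sX: "s1 (P x)" by (rule pre_s1)
  have sY: "s1 (P y)" by (rule pre_s1)
  have sZ: "s1 (P z)" by (rule pre_s1)
  note erbs = erb[OF sx sy] erb[OF sy sz]
    erb[OF dp_s1[OF sx sY] sz] erb[OF dp_s1[OF sX sy] sz] erb[OF dp_s1[OF sx sy] sz]
    erb[OF sx dp_s1[OF sy sZ]] erb[OF sx dp_s1[OF sY sz]] erb[OF sx dp_s1[OF sy sz]]
  have a: "dp (dp x (P y)) (P z) = dp x (dp (P y) (P z))" by (rule IH[OF x Y Z]) simp
  have b: "dp (P x) (dp (P y) z) = dp (dp (P x) (P y)) z" by (rule IH[OF X Y z, symmetric]) simp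
  have c: "dp (dp (P x) y) (P z) = dp (P x) (dp y (P z))" by (rule IH[OF X y Z]) simp
  have d: "dp (dp x y) (P z) = dp x (dp y (P z))" by (rule IH[OF x y Z]) simp
  have e: "dp (dp x y) z = dp x (dp y z)" by (rule IH[OF x y z]) simp
  have f: "dp (dp x (P y)) z = dp x (dp (P y) z)" by (rule IH[OF x Y z]) simp
  have g: "dp (dp (P x) y) z = dp (P x) (dp y z)" by (rule IH[OF X y z]) simp
  show ?thesis
    by (simp add: erbs a b c d e f g dp_lin_simps pre_add pre_tsmult tsmult_add_right ac_simps)
qed

lemma bnd_keys: "bnd n x \<Longrightarrow> w \<in> Poly_Mapping.keys x \<Longrightarrow> \<exists>v. w = [v] \<and> v \<noteq> [] \<and> length v \<le> n"
  by (simp add: bnd_def)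

lemma word_decomp:
  assumes "a \<noteq> []"
  obtains a0 T where "wd [a] = mf a0 T" "s1 T"
    "T = one \<or> (\<exists>a'. a' \<noteq> [] \<and> T = P (wd [a']) \<and> length a = Suc (length a'))"
proof -
  obtain a0 a' where a: "a = a0 # a'" using assms by (cases a) auto
  show ?thesis
  proof (cases "a' = []")
    case True
    then show ?thesis using that[of a0 one] a by (simp add: m_unit_r)
  next
    case False
    show ?thesis
      apply (rule that[of a0 "P (wd [a'])"])
      using a False by (auto simp: m_unit_r pre_s1)
  qed
qed

lemma assoc_words:
  "a \<noteq> [] \<Longrightarrow> b \<noteq> [] \<Longrightarrow> c \<noteq> [] \<Longrightarrow>
    dp (dp (wd [a]) (wd [b])) (wd [c]) = dp (wd [a]) (dp (wd [b]) (wd [c]))"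
proof (induction "length a + length b + length c" arbitrary: a b c rule: less_induct)
  case less
  have IH: "dp (dp x' y') z' = dp x' (dp y' z')"
    if hh: "bnd i' x'" "bnd j' y'" "bnd l' z'" "i' + j' + l' < length a + length b + length c" for x' y' z' i' j' l'
  proof -
    have "assoc3 x' y' z'"
    proof (rule assoc3_ext)
      fix v w u assume v: "v \<in> Poly_Mapping.keys x'" and w: "w \<in> Poly_Mapping.keys y'" and u: "u \<in> Poly_Mapping.keys z'"
      obtain p where p: "v = [p]" "p \<noteq> []" "length p \<le> i'" using bnd_keys[OF hh(1) v] by blast
      obtain q where q: "w = [q]" "q \<noteq> []" "length q \<le> j'" using bnd_keys[OF hh(2) w] by blast
      obtain r where r: "u = [r]" "r \<noteq> []" "length r \<le> l'" using bnd_keys[OF hh(3) u] by blast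
      have "dp (dp (wd [p]) (wd [q])) (wd [r]) = dp (wd [p]) (dp (wd [q]) (wd [r]))"
        using less(1)[of p q r] p q r hh(4) by simp
      then show "assoc3 (wd v) (wd w) (wd u)" using p q r by (simp add: assoc3_def)
    qed
    then show ?thesis by (simp add: assoc3_def)
  qed
  obtain a0 Ta where a: "wd [a] = mf a0 Ta" "s1 Ta"
    "Ta = one \<or> (\<exists>a'. a' \<noteq> [] \<and> Ta = P (wd [a']) \<and> length a = Suc (length a'))"
    using word_decomp[OF less(2)] by blast
  obtain b0 Tb where b: "wd [b] = mf b0 Tb" "s1 Tb"
    "Tb = one \<or> (\<exists>b'. b' \<noteq> [] \<and> Tb = P (wd [b']) \<and> length b = Suc (length b'))"
    using word_decomp[OF less(3)] by blast
  obtain c0 Tc where c: "wd [c] = mf c0 Tc" "s1 Tc"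
    "Tc = one \<or> (\<exists>c'. c' \<noteq> [] \<and> Tc = P (wd [c']) \<and> length c = Suc (length c'))"
    using word_decomp[OF less(4)] by blast
  have core: "dp (dp Ta Tb) Tc = dp Ta (dp Tb Tc)"
  proof (cases "Ta = one \<or> Tb = one \<or> Tc = one")
    case True
    have sbc: "s1 (dp Tb Tc)" using b(2) c(2) by (rule dp_s1)
    have sab: "s1 (dp Ta Tb)" using a(2) b(2) by (rule dp_s1)
    show ?thesis
    proof (cases "Ta = one")
      case True
      then show ?thesis using dp_one_left[OF b(2)] dp_one_left[OF sbc] by simp
    next
      case F1: False
      show ?thesis
      proof (cases "Tb = one")
        case True
        then show ?thesis using dp_one_right[OF a(2)] dp_one_left[OF c(2)] by simp
      next
        case False
        then have "Tc = one" using F1 \<open>Ta = one \<or> Tb = one \<or> Tc = one\<close> by blast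
        then show ?thesis using dp_one_right[OF b(2)] dp_one_right[OF sab] by simp
      qed
    qed
  next
    case False
    then obtain a' b' c' where abc: "a' \<noteq> []" "Ta = P (wd [a'])" "length a = Suc (length a')"
      "b' \<noteq> []" "Tb = P (wd [b'])" "length b = Suc (length b')"
      "c' \<noteq> []" "Tc = P (wd [c'])" "length c = Suc (length c')"
      using a(3) b(3) c(3) by blast
    have "dp (dp (P (wd [a'])) (P (wd [b']))) (P (wd [c'])) = dp (P (wd [a'])) (dp (P (wd [b'])) (P (wd [c'])))"
    proof (rule erb_assoc_step[of "length a'" _ "length b'" _ "length c'"])
      show "bnd (length a') (wd [a'])" using abc by simp
      show "bnd (length b') (wd [b'])" using abc by simp
      show "bnd (length c') (wd [c'])" using abc by simp
      fix x' y' z' :: "('a,'k) tw" and i' j' l' :: nat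
      assume h: "bnd i' x'" "bnd j' y'" "bnd l' z'" "i' + j' + l' < length a' + length b' + length c' + 3"
      show "dp (dp x' y') z' = dp x' (dp y' z')"
        by (rule IH[OF h(1-3)]) (use h(4) abc in simp)
    qed
    then show ?thesis using abc by simp
  qed
  have s: "s1 (mf x T)" for x T by (rule mfirst_s1)
  have l: "dp (dp (mf a0 Ta) (mf b0 Tb)) (mf c0 Tc) = mf a0 (mf b0 (mf c0 (dp (dp Ta Tb) Tc)))"
  proof -
    have "dp (mf a0 Ta) (mf b0 Tb) = mf a0 (mf b0 (dp Ta Tb))"
      using dp_mf_left[OF s, of a0 Ta b0 Tb] dp_mf_right[OF a(2), of b0 Tb] by simp
    moreover have "dp (mf a0 (mf b0 (dp Ta Tb))) (mf c0 Tc) = mf a0 (mf b0 (mf c0 (dp (dp Ta Tb) Tc)))"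
      using dp_mf_left[OF s, of a0 "mf b0 (dp Ta Tb)" c0 Tc] dp_mf_left[OF s, of b0 "dp Ta Tb" c0 Tc]
        dp_mf_right[OF dp_s1[OF a(2) b(2)], of c0 Tc] by simp
    ultimately show ?thesis by simp
  qed
  have r: "dp (mf a0 Ta) (dp (mf b0 Tb) (mf c0 Tc)) = mf a0 (mf b0 (mf c0 (dp Ta (dp Tb Tc))))"
  proof -
    have "dp (mf b0 Tb) (mf c0 Tc) = mf b0 (mf c0 (dp Tb Tc))"
      using dp_mf_left[OF s, of b0 Tb c0 Tc] dp_mf_right[OF b(2), of c0 Tc] by simp
    moreover have "dp (mf a0 Ta) (mf b0 (mf c0 (dp Tb Tc))) = mf a0 (mf b0 (mf c0 (dp Ta (dp Tb Tc))))"
      using dp_mf_left[OF s, of a0 Ta b0 "mf c0 (dp Tb Tc)"] dp_mf_right[OF a(2), of b0 "mf c0 (dp Tb Tc)"]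
        dp_mf_right[OF a(2), of c0 "dp Tb Tc"] by simp
    ultimately show ?thesis by simp
  qed
  show ?case
    unfolding a(1) b(1) c(1) l r core ..
qed

lemma dp_assoc:
  assumes "s1 x" "s1 y" "s1 z"
  shows "dp (dp x y) z = dp x (dp y z)"
proof -
  have "assoc3 x y z"
  proof (rule assoc3_ext)
    fix v w u assume v: "v \<in> Poly_Mapping.keys x" and w: "w \<in> Poly_Mapping.keys y" and u: "u \<in> Poly_Mapping.keys z"
    obtain p where p: "v = [p]" "p \<noteq> []" using s1_keys[OF assms(1) v] by blast
    obtain q where q: "w = [q]" "q \<noteq> []" using s1_keys[OF assms(2) w] by blast
    obtain r where r: "u = [r]" "r \<noteq> []" using s1_keys[OF assms(3) u] by blast
    show "assoc3 (wd v) (wd w) (wd u)" using assoc_words[of p q r] p q r by (simp add: assoc3_def)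
  qed
  then show ?thesis by (simp add: assoc3_def)
qed

end


locale shb = qsl m e lam kap
  for m :: "'a::ab_group_add \<Rightarrow> 'a \<Rightarrow> 'a" and e :: 'a and lam kap :: "'k::comm_ring_1" +
  fixes s :: "'k \<Rightarrow> 'a \<Rightarrow> 'a" and DA :: "'a \<Rightarrow> ('a,'k) tw" and epsA :: "'a \<Rightarrow> 'k" and mu :: 'k
  assumes root: "mu ^ 2 - lam * mu + kap = 0"
    and m_add_left: "\<And>x y z. m (x + y) z = m x z + m y z"
    and m_add_right: "\<And>x y z. m x (y + z) = m x y + m x z"
    and m_scale_left: "\<And>c x y. m (s c x) y = s c (m x y)"
    and m_scale_right: "\<And>c x y. m x (s c y) = s c (m x y)"
    and DA_shape: "\<And>x. \<forall>w\<in>Poly_Mapping.keys (DA x). \<exists>a b. w = [[a], [b]]"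
    and DA_add: "\<And>x y. teq s (DA (x + y)) (DA x + DA y)"
    and DA_scale: "\<And>c x. teq s (DA (s c x)) (tsmult c (DA x))"
    and epsA_add: "\<And>x y. epsA (x + y) = epsA x + epsA y"
    and epsA_scale: "\<And>c x. epsA (s c x) = c * epsA x"
    and coassoc_A: "\<And>x. teq s
          (tmap2 (\<lambda>v. case v of [a] \<Rightarrow> DA a | _ \<Rightarrow> 0) (\<lambda>v. wd [v]) (DA x))
          (tmap2 (\<lambda>v. wd [v]) (\<lambda>v. case v of [a] \<Rightarrow> DA a | _ \<Rightarrow> 0) (DA x))"
    and counit_A_left: "\<And>x. teq s
          (tmap2 (\<lambda>v. case v of [a] \<Rightarrow> tsmult (epsA a) (wd []) | _ \<Rightarrow> 0) (\<lambda>v. wd [v]) (DA x))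
          (wd [[x]])"
    and counit_A_right: "\<And>x. teq s
          (tmap2 (\<lambda>v. wd [v]) (\<lambda>v. case v of [a] \<Rightarrow> tsmult (epsA a) (wd []) | _ \<Rightarrow> 0) (DA x))
          (wd [[x]])"
    and DA_mult: "\<And>x y. teq s (DA (m x y)) (dprod m e lam kap (DA x) (DA y))"
    and DA_unit: "teq s (DA e) (wd [[e], [e]])"
    and epsA_mult: "\<And>x y. epsA (m x y) = epsA x * epsA y"
    and epsA_unit: "epsA e = 1"
begin

definition addgen :: "'a list list \<Rightarrow> 'a list \<Rightarrow> 'a \<Rightarrow> 'a \<Rightarrow> 'a list \<Rightarrow> 'a list list \<Rightarrow> ('a,'k) tw" where
  "addgen us xs x y ys vs = wd (us @ (xs @ (x + y) # ys) # vs) - wd (us @ (xs @ x # ys) # vs) - wd (us @ (xs @ y # ys) # vs)"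
definition scagen :: "'a list list \<Rightarrow> 'a list \<Rightarrow> 'k \<Rightarrow> 'a \<Rightarrow> 'a list \<Rightarrow> 'a list list \<Rightarrow> ('a,'k) tw" where
  "scagen us xs c x ys vs = wd (us @ (xs @ s c x # ys) # vs) - tsmult c (wd (us @ (xs @ x # ys) # vs))"

definition RA :: "('a,'k) tw set" where
  "RA = {addgen us xs x y ys vs | us xs x y ys vs. True} \<union> {scagen us xs c x ys vs | us xs c x ys vs. True}"

abbreviation KA where "KA \<equiv> kspan RA"

definition eqa :: "('a,'k) tw \<Rightarrow> ('a,'k) tw \<Rightarrow> bool" where
  "eqa x y \<longleftrightarrow> x - y \<in> KA"

lemma tensor_rels_eq: "tensor_rels s = RA \<union> {wd w | w. [] \<in> set w}"
  unfolding tensor_rels_def RA_def addgen_def scagen_def by blast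

lemma RA_sub: "RA \<subseteq> tensor_rels s"
  by (simp add: tensor_rels_eq)

lemma KA_teq: "x \<in> KA \<Longrightarrow> x \<in> kspan (tensor_rels s)"
  by (rule kspan_mono[OF RA_sub])

lemma eqa_teq: "eqa x y \<Longrightarrow> teq s x y"
  by (simp add: eqa_def teq_def KA_teq)

lemma addgen_KA: "addgen us xs x y ys vs \<in> KA"
  by (rule kspan_gen) (unfold RA_def, blast)
lemma scagen_KA: "scagen us xs c x ys vs \<in> KA"
  by (rule kspan_gen) (unfold RA_def, blast)

lemma KA_add: "x \<in> KA \<Longrightarrow> y \<in> KA \<Longrightarrow> x + y \<in> KA" by (rule kspan_add)
lemma KA_diff: "x \<in> KA \<Longrightarrow> y \<in> KA \<Longrightarrow> x - y \<in> KA" by (rule kspan_diff)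
lemma KA_tsmult: "x \<in> KA \<Longrightarrow> tsmult c x \<in> KA" by (rule kspan_tsmult)
lemma KA_uminus: "x \<in> KA \<Longrightarrow> - x \<in> KA" by (rule kspan_uminus)
lemma KA_zero: "0 \<in> KA" by (rule kspan_zero)

lemma eqa_refl [simp]: "eqa x x"
  by (simp add: eqa_def KA_zero)
lemma eqa_sym: "eqa x y \<Longrightarrow> eqa y x"
  unfolding eqa_def using KA_uminus by fastforce
lemma eqa_trans: "eqa x y \<Longrightarrow> eqa y z \<Longrightarrow> eqa x z"
  unfolding eqa_def using KA_add by fastforce
lemma eqa_add: "eqa x x' \<Longrightarrow> eqa y y' \<Longrightarrow> eqa (x + y) (x' + y')"
  unfolding eqa_def using KA_add[of "x - x'" "y - y'"] by (simp add: algebra_simps)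
lemma eqa_diff: "eqa x x' \<Longrightarrow> eqa y y' \<Longrightarrow> eqa (x - y) (x' - y')"
  unfolding eqa_def using KA_diff[of "x - x'" "y - y'"] by (simp add: algebra_simps)
lemma eqa_tsmult: "eqa x x' \<Longrightarrow> eqa (tsmult c x) (tsmult c x')"
  unfolding eqa_def using KA_tsmult[of "x - x'" c] by (simp add: tsmult_diff_right)
lemma eqa_lin_cong: "(\<And>w. w \<in> Poly_Mapping.keys x \<Longrightarrow> eqa (f w) (g w)) \<Longrightarrow> eqa (lin f x) (lin g x)"
  unfolding eqa_def by (rule lin_cong_kspan)
lemma eqa_eq_trans: "eqa x y \<Longrightarrow> y = z \<Longrightarrow> eqa x z" by simp
lemma eq_eqa_trans: "x = y \<Longrightarrow> eqa y z \<Longrightarrow> eqa x z" by simp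

definition mlw :: "('a list list \<Rightarrow> ('a,'k) tw) \<Rightarrow> bool" where
  "mlw F \<longleftrightarrow> (\<forall>us xs x y ys vs. F (us @ (xs @ (x + y) # ys) # vs) - F (us @ (xs @ x # ys) # vs) - F (us @ (xs @ y # ys) # vs) \<in> KA)
    \<and> (\<forall>us xs c x ys vs. F (us @ (xs @ s c x # ys) # vs) - tsmult c (F (us @ (xs @ x # ys) # vs)) \<in> KA)"

lemma mlwI:
  assumes "\<And>us xs x y ys vs. F (us @ (xs @ (x + y) # ys) # vs) - F (us @ (xs @ x # ys) # vs) - F (us @ (xs @ y # ys) # vs) \<in> KA"
    and "\<And>us xs c x ys vs. F (us @ (xs @ s c x # ys) # vs) - tsmult c (F (us @ (xs @ x # ys) # vs)) \<in> KA"
  shows "mlw F"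
  using assms by (simp add: mlw_def)

lemma lin_KA: "mlw F \<Longrightarrow> g \<in> KA \<Longrightarrow> lin F g \<in> KA"
proof -
  assume F: "mlw F" and g: "g \<in> KA"
  show ?thesis
  proof (rule kspan_lin[OF _ g])
    fix r assume "r \<in> RA"
    then show "lin F r \<in> KA"
      using F unfolding RA_def mlw_def addgen_def scagen_def
      by (auto simp: lin_diff lin_tsmult)
  qed
qed

lemma lin_resp: "mlw F \<Longrightarrow> eqa x y \<Longrightarrow> eqa (lin F x) (lin F y)"
  unfolding eqa_def using lin_KA[of F "x - y"] by (simp add: lin_diff)

definition ml :: "('a list \<Rightarrow> ('a,'k) tw) \<Rightarrow> bool" where
  "ml f \<longleftrightarrow> (\<forall>xs x y ys. f (xs @ (x + y) # ys) - f (xs @ x # ys) - f (xs @ y # ys) \<in> KA)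
    \<and> (\<forall>xs c x ys. f (xs @ s c x # ys) - tsmult c (f (xs @ x # ys)) \<in> KA)"

lemma mlI:
  assumes "\<And>xs x y ys. f (xs @ (x + y) # ys) - f (xs @ x # ys) - f (xs @ y # ys) \<in> KA"
    and "\<And>xs c x ys. f (xs @ s c x # ys) - tsmult c (f (xs @ x # ys)) \<in> KA"
  shows "ml f"
  using assms by (simp add: ml_def)

lemma mlD1: "ml f \<Longrightarrow> f (xs @ (x + y) # ys) - f (xs @ x # ys) - f (xs @ y # ys) \<in> KA"
  by (simp add: ml_def)
lemma mlD2: "ml f \<Longrightarrow> f (xs @ s c x # ys) - tsmult c (f (xs @ x # ys)) \<in> KA"
  by (simp add: ml_def)

lemma tprod_KA_left: "g \<in> KA \<Longrightarrow> tprod g y \<in> KA"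
proof -
  assume g: "g \<in> KA"
  have "tprod g y = lin (\<lambda>w. tprod g (wd w)) y" by (rule tprod_expand_right)
  also have "\<dots> \<in> KA"
  proof (rule kspan_lin_keys)
    fix w
    have "tprod g (wd w) = lin (\<lambda>v. wd (v @ w)) g"
      by (simp add: tprod_def bilin_right_wd)
    also have "\<dots> \<in> KA"
      by (rule lin_KA[OF _ g], rule mlwI) (simp_all add: addgen_KA[unfolded addgen_def] scagen_KA[unfolded scagen_def])
    finally show "tprod g (wd w) \<in> KA" .
  qed
  finally show ?thesis .
qed

lemma tprod_KA_right: "g \<in> KA \<Longrightarrow> tprod x g \<in> KA"
proof -
  assume g: "g \<in> KA"
  have "tprod x g = lin (\<lambda>w. tprod (wd w) g) x" by (rule tprod_expand_left)
  also have "\<dots> \<in> KA"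
  proof (rule kspan_lin_keys)
    fix w
    have "tprod (wd w) g = lin (\<lambda>v. wd (w @ v)) g"
      by (simp add: tprod_def bilin_wd_left)
    also have "\<dots> \<in> KA"
      using addgen_KA[of "w @ _", unfolded addgen_def] scagen_KA[of "w @ _", unfolded scagen_def]
      by (intro lin_KA[OF _ g] mlwI) simp_all
    finally show "tprod (wd w) g \<in> KA" .
  qed
  finally show ?thesis .
qed

lemma eqa_tprod: "eqa x x' \<Longrightarrow> eqa y y' \<Longrightarrow> eqa (tprod x y) (tprod x' y')"
proof -
  assume a: "eqa x x'" "eqa y y'"
  have "tprod x y - tprod x' y' = tprod (x - x') y + tprod x' (y - y')"
    by (simp add: tprod_diff_left tprod_diff_right)
  also have "\<dots> \<in> KA" using a unfolding eqa_def by (intro KA_add tprod_KA_left tprod_KA_right)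
  finally show ?thesis by (simp add: eqa_def)
qed

lemma mlw_zero: "mlw (\<lambda>_. 0)"
  by (rule mlwI) (simp_all add: KA_zero)

lemma mlw_lin: "(\<And>U. mlw (\<lambda>V. G V U)) \<Longrightarrow> mlw (\<lambda>V. lin (G V) y)"
proof (rule mlwI)
  fix us xs x z ys vs
  assume h: "\<And>U. mlw (\<lambda>V. G V U)"
  have "lin (G (us @ (xs @ (x + z) # ys) # vs)) y - lin (G (us @ (xs @ x # ys) # vs)) y - lin (G (us @ (xs @ z # ys) # vs)) y
      = lin (\<lambda>U. G (us @ (xs @ (x + z) # ys) # vs) U - G (us @ (xs @ x # ys) # vs) U - G (us @ (xs @ z # ys) # vs) U) y"
    by (simp add: lin_fun_diff)
  also have "\<dots> \<in> KA" by (rule kspan_lin_keys) (use h in \<open>simp add: mlw_def\<close>)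
  finally show "lin (G (us @ (xs @ (x + z) # ys) # vs)) y - lin (G (us @ (xs @ x # ys) # vs)) y - lin (G (us @ (xs @ z # ys) # vs)) y \<in> KA" .
next
  fix us xs c x ys vs
  assume h: "\<And>U. mlw (\<lambda>V. G V U)"
  have "lin (G (us @ (xs @ s c x # ys) # vs)) y - tsmult c (lin (G (us @ (xs @ x # ys) # vs)) y)
      = lin (\<lambda>U. G (us @ (xs @ s c x # ys) # vs) U - tsmult c (G (us @ (xs @ x # ys) # vs) U)) y"
    by (simp add: lin_fun_diff lin_fun_tsmult)
  also have "\<dots> \<in> KA" by (rule kspan_lin_keys) (use h in \<open>simp add: mlw_def\<close>)
  finally show "lin (G (us @ (xs @ s c x # ys) # vs)) y - tsmult c (lin (G (us @ (xs @ x # ys) # vs)) y) \<in> KA" .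
qed

lemma pre_mlw: "mlw (\<lambda>w. case w of [v] \<Rightarrow> wd [c # v] | _ \<Rightarrow> (0 :: ('a,'k) tw))"
proof (rule mlwI)
  fix us xs x y ys vs
  show "(case us @ (xs @ (x + y) # ys) # vs of [v] \<Rightarrow> wd [c # v] | _ \<Rightarrow> 0) -
       (case us @ (xs @ x # ys) # vs of [v] \<Rightarrow> wd [c # v] | _ \<Rightarrow> 0) -
       (case us @ (xs @ y # ys) # vs of [v] \<Rightarrow> wd [c # v] | _ \<Rightarrow> 0) \<in> KA"
    using addgen_KA[of "[]" "c # xs" x y ys "[]", unfolded addgen_def]
    by (cases us; cases vs) (simp_all add: KA_zero split: list.split)
next
  fix us xs d x ys vs
  show "(case us @ (xs @ s d x # ys) # vs of [v] \<Rightarrow> wd [c # v] | _ \<Rightarrow> 0) -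
       tsmult d (case us @ (xs @ x # ys) # vs of [v] \<Rightarrow> wd [c # v] | _ \<Rightarrow> 0) \<in> KA"
    using scagen_KA[of "[]" "c # xs" d x ys "[]", unfolded scagen_def]
    by (cases us; cases vs) (simp_all add: KA_zero split: list.split)
qed

lemma pre_KA: "g \<in> KA \<Longrightarrow> pre c g \<in> KA"
  unfolding pre_def by (rule lin_KA[OF pre_mlw])

lemma eqa_pre: "eqa x y \<Longrightarrow> eqa (pre c x) (pre c y)"
  unfolding pre_def by (rule lin_resp[OF pre_mlw])

lemma pre_letter_add: "pre (x + y) T - pre x T - pre y T \<in> KA"
proof -
  have "pre (x + y) T - pre x T - pre y T = lin (\<lambda>w. pre (x + y) (wd w) - pre x (wd w) - pre y (wd w)) T"
    by (simp add: pre_def lin_fun_diff)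
  also have "\<dots> \<in> KA"
  proof (rule kspan_lin_keys)
    fix w
    show "pre (x + y) (wd w) - pre x (wd w) - pre y (wd w) \<in> KA"
      using addgen_KA[of "[]" "[]" x y _ "[]", unfolded addgen_def]
      by (cases w rule: remdups_adj.cases) (simp_all add: pre_wd KA_zero)
  qed
  finally show ?thesis .
qed

lemma pre_letter_sca: "pre (s c x) T - tsmult c (pre x T) \<in> KA"
proof -
  have "pre (s c x) T - tsmult c (pre x T) = lin (\<lambda>w. pre (s c x) (wd w) - tsmult c (pre x (wd w))) T"
    by (simp add: pre_def lin_fun_diff lin_fun_tsmult)
  also have "\<dots> \<in> KA"
  proof (rule kspan_lin_keys)
    fix w
    show "pre (s c x) (wd w) - tsmult c (pre x (wd w)) \<in> KA"
      using scagen_KA[of "[]" "[]" c x _ "[]", unfolded scagen_def]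
      by (cases w rule: remdups_adj.cases) (simp_all add: pre_wd KA_zero)
  qed
  finally show ?thesis .
qed

lemma mfirst_mlw: "mlw (\<lambda>w. case w of [b # v] \<Rightarrow> wd [m c b # v] | _ \<Rightarrow> (0 :: ('a,'k) tw))"
proof (rule mlwI)
  fix us xs x y ys vs
  show "(case us @ (xs @ (x + y) # ys) # vs of [b # v] \<Rightarrow> wd [m c b # v] | _ \<Rightarrow> 0) -
       (case us @ (xs @ x # ys) # vs of [b # v] \<Rightarrow> wd [m c b # v] | _ \<Rightarrow> 0) -
       (case us @ (xs @ y # ys) # vs of [b # v] \<Rightarrow> wd [m c b # v] | _ \<Rightarrow> 0) \<in> KA"
  proof (cases "us = [] \<and> vs = []")
    case True
    show ?thesis
    proof (cases xs)
      case Nil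
      then show ?thesis using True addgen_KA[of "[]" "[]" "m c x" "m c y" ys "[]", unfolded addgen_def]
        by (simp add: m_add_right)
    next
      case (Cons b xs')
      then show ?thesis using True addgen_KA[of "[]" "m c b # xs'" x y ys "[]", unfolded addgen_def]
        by simp
    qed
  next
    case False
    then show ?thesis by (cases us; cases vs) (simp_all add: KA_zero split: list.split)
  qed
next
  fix us xs d x ys vs
  show "(case us @ (xs @ s d x # ys) # vs of [b # v] \<Rightarrow> wd [m c b # v] | _ \<Rightarrow> 0) -
       tsmult d (case us @ (xs @ x # ys) # vs of [b # v] \<Rightarrow> wd [m c b # v] | _ \<Rightarrow> 0) \<in> KA"
  proof (cases "us = [] \<and> vs = []")
    case True
    show ?thesis
    proof (cases xs)
      case Nil
      then show ?thesis using True scagen_KA[of "[]" "[]" d "m c x" ys "[]", unfolded scagen_def]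
        by (simp add: m_scale_right)
    next
      case (Cons b xs')
      then show ?thesis using True scagen_KA[of "[]" "m c b # xs'" d x ys "[]", unfolded scagen_def]
        by simp
    qed
  next
    case False
    then show ?thesis by (cases us; cases vs) (simp_all add: KA_zero split: list.split)
  qed
qed

lemma mfirst_KA: "g \<in> KA \<Longrightarrow> mfirst m c g \<in> KA"
  unfolding mfirst_def by (rule lin_KA[OF mfirst_mlw])

lemma eqa_mfirst: "eqa x y \<Longrightarrow> eqa (mfirst m c x) (mfirst m c y)"
  unfolding mfirst_def by (rule lin_resp[OF mfirst_mlw])

lemma mfirst_letter_add: "mfirst m (x + y) T - mfirst m x T - mfirst m y T \<in> KA"
proof -
  have "mfirst m (x + y) T - mfirst m x T - mfirst m y T = lin (\<lambda>w. mfirst m (x + y) (wd w) - mfirst m x (wd w) - mfirst m y (wd w)) T"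
    by (simp add: mfirst_def lin_fun_diff)
  also have "\<dots> \<in> KA"
  proof (rule kspan_lin_keys)
    fix w
    show "mfirst m (x + y) (wd w) - mfirst m x (wd w) - mfirst m y (wd w) \<in> KA"
      using addgen_KA[of "[]" "[]" "m x _" "m y _" _ "[]", unfolded addgen_def]
      by (simp add: mfirst_wd KA_zero m_add_left split: list.split)
  qed
  finally show ?thesis .
qed

lemma mfirst_letter_sca: "mfirst m (s c x) T - tsmult c (mfirst m x T) \<in> KA"
proof -
  have "mfirst m (s c x) T - tsmult c (mfirst m x T) = lin (\<lambda>w. mfirst m (s c x) (wd w) - tsmult c (mfirst m x (wd w))) T"
    by (simp add: mfirst_def lin_fun_diff lin_fun_tsmult)
  also have "\<dots> \<in> KA"
  proof (rule kspan_lin_keys)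
    fix w
    show "mfirst m (s c x) (wd w) - tsmult c (mfirst m x (wd w)) \<in> KA"
      using scagen_KA[of "[]" "[]" c "m x _" _ "[]", unfolded scagen_def]
      by (simp add: mfirst_wd KA_zero m_scale_left split: list.split)
  qed
  finally show ?thesis .
qed

subsection \<open>The quasi-shuffle product is multilinear\<close>

lemma Q_add1: "Q (xs @ (x + y) # ys) w - Q (xs @ x # ys) w - Q (xs @ y # ys) w \<in> KA"
proof (induction "length xs + length w" arbitrary: xs w rule: less_induct)
  case less
  show ?case
  proof (cases w)
    case Nil then show ?thesis by (simp add: KA_zero)
  next
    case (Cons b w')
    show ?thesis
    proof (cases xs)
      case Nil
      show ?thesis
      proof (cases "ys = []")
        case True
        then show ?thesis using Nil Cons addgen_KA[of "[]" "[]" "m x b" "m y b" w' "[]", unfolded addgen_def]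
          by (simp add: m_add_left)
      next
        case ys: False
        show ?thesis
        proof (cases "w' = []")
          case True
          then show ?thesis using Nil Cons ys addgen_KA[of "[]" "[]" "m x b" "m y b" ys "[]", unfolded addgen_def]
            by (simp add: m_add_left)
        next
          case False
          have "Q (xs @ (x + y) # ys) w - Q (xs @ x # ys) w - Q (xs @ y # ys) w =
              (pre (m x b + m y b) (Q ys (e # w')) - pre (m x b) (Q ys (e # w')) - pre (m y b) (Q ys (e # w')))
            + (pre (m x b + m y b) (Q (e # ys) w') - pre (m x b) (Q (e # ys) w') - pre (m y b) (Q (e # ys) w'))
            + tsmult lam (pre (m x b + m y b) (Q ys w') - pre (m x b) (Q ys w') - pre (m y b) (Q ys w'))
            + tsmult kap (mfirst m (m x b + m y b) (Q ys w') - mfirst m (m x b) (Q ys w') - mfirst m (m y b) (Q ys w'))"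
            using Nil Cons ys False by (simp add: m_add_left tsmult_diff_right tsmult_add_right algebra_simps)
          also have "\<dots> \<in> KA"
            by (intro KA_add KA_tsmult pre_letter_add mfirst_letter_add)
          finally show ?thesis .
        qed
      qed
    next
      case (Cons a xs')
      note xs = this
      show ?thesis
      proof (cases "w' = []")
        case True
        then show ?thesis using xs \<open>w = b # w'\<close> addgen_KA[of "[]" "m a b # xs'" x y ys "[]", unfolded addgen_def]
          by simp
      next
        case False
        have IH1: "Q (xs' @ (x + y) # ys) (e # w') - Q (xs' @ x # ys) (e # w') - Q (xs' @ y # ys) (e # w') \<in> KA"
          using less[of xs' "e # w'"] xs \<open>w = b # w'\<close> by simp
        have IH2: "Q ((e # xs') @ (x + y) # ys) w' - Q ((e # xs') @ x # ys) w' - Q ((e # xs') @ y # ys) w' \<in> KA"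
          using less[of "e # xs'" w'] xs \<open>w = b # w'\<close> by simp
        have IH3: "Q (xs' @ (x + y) # ys) w' - Q (xs' @ x # ys) w' - Q (xs' @ y # ys) w' \<in> KA"
          using less[of xs' w'] xs \<open>w = b # w'\<close> by simp
        have "Q (xs @ (x + y) # ys) w - Q (xs @ x # ys) w - Q (xs @ y # ys) w =
            pre (m a b) (Q (xs' @ (x + y) # ys) (e # w') - Q (xs' @ x # ys) (e # w') - Q (xs' @ y # ys) (e # w'))
          + pre (m a b) (Q ((e # xs') @ (x + y) # ys) w' - Q ((e # xs') @ x # ys) w' - Q ((e # xs') @ y # ys) w')
          + tsmult lam (pre (m a b) (Q (xs' @ (x + y) # ys) w' - Q (xs' @ x # ys) w' - Q (xs' @ y # ys) w'))
          + tsmult kap (mfirst m (m a b) (Q (xs' @ (x + y) # ys) w' - Q (xs' @ x # ys) w' - Q (xs' @ y # ys) w'))"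
          using xs \<open>w = b # w'\<close> False by (simp add: pre_diff mfirst_diff pre_add mfirst_add tsmult_add_right tsmult_diff_right algebra_simps)
        also have "\<dots> \<in> KA"
          by (intro KA_add KA_tsmult pre_KA mfirst_KA IH1 IH2 IH3)
        finally show ?thesis .
      qed
    qed
  qed
qed

lemma Q_sca1: "Q (xs @ s c x # ys) w - tsmult c (Q (xs @ x # ys) w) \<in> KA"
proof (induction "length xs + length w" arbitrary: xs w rule: less_induct)
  case less
  show ?case
  proof (cases w)
    case Nil then show ?thesis by (simp add: KA_zero)
  next
    case (Cons b w')
    show ?thesis
    proof (cases xs)
      case Nil
      show ?thesis
      proof (cases "ys = []")
        case True
        then show ?thesis using Nil Cons scagen_KA[of "[]" "[]" c "m x b" w' "[]", unfolded scagen_def]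
          by (simp add: m_scale_left)
      next
        case ys: False
        show ?thesis
        proof (cases "w' = []")
          case True
          then show ?thesis using Nil Cons ys scagen_KA[of "[]" "[]" c "m x b" ys "[]", unfolded scagen_def]
            by (simp add: m_scale_left)
        next
          case False
          have "Q (xs @ s c x # ys) w - tsmult c (Q (xs @ x # ys) w) =
              (pre (s c (m x b)) (Q ys (e # w')) - tsmult c (pre (m x b) (Q ys (e # w'))))
            + (pre (s c (m x b)) (Q (e # ys) w') - tsmult c (pre (m x b) (Q (e # ys) w')))
            + tsmult lam (pre (s c (m x b)) (Q ys w') - tsmult c (pre (m x b) (Q ys w')))
            + tsmult kap (mfirst m (s c (m x b)) (Q ys w') - tsmult c (mfirst m (m x b) (Q ys w')))"
            using Nil Cons ys False by (simp add: m_scale_left tsmult_diff_right tsmult_add_right algebra_simps)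
          also have "\<dots> \<in> KA"
            by (intro KA_add KA_tsmult pre_letter_sca mfirst_letter_sca)
          finally show ?thesis .
        qed
      qed
    next
      case (Cons a xs')
      note xs = this
      show ?thesis
      proof (cases "w' = []")
        case True
        then show ?thesis using xs \<open>w = b # w'\<close> scagen_KA[of "[]" "m a b # xs'" c x ys "[]", unfolded scagen_def]
          by simp
      next
        case False
        have IH1: "Q (xs' @ s c x # ys) (e # w') - tsmult c (Q (xs' @ x # ys) (e # w')) \<in> KA"
          using less[of xs' "e # w'"] xs \<open>w = b # w'\<close> by simp
        have IH2: "Q ((e # xs') @ s c x # ys) w' - tsmult c (Q ((e # xs') @ x # ys) w') \<in> KA"
          using less[of "e # xs'" w'] xs \<open>w = b # w'\<close> by simp
        have IH3: "Q (xs' @ s c x # ys) w' - tsmult c (Q (xs' @ x # ys) w') \<in> KA"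
          using less[of xs' w'] xs \<open>w = b # w'\<close> by simp
        have "Q (xs @ s c x # ys) w - tsmult c (Q (xs @ x # ys) w) =
            pre (m a b) (Q (xs' @ s c x # ys) (e # w') - tsmult c (Q (xs' @ x # ys) (e # w')))
          + pre (m a b) (Q ((e # xs') @ s c x # ys) w' - tsmult c (Q ((e # xs') @ x # ys) w'))
          + tsmult lam (pre (m a b) (Q (xs' @ s c x # ys) w' - tsmult c (Q (xs' @ x # ys) w')))
          + tsmult kap (mfirst m (m a b) (Q (xs' @ s c x # ys) w' - tsmult c (Q (xs' @ x # ys) w')))"
          using xs \<open>w = b # w'\<close> False
          by (simp add: pre_diff mfirst_diff pre_add mfirst_add pre_tsmult mfirst_tsmult tsmult_diff_right tsmult_add_right algebra_simps)
        also have "\<dots> \<in> KA"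
          by (intro KA_add KA_tsmult pre_KA mfirst_KA IH1 IH2 IH3)
        finally show ?thesis .
      qed
    qed
  qed
qed

lemma W_mlw: "mlw (\<lambda>V. W V U)"
proof (rule mlwI)
  fix us xs x y ys vs
  show "W (us @ (xs @ (x + y) # ys) # vs) U - W (us @ (xs @ x # ys) # vs) U - W (us @ (xs @ y # ys) # vs) U \<in> KA"
  proof (cases "length U = Suc (length us + length vs)")
    case True
    then have lt: "length us < length U" by simp
    define U1 where "U1 = take (length us) U"
    define u where "u = U ! length us"
    define U2 where "U2 = drop (Suc (length us)) U"
    have U: "U = U1 @ u # U2" unfolding U1_def u_def U2_def by (rule id_take_nth_drop[OF lt])
    have l1: "length U1 = length us" using lt by (simp add: U1_def)
    have "W (us @ (xs @ (x + y) # ys) # vs) U - W (us @ (xs @ x # ys) # vs) U - W (us @ (xs @ y # ys) # vs) U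
      = tprod (W us U1) (tprod (Q (xs @ (x + y) # ys) u - Q (xs @ x # ys) u - Q (xs @ y # ys) u) (W vs U2))"
      unfolding U using l1 by (simp add: W_append tprod_diff_left tprod_diff_right)
    also have "\<dots> \<in> KA" by (intro tprod_KA_right tprod_KA_left Q_add1)
    finally show ?thesis .
  next
    case False
    then show ?thesis by (simp add: W_len KA_zero)
  qed
next
  fix us xs c x ys vs
  show "W (us @ (xs @ s c x # ys) # vs) U - tsmult c (W (us @ (xs @ x # ys) # vs) U) \<in> KA"
  proof (cases "length U = Suc (length us + length vs)")
    case True
    then have lt: "length us < length U" by simp
    define U1 where "U1 = take (length us) U"
    define u where "u = U ! length us"
    define U2 where "U2 = drop (Suc (length us)) U"
    have U: "U = U1 @ u # U2" unfolding U1_def u_def U2_def by (rule id_take_nth_drop[OF lt])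
    have l1: "length U1 = length us" using lt by (simp add: U1_def)
    have "W (us @ (xs @ s c x # ys) # vs) U - tsmult c (W (us @ (xs @ x # ys) # vs) U)
      = tprod (W us U1) (tprod (Q (xs @ s c x # ys) u - tsmult c (Q (xs @ x # ys) u)) (W vs U2))"
      unfolding U using l1 by (simp add: W_append tprod_diff_left tprod_diff_right tprod_tsmult_left tprod_tsmult_right)
    also have "\<dots> \<in> KA" by (intro tprod_KA_right tprod_KA_left Q_sca1)
    finally show ?thesis .
  next
    case False
    then show ?thesis by (simp add: W_len KA_zero)
  qed
qed

lemma dp_as_lin: "dp x y = lin (\<lambda>V. lin (\<lambda>U. W V U) y) x"
  by (simp add: dprod_def bilin_def)

lemma dp_KA_left: "g \<in> KA \<Longrightarrow> dp g y \<in> KA"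
  unfolding dp_as_lin by (rule lin_KA[OF mlw_lin[OF W_mlw]])

lemma dp_KA_right: "g \<in> KA \<Longrightarrow> dp y g \<in> KA"
  using dp_KA_left dp_comm by metis

lemma eqa_dp: "eqa x x' \<Longrightarrow> eqa y y' \<Longrightarrow> eqa (dp x y) (dp x' y')"
proof -
  assume a: "eqa x x'" "eqa y y'"
  have "dp x y - dp x' y' = dp (x - x') y + dp x' (y - y')"
    by (simp add: dp_diff_left dp_diff_right)
  also have "\<dots> \<in> KA" using a unfolding eqa_def by (intro KA_add dp_KA_left dp_KA_right)
  finally show ?thesis by (simp add: eqa_def)
qed

lemma W_nil: "[] \<in> set V \<Longrightarrow> W V U = 0"
proof (induction V arbitrary: U)
  case Nil then show ?case by simp
next
  case (Cons v V) then show ?case by (cases U) auto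
qed

lemma dp_K_left: "g \<in> kspan (tensor_rels s) \<Longrightarrow> dp g y \<in> KA"
  unfolding dp_as_lin
proof (rule kspan_lin)
  fix r assume "r \<in> tensor_rels s"
  then consider "r \<in> RA" | w where "r = wd w" "[] \<in> set w" unfolding tensor_rels_eq by blast
  then show "lin (\<lambda>V. lin (W V) y) r \<in> KA"
  proof cases
    case 1 then show ?thesis by (rule lin_KA[OF mlw_lin[OF W_mlw] kspan_gen])
  next
    case 2
    then have "W w = (\<lambda>_. 0)" by (intro ext) (simp add: W_nil)
    then show ?thesis using 2 by (simp add: KA_zero)
  qed
qed

lemma teq_dp_left: "teq s x x' \<Longrightarrow> eqa (dp x y) (dp x' y)"
  unfolding teq_def eqa_def using dp_K_left[of "x - x'" y] by (simp add: dp_diff_left)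
lemma teq_dp_right: "teq s y y' \<Longrightarrow> eqa (dp x y) (dp x y')"
  using teq_dp_left dp_comm by metis

abbreviation ew :: "'a list \<Rightarrow> 'k" where "ew \<equiv> epsw epsA mu"
abbreviation eps :: "('a,'k) tw \<Rightarrow> 'k" where "eps \<equiv> epse epsA mu"
abbreviation PB :: "('a,'k) tw \<Rightarrow> ('a,'k) tw" where "PB \<equiv> Pbar e epsA mu"
abbreviation Dwa :: "'a list \<Rightarrow> ('a,'k) tw" where "Dwa \<equiv> Dw m e lam kap mu DA epsA"
abbreviation Dea :: "('a,'k) tw \<Rightarrow> ('a,'k) tw" where "Dea \<equiv> De m e lam kap mu DA epsA"

lemma case1_zero: "length w \<noteq> 1 \<Longrightarrow> (case w of [v] \<Rightarrow> f v | _ \<Rightarrow> (0::'b::zero)) = 0"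
  by (auto split: list.split)
lemma case2_zero: "length w \<noteq> 2 \<Longrightarrow> (case w of [v, u] \<Rightarrow> f v u | _ \<Rightarrow> (0::'b::zero)) = 0"
  by (auto split: list.split)
lemma case3_zero: "length w \<noteq> 3 \<Longrightarrow> (case w of [v, u, t] \<Rightarrow> f v u t | _ \<Rightarrow> (0::'b::zero)) = 0"
  by (auto split: list.split)

lemma epsw_cons: "l \<noteq> [] \<Longrightarrow> ew (a # l) = epsA a * (- mu) * ew l"
  by (cases l) simp_all

lemma ew_add: "ew (xs @ (x + y) # ys) = ew (xs @ x # ys) + ew (xs @ y # ys)"
proof (induction xs)
  case Nil then show ?case by (cases ys) (simp_all add: epsA_add algebra_simps)
next
  case (Cons a xs) then show ?case by (simp add: epsw_cons algebra_simps)
qed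

lemma ew_sca: "ew (xs @ s c x # ys) = c * ew (xs @ x # ys)"
proof (induction xs)
  case Nil then show ?case by (cases ys) (simp_all add: epsA_scale algebra_simps)
next
  case (Cons a xs) then show ?case by (simp add: epsw_cons algebra_simps)
qed

definition PBw :: "'a list list \<Rightarrow> ('a,'k) tw" where
  "PBw w = (case w of [v, u] \<Rightarrow> tsmult (ew u) (wd [e # v, [e]]) + tsmult (mu * ew u) (wd [v, [e]]) + wd [v, e # u] | _ \<Rightarrow> 0)"

lemma PB_def': "PB x = lin PBw x"
  unfolding Pbar_def PBw_def[abs_def] by (rule refl)

lemma PBw2 [simp]: "PBw [v, u] = tsmult (ew u) (wd [e # v, [e]]) + tsmult (mu * ew u) (wd [v, [e]]) + wd [v, e # u]"
  by (simp add: PBw_def)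

lemma PBw_len: "length w \<noteq> 2 \<Longrightarrow> PBw w = 0"
  unfolding PBw_def by (rule case2_zero)

lemma PB_mlw: "mlw PBw"
proof (rule mlwI)
  fix us xs x y ys vs
  show "PBw (us @ (xs @ (x + y) # ys) # vs) - PBw (us @ (xs @ x # ys) # vs) - PBw (us @ (xs @ y # ys) # vs) \<in> KA"
  proof (cases "us = [] \<and> length vs = 1")
    case True
    then obtain u where uv: "us = []" "vs = [u]" by (cases vs) auto
    have "PBw (us @ (xs @ (x + y) # ys) # vs) - PBw (us @ (xs @ x # ys) # vs) - PBw (us @ (xs @ y # ys) # vs)
      = tsmult (ew u) (addgen [] (e # xs) x y ys [[e]]) + tsmult (mu * ew u) (addgen [] xs x y ys [[e]]) + addgen [] xs x y ys [e # u]"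
      unfolding uv by (simp add: addgen_def tsmult_diff_right tsmult_add_right algebra_simps)
    also have "\<dots> \<in> KA" by (intro KA_add KA_tsmult addgen_KA)
    finally show ?thesis .
  next
    case F1: False
    show ?thesis
    proof (cases "length us = 1 \<and> vs = []")
      case True
      then obtain v where uv: "us = [v]" "vs = []" by (cases us) auto
      have "PBw (us @ (xs @ (x + y) # ys) # vs) - PBw (us @ (xs @ x # ys) # vs) - PBw (us @ (xs @ y # ys) # vs)
        = addgen [v] (e # xs) x y ys []"
        unfolding uv by (simp add: addgen_def ew_add tsmult_add_left algebra_simps)
      also have "\<dots> \<in> KA" by (rule addgen_KA)
      finally show ?thesis .
    next
      case False
      then have "length (us @ (xs @ t # ys) # vs) \<noteq> 2" for t using F1 by (cases us) auto
      then show ?thesis by (simp add: PBw_len KA_zero)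
    qed
  qed
next
  fix us xs c x ys vs
  show "PBw (us @ (xs @ s c x # ys) # vs) - tsmult c (PBw (us @ (xs @ x # ys) # vs)) \<in> KA"
  proof (cases "us = [] \<and> length vs = 1")
    case True
    then obtain u where uv: "us = []" "vs = [u]" by (cases vs) auto
    have "PBw (us @ (xs @ s c x # ys) # vs) - tsmult c (PBw (us @ (xs @ x # ys) # vs))
      = tsmult (ew u) (scagen [] (e # xs) c x ys [[e]]) + tsmult (mu * ew u) (scagen [] xs c x ys [[e]]) + scagen [] xs c x ys [e # u]"
      unfolding uv by (simp add: scagen_def tsmult_diff_right tsmult_add_right algebra_simps)
    also have "\<dots> \<in> KA" by (intro KA_add KA_tsmult scagen_KA)
    finally show ?thesis .
  next
    case F1: False
    show ?thesis
    proof (cases "length us = 1 \<and> vs = []")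
      case True
      then obtain v where uv: "us = [v]" "vs = []" by (cases us) auto
      have "PBw (us @ (xs @ s c x # ys) # vs) - tsmult c (PBw (us @ (xs @ x # ys) # vs))
        = scagen [v] (e # xs) c x ys []"
        unfolding uv by (simp add: scagen_def ew_sca tsmult_add_right algebra_simps)
      also have "\<dots> \<in> KA" by (rule scagen_KA)
      finally show ?thesis .
    next
      case False
      then have "length (us @ (xs @ t # ys) # vs) \<noteq> 2" for t using F1 by (cases us) auto
      then show ?thesis by (simp add: PBw_len KA_zero)
    qed
  qed
qed

lemma PB_KA: "g \<in> KA \<Longrightarrow> PB g \<in> KA"
  unfolding PB_def' by (rule lin_KA[OF PB_mlw])
lemma eqa_PB: "eqa x y \<Longrightarrow> eqa (PB x) (PB y)"
  unfolding PB_def' by (rule lin_resp[OF PB_mlw])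

definition prj :: "('a,'k) tw \<Rightarrow> ('a,'k) tw" where
  "prj x = lin (\<lambda>w. if [] \<in> set w then 0 else wd w) x"

definition nz :: "('a,'k) tw \<Rightarrow> bool" where
  "nz x \<longleftrightarrow> (\<forall>w\<in>Poly_Mapping.keys x. [] \<notin> set w)"

lemma prj_K: "g \<in> kspan (tensor_rels s) \<Longrightarrow> prj g \<in> KA"
  unfolding prj_def
proof (rule kspan_lin)
  fix r assume "r \<in> tensor_rels s"
  then consider us xs x y ys vs where "r = addgen us xs x y ys vs"
    | us xs c x ys vs where "r = scagen us xs c x ys vs" | w where "r = wd w" "[] \<in> set w"
    unfolding tensor_rels_eq RA_def by blast
  then show "lin (\<lambda>w. if [] \<in> set w then 0 else wd w) r \<in> KA"
  proof cases
    case (1 us xs x y ys vs)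
    then show ?thesis
      by (cases "[] \<in> set us \<or> [] \<in> set vs") (auto simp: addgen_def lin_diff KA_zero addgen_KA[unfolded addgen_def])
  next
    case (2 us xs c x ys vs)
    then show ?thesis
      by (cases "[] \<in> set us \<or> [] \<in> set vs") (auto simp: scagen_def lin_diff lin_tsmult KA_zero scagen_KA[unfolded scagen_def])
  next
    case 3 then show ?thesis by (simp add: KA_zero)
  qed
qed

lemma prj_nz: "nz x \<Longrightarrow> prj x = x"
proof -
  assume "nz x"
  then have "prj x = lin wd x" unfolding prj_def nz_def by (intro lin_cong) simp
  then show ?thesis by (simp add: lin_wd_id)
qed

lemma teq_eqa: "teq s x y \<Longrightarrow> nz x \<Longrightarrow> nz y \<Longrightarrow> eqa x y"
proof -
  assume a: "teq s x y" "nz x" "nz y"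
  have "prj (x - y) \<in> KA" using a(1) unfolding teq_def by (rule prj_K)
  moreover have "prj (x - y) = x - y" using a(2,3) by (simp add: prj_def lin_diff prj_nz[unfolded prj_def])
  ultimately show ?thesis by (simp add: eqa_def)
qed

lemma nz_wd [simp]: "nz (wd w) \<longleftrightarrow> [] \<notin> set w"
  by (simp add: nz_def)
lemma nz_zero [simp]: "nz 0"
  by (simp add: nz_def)
lemma nz_add: "nz x \<Longrightarrow> nz y \<Longrightarrow> nz (x + y)"
  unfolding nz_def using keys_add[of x y] by blast
lemma nz_tsmult: "nz x \<Longrightarrow> nz (tsmult c x)"
  unfolding nz_def using keys_tsmult[of c x] by blast
lemma nz_lin: "(\<And>w. w \<in> Poly_Mapping.keys x \<Longrightarrow> nz (f w)) \<Longrightarrow> nz (lin f x)"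
  unfolding nz_def using keys_lin[of f x] by blast
lemma nz_tprod: "nz x \<Longrightarrow> nz y \<Longrightarrow> nz (tprod x y)"
  unfolding nz_def using keys_tprod[of x y] by fastforce
lemma nz_s1: "s1 x \<Longrightarrow> nz x"
  unfolding nz_def s1_def by fastforce

lemma nz_W: "nz (W V U)"
proof (induction V arbitrary: U)
  case Nil then show ?case by (cases U) simp_all
next
  case (Cons v V) then show ?case by (cases U) (simp_all add: nz_tprod nz_s1 Q_s1)
qed

lemma nz_dp: "nz (dp x y)"
  unfolding dp_as_lin by (intro nz_lin nz_W)

lemma nz_DA: "nz (DA x)"
  unfolding nz_def using DA_shape[of x] by fastforce

lemma DA_add': "eqa (DA (x + y)) (DA x + DA y)"
  by (rule teq_eqa[OF DA_add nz_DA nz_add[OF nz_DA nz_DA]])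
lemma DA_scale': "eqa (DA (s c x)) (tsmult c (DA x))"
  by (rule teq_eqa[OF DA_scale nz_DA nz_tsmult[OF nz_DA]])
lemma DA_mult': "eqa (DA (m x y)) (dp (DA x) (DA y))"
  by (rule teq_eqa[OF DA_mult nz_DA nz_dp])
lemma DA_unit': "eqa (DA e) (wd [[e], [e]])"
  by (rule teq_eqa[OF DA_unit nz_DA]) simp

subsection \<open>The comultiplication respects the relations\<close>

lemma Dw_cons2: "l \<noteq> [] \<Longrightarrow> Dwa (a # l) = dp (DA a) (PB (Dwa l))"
  by (cases l) simp_all

lemma Dw_add: "Dwa (xs @ (x + y) # ys) - Dwa (xs @ x # ys) - Dwa (xs @ y # ys) \<in> KA"
proof (induction xs)
  case Nil
  show ?case
  proof (cases "ys = []")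
    case True
    then show ?thesis using DA_add'[of x y] by (simp add: eqa_def diff_diff_eq)
  next
    case False
    have "Dwa ([] @ (x + y) # ys) - Dwa ([] @ x # ys) - Dwa ([] @ y # ys) = dp (DA (x + y) - (DA x + DA y)) (PB (Dwa ys))"
      using False by (simp add: Dw_cons2 dp_diff_left dp_add_left algebra_simps)
    also have "\<dots> \<in> KA" using DA_add'[of x y] unfolding eqa_def by (rule dp_KA_left)
    finally show ?thesis .
  qed
next
  case (Cons a xs)
  have "Dwa ((a # xs) @ (x + y) # ys) - Dwa ((a # xs) @ x # ys) - Dwa ((a # xs) @ y # ys)
    = dp (DA a) (PB (Dwa (xs @ (x + y) # ys) - Dwa (xs @ x # ys) - Dwa (xs @ y # ys)))"
    by (simp add: Dw_cons2 dp_diff_right Pbar_def lin_diff)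
  also have "\<dots> \<in> KA" by (intro dp_KA_right PB_KA Cons)
  finally show ?case .
qed

lemma Dw_sca: "Dwa (xs @ s c x # ys) - tsmult c (Dwa (xs @ x # ys)) \<in> KA"
proof (induction xs)
  case Nil
  show ?case
  proof (cases "ys = []")
    case True
    then show ?thesis using DA_scale'[of c x] by (simp add: eqa_def)
  next
    case False
    have "Dwa ([] @ s c x # ys) - tsmult c (Dwa ([] @ x # ys)) = dp (DA (s c x) - tsmult c (DA x)) (PB (Dwa ys))"
      using False by (simp add: Dw_cons2 dp_diff_left dp_tsmult_left)
    also have "\<dots> \<in> KA" using DA_scale'[of c x] unfolding eqa_def by (rule dp_KA_left)
    finally show ?thesis .
  qed
next
  case (Cons a xs)
  have "Dwa ((a # xs) @ s c x # ys) - tsmult c (Dwa ((a # xs) @ x # ys))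
    = dp (DA a) (PB (Dwa (xs @ s c x # ys) - tsmult c (Dwa (xs @ x # ys))))"
    by (simp add: Dw_cons2 dp_diff_right dp_tsmult_right Pbar_def lin_diff lin_tsmult)
  also have "\<dots> \<in> KA" by (intro dp_KA_right PB_KA Cons)
  finally show ?case .
qed

definition Dew :: "'a list list \<Rightarrow> ('a,'k) tw" where
  "Dew w = (case w of [v] \<Rightarrow> Dwa v | _ \<Rightarrow> 0)"

lemma De_def': "Dea x = lin Dew x"
  unfolding De_def Dew_def[abs_def] by (rule refl)

lemma Dew1 [simp]: "Dew [v] = Dwa v"
  by (simp add: Dew_def)

lemma De_mlw: "mlw Dew"
proof (rule mlwI)
  fix us xs x y ys vs
  show "Dew (us @ (xs @ (x + y) # ys) # vs) - Dew (us @ (xs @ x # ys) # vs) - Dew (us @ (xs @ y # ys) # vs) \<in> KA"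
  proof (cases "us = [] \<and> vs = []")
    case True then show ?thesis using Dw_add by simp
  next
    case False then show ?thesis unfolding Dew_def by (simp add: case1_zero KA_zero)
  qed
next
  fix us xs c x ys vs
  show "Dew (us @ (xs @ s c x # ys) # vs) - tsmult c (Dew (us @ (xs @ x # ys) # vs)) \<in> KA"
  proof (cases "us = [] \<and> vs = []")
    case True then show ?thesis using Dw_sca by simp
  next
    case False then show ?thesis unfolding Dew_def by (simp add: case1_zero KA_zero)
  qed
qed

lemma De_KA: "g \<in> KA \<Longrightarrow> Dea g \<in> KA"
  unfolding De_def' by (rule lin_KA[OF De_mlw])
lemma eqa_De: "eqa x y \<Longrightarrow> eqa (Dea x) (Dea y)"
  unfolding De_def' by (rule lin_resp[OF De_mlw])

lemma De_K: "g \<in> kspan (tensor_rels s) \<Longrightarrow> Dea g \<in> KA"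
  unfolding De_def'
proof (rule kspan_lin)
  fix r assume "r \<in> tensor_rels s"
  then consider "r \<in> RA" | w where "r = wd w" "[] \<in> set w" unfolding tensor_rels_eq by blast
  then show "lin Dew r \<in> KA"
  proof cases
    case 1 then show ?thesis by (rule lin_KA[OF De_mlw kspan_gen])
  next
    case 2
    then have "Dew w = 0" unfolding Dew_def by (cases w rule: remdups_adj.cases) auto
    then show ?thesis using 2 by (simp add: KA_zero)
  qed
qed

lemma teq_De: "teq s x y \<Longrightarrow> eqa (Dea x) (Dea y)"
  unfolding teq_def eqa_def using De_K[of "x - y"] by (simp add: De_def' lin_diff)

lemma eps_K: "g \<in> kspan (tensor_rels s) \<Longrightarrow> eps g = 0"
  unfolding epse_def
proof (rule linf_kspan)
  fix r assume "r \<in> tensor_rels s"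
  then consider us xs x y ys vs where "r = addgen us xs x y ys vs"
    | us xs c x ys vs where "r = scagen us xs c x ys vs" | w where "r = wd w" "[] \<in> set w"
    unfolding tensor_rels_eq RA_def by blast
  then show "linf (\<lambda>w. case w of [v] \<Rightarrow> ew v | _ \<Rightarrow> 0) r = 0"
  proof cases
    case (1 us xs x y ys vs)
    then show ?thesis
      by (cases "us = [] \<and> vs = []") (auto simp: addgen_def linf_diff ew_add case1_zero)
  next
    case (2 us xs c x ys vs)
    then show ?thesis
      by (cases "us = [] \<and> vs = []") (auto simp: scagen_def linf_diff linf_tsmult ew_sca case1_zero)
  next
    case 3 then show ?thesis by (cases w rule: remdups_adj.cases) auto
  qed
qed

lemma teq_eps: "teq s x y \<Longrightarrow> eps x = eps y"
  unfolding teq_def using eps_K[of "x - y"] by (simp add: epse_def linf_diff)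

end


lemma lin_ext1:
  fixes F G :: "('w \<Rightarrow>\<^sub>0 'k::comm_ring_1) \<Rightarrow> ('v \<Rightarrow>\<^sub>0 'k)"
  assumes "\<And>x y. F (x + y) = F x + F y" "\<And>c x. F (tsmult c x) = tsmult c (F x)"
    "\<And>x y. G (x + y) = G x + G y" "\<And>c x. G (tsmult c x) = tsmult c (G x)"
    "\<And>w. w \<in> Poly_Mapping.keys x \<Longrightarrow> F (wd w) = G (wd w)"
  shows "F x = G x"
proof -
  have "F x = lin (\<lambda>w. F (wd w)) x" by (rule lin_eq_linear) (simp_all add: assms)
  also have "\<dots> = lin (\<lambda>w. G (wd w)) x" by (rule lin_cong) (simp add: assms)
  also have "\<dots> = G x" by (rule lin_eq_linear[symmetric]) (simp_all add: assms)
  finally show ?thesis .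
qed

lemma tmap2_wd [simp]: "tmap2 f g (wd [v, u]) = tprod (f v) (g u)"
  by (simp add: tmap2_def)
lemma tmap2_add: "tmap2 f g (x + y) = tmap2 f g x + tmap2 f g y"
  by (simp add: tmap2_def lin_add)
lemma tmap2_tsmult: "tmap2 f g (tsmult c x) = tsmult c (tmap2 f g x)"
  by (simp add: tmap2_def lin_tsmult)
lemma tmap2_diff: "tmap2 f g (x - y) = tmap2 f g x - tmap2 f g y"
  by (simp add: tmap2_def lin_diff)
lemma tmap2_zero [simp]: "tmap2 f g 0 = 0"
  by (simp add: tmap2_def)
lemma tmap2_lin: "tmap2 f g (lin h x) = lin (\<lambda>w. tmap2 f g (h w)) x"
  by (simp add: tmap2_def lin_lin)

definition sk :: "nat \<Rightarrow> ('a,'k::comm_ring_1) tw \<Rightarrow> bool" where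
  "sk k x \<longleftrightarrow> (\<forall>w\<in>Poly_Mapping.keys x. length w = k)"

lemma sk_keys: "sk k x \<Longrightarrow> w \<in> Poly_Mapping.keys x \<Longrightarrow> length w = k"
  by (simp add: sk_def)
lemma s1_sk: "s1 x \<Longrightarrow> sk 1 x"
  unfolding s1_def sk_def by fastforce

lemma tmap2_tprod:
  assumes "sk 1 A" "sk 1 B"
  shows "tmap2 f g (tprod A B) = tprod (lin (\<lambda>w. f (hd w)) A) (lin (\<lambda>w. g (hd w)) B)"
proof -
  have "tmap2 f g (tprod A B) = lin (\<lambda>a. tmap2 f g (tprod (wd a) B)) A"
    by (subst tprod_expand_left) (simp add: tmap2_lin)
  also have "\<dots> = lin (\<lambda>a. tprod (f (hd a)) (lin (\<lambda>w. g (hd w)) B)) A"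
  proof (rule lin_cong)
    fix a assume a: "a \<in> Poly_Mapping.keys A"
    have "tmap2 f g (tprod (wd a) B) = lin (\<lambda>b. tmap2 f g (tprod (wd a) (wd b))) B"
      by (subst tprod_expand_right) (simp add: tmap2_lin)
    also have "\<dots> = lin (\<lambda>b. tprod (f (hd a)) (g (hd b))) B"
    proof (rule lin_cong)
      fix b assume b: "b \<in> Poly_Mapping.keys B"
      obtain p where "a = [p]" using sk_keys[OF assms(1) a] by (cases a rule: remdups_adj.cases) auto
      moreover obtain q where "b = [q]" using sk_keys[OF assms(2) b] by (cases b rule: remdups_adj.cases) auto
      ultimately show "tmap2 f g (tprod (wd a) (wd b)) = tprod (f (hd a)) (g (hd b))" by simp
    qed
    also have "\<dots> = tprod (f (hd a)) (lin (\<lambda>w. g (hd w)) B)"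
      by (simp add: tprod_lin_right)
    finally show "tmap2 f g (tprod (wd a) B) = tprod (f (hd a)) (lin (\<lambda>w. g (hd w)) B)" .
  qed
  also have "\<dots> = tprod (lin (\<lambda>w. f (hd w)) A) (lin (\<lambda>w. g (hd w)) B)"
    by (simp add: tprod_lin_left)
  finally show ?thesis .
qed

context qsl
begin

lemma dp_tprod:
  assumes A: "sk k A" and A': "sk k A'"
  shows "dp (tprod A B) (tprod A' B') = tprod (dp A A') (dp B B')"
proof (rule lin_ext1[where F = "\<lambda>A. dp (tprod A B) (tprod A' B')" and G = "\<lambda>A. tprod (dp A A') (dp B B')"])
  fix a assume a: "a \<in> Poly_Mapping.keys A"
  show "dp (tprod (wd a) B) (tprod A' B') = tprod (dp (wd a) A') (dp B B')"
  proof (rule lin_ext1[where F = "\<lambda>A'. dp (tprod (wd a) B) (tprod A' B')" and G = "\<lambda>A'. tprod (dp (wd a) A') (dp B B')"])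
    fix a' assume a': "a' \<in> Poly_Mapping.keys A'"
    have la: "length a = length a'" using sk_keys[OF A a] sk_keys[OF A' a'] by simp
    show "dp (tprod (wd a) B) (tprod (wd a') B') = tprod (dp (wd a) (wd a')) (dp B B')"
    proof (rule lin_ext1[where F = "\<lambda>B. dp (tprod (wd a) B) (tprod (wd a') B')" and G = "\<lambda>B. tprod (dp (wd a) (wd a')) (dp B B')"])
      fix b
      show "dp (tprod (wd a) (wd b)) (tprod (wd a') B') = tprod (dp (wd a) (wd a')) (dp (wd b) B')"
      proof (rule lin_ext1[where F = "\<lambda>B'. dp (tprod (wd a) (wd b)) (tprod (wd a') B')" and G = "\<lambda>B'. tprod (dp (wd a) (wd a')) (dp (wd b) B')"])
        fix b'
        show "dp (tprod (wd a) (wd b)) (tprod (wd a') (wd b')) = tprod (dp (wd a) (wd a')) (dp (wd b) (wd b'))"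
          using la by (simp add: W_append)
      qed (simp_all add: tprod_add_left tprod_add_right tprod_tsmult_left tprod_tsmult_right dp_lin_simps)
    qed (simp_all add: tprod_add_left tprod_add_right tprod_tsmult_left tprod_tsmult_right dp_lin_simps)
  qed (simp_all add: tprod_add_left tprod_add_right tprod_tsmult_left tprod_tsmult_right dp_lin_simps)
qed (simp_all add: tprod_add_left tprod_add_right tprod_tsmult_left tprod_tsmult_right dp_lin_simps)

definition s2 :: "('a,'k) tw \<Rightarrow> bool" where
  "s2 x \<longleftrightarrow> (\<forall>w\<in>Poly_Mapping.keys x. \<exists>p q. w = [p, q] \<and> p \<noteq> [] \<and> q \<noteq> [])"

lemma s2_keys: "s2 x \<Longrightarrow> w \<in> Poly_Mapping.keys x \<Longrightarrow> \<exists>p q. w = [p, q] \<and> p \<noteq> [] \<and> q \<noteq> []"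
  by (simp add: s2_def)
lemma s2_wd [simp]: "s2 (wd [p, q]) \<longleftrightarrow> p \<noteq> [] \<and> q \<noteq> []"
  by (simp add: s2_def)
lemma s2_zero [simp]: "s2 0"
  by (simp add: s2_def)
lemma s2_sub: "s2 x \<Longrightarrow> Poly_Mapping.keys y \<subseteq> Poly_Mapping.keys x \<Longrightarrow> s2 y"
  unfolding s2_def by (meson subsetD)
lemma s2_sub2: "s2 x \<Longrightarrow> s2 y \<Longrightarrow> Poly_Mapping.keys z \<subseteq> Poly_Mapping.keys x \<union> Poly_Mapping.keys y \<Longrightarrow> s2 z"
  unfolding s2_def by (meson subsetD Un_iff)
lemma s2_add: "s2 x \<Longrightarrow> s2 y \<Longrightarrow> s2 (x + y)"
  by (rule s2_sub2[OF _ _ keys_add])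
lemma s2_diff: "s2 x \<Longrightarrow> s2 y \<Longrightarrow> s2 (x - y)"
  by (rule s2_sub2[OF _ _ keys_diff])
lemma s2_tsmult: "s2 x \<Longrightarrow> s2 (tsmult c x)"
  by (rule s2_sub[OF _ keys_tsmult])
lemma s2_lin: "(\<And>w. w \<in> Poly_Mapping.keys x \<Longrightarrow> s2 (f w)) \<Longrightarrow> s2 (lin f x)"
proof -
  assume a: "\<And>w. w \<in> Poly_Mapping.keys x \<Longrightarrow> s2 (f w)"
  show ?thesis unfolding s2_def
  proof
    fix z assume "z \<in> Poly_Mapping.keys (lin f x)"
    then obtain w where "w \<in> Poly_Mapping.keys x" "z \<in> Poly_Mapping.keys (f w)" using keys_lin[of f x] by blast
    then show "\<exists>p q. z = [p, q] \<and> p \<noteq> [] \<and> q \<noteq> []" using a s2_keys by blast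
  qed
qed
lemma s2_sk: "s2 x \<Longrightarrow> sk 2 x"
  unfolding sk_def using s2_keys by fastforce
lemma s2_tprod: "s1 A \<Longrightarrow> s1 B \<Longrightarrow> s2 (tprod A B)"
proof -
  assume A: "s1 A" and B: "s1 B"
  show ?thesis unfolding s2_def
  proof
    fix z assume "z \<in> Poly_Mapping.keys (tprod A B)"
    then obtain v w where z: "z = v @ w" "v \<in> Poly_Mapping.keys A" "w \<in> Poly_Mapping.keys B"
      using keys_tprod[of A B] by blast
    obtain p where "v = [p]" "p \<noteq> []" using s1_keys[OF A z(2)] by blast
    moreover obtain q where "w = [q]" "q \<noteq> []" using s1_keys[OF B z(3)] by blast
    ultimately show "\<exists>p q. z = [p, q] \<and> p \<noteq> [] \<and> q \<noteq> []" using z(1) by simp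
  qed
qed

lemma s2_expand:
  assumes "s2 x"
  shows "x = lin (\<lambda>w. tprod (wd [hd w]) (wd [hd (tl w)])) x"
proof -
  have "x = lin wd x" by (simp add: lin_wd_id)
  also have "\<dots> = lin (\<lambda>w. tprod (wd [hd w]) (wd [hd (tl w)])) x"
    by (rule lin_cong) (use s2_keys[OF assms] in force)
  finally show ?thesis .
qed

lemma W2: "W [p1, q1] [p2, q2] = tprod (Q p1 p2) (Q q1 q2)"
  by simp

lemma dp_s2: "s2 x \<Longrightarrow> s2 y \<Longrightarrow> s2 (dp x y)"
proof -
  assume x: "s2 x" and y: "s2 y"
  show ?thesis
    apply (subst dp_expand_left)
    apply (rule s2_lin)
    apply (subst dp_expand_right)
    apply (rule s2_lin)
    subgoal for w u
      using s2_keys[OF x, of w] s2_keys[OF y, of u] by (auto simp: s2_tprod Q_s1)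
    done
qed

lemma Q_sk: "sk 1 (Q v w)"
  by (rule s1_sk[OF Q_s1])

lemma dp_assoc2:
  assumes "s2 x" "s2 y" "s2 z"
  shows "dp (dp x y) z = dp x (dp y z)"
proof -
  have "assoc3 x y z"
  proof (rule assoc3_ext)
    fix v w u assume v: "v \<in> Poly_Mapping.keys x" and w: "w \<in> Poly_Mapping.keys y" and u: "u \<in> Poly_Mapping.keys z"
    obtain p1 q1 where 1: "v = [p1, q1]" "p1 \<noteq> []" "q1 \<noteq> []" using s2_keys[OF assms(1) v] by blast
    obtain p2 q2 where 2: "w = [p2, q2]" "p2 \<noteq> []" "q2 \<noteq> []" using s2_keys[OF assms(2) w] by blast
    obtain p3 q3 where 3: "u = [p3, q3]" "p3 \<noteq> []" "q3 \<noteq> []" using s2_keys[OF assms(3) u] by blast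
    have t: "wd [p, q] = tprod (wd [p]) (wd [q])" for p q :: "'a list" by simp
    have sk1: "sk 1 (wd [p] :: ('a,'k) tw)" for p by (simp add: sk_def)
    have "dp (dp (wd v) (wd w)) (wd u) = tprod (dp (Q p1 p2) (wd [p3])) (dp (Q q1 q2) (wd [q3]))"
      unfolding 1 2 3 W2 dp_wd by (subst t[of p3 q3], rule dp_tprod[OF Q_sk sk1])
    also have "\<dots> = tprod (dp (wd [p1]) (Q p2 p3)) (dp (wd [q1]) (Q q2 q3))"
      using dp_assoc[of "wd [p1]" "wd [p2]" "wd [p3]"] dp_assoc[of "wd [q1]" "wd [q2]" "wd [q3]"] 1 2 3 by simp
    also have "\<dots> = dp (wd v) (dp (wd w) (wd u))"
      unfolding 1 2 3 W2 dp_wd by (subst t[of p1 q1], rule dp_tprod[OF sk1 Q_sk, symmetric])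
    finally show "assoc3 (wd v) (wd w) (wd u)" by (simp add: assoc3_def)
  qed
  then show ?thesis by (simp add: assoc3_def)
qed

lemma dp_swap2:
  assumes "s2 a" "s2 b" "s2 c" "s2 d"
  shows "dp (dp a b) (dp c d) = dp (dp a c) (dp b d)"
proof -
  have "dp (dp a b) (dp c d) = dp a (dp b (dp c d))"
    by (rule dp_assoc2[OF assms(1,2) dp_s2[OF assms(3,4)]])
  also have "dp b (dp c d) = dp (dp b c) d"
    by (rule dp_assoc2[OF assms(2,3,4), symmetric])
  also have "dp b c = dp c b" by (rule dp_comm)
  also have "dp (dp c b) d = dp c (dp b d)"
    by (rule dp_assoc2[OF assms(3,2,4)])
  also have "dp a (dp c (dp b d)) = dp (dp a c) (dp b d)"
    by (rule dp_assoc2[OF assms(1,3) dp_s2[OF assms(2,4)], symmetric])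
  finally show ?thesis .
qed

abbreviation one2 :: "('a,'k) tw" where "one2 \<equiv> wd [[e], [e]]"

lemma dp_one2: "s2 y \<Longrightarrow> dp one2 y = y"
proof -
  assume y: "s2 y"
  have "dp one2 y = lin wd y"
    apply (subst dp_expand_right)
    apply (rule lin_cong)
    subgoal for w using s2_keys[OF y, of w] by (auto simp: m_unit neq_Nil_conv)
    done
  then show ?thesis by (simp add: lin_wd_id)
qed

end


context shb
begin

lemma kap_eq: "kap = lam * mu - mu * mu"
  using root by (simp add: power2_eq_square algebra_simps eq_neg_iff_add_eq_0)

declare eqa_trans[trans] eq_eqa_trans[trans] eqa_eq_trans[trans]

lemma tsmult_kap: "tsmult kap X = tsmult (lam * mu - mu * mu) X"
  by (simp add: kap_eq[symmetric])

lemma eps_wd1 [simp]: "eps (wd [v]) = ew v"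
  by (simp add: epse_def)
lemma eps_add: "eps (x + y) = eps x + eps y"
  by (simp add: epse_def linf_add)
lemma eps_diff: "eps (x - y) = eps x - eps y"
  by (simp add: epse_def linf_diff)
lemma eps_tsmult: "eps (tsmult c x) = c * eps x"
  by (simp add: epse_def linf_tsmult)
lemma eps_zero [simp]: "eps 0 = 0"
  by (simp add: epse_def)
lemma eps_lin: "eps (lin f x) = linf (\<lambda>w. eps (f w)) x"
  by (simp add: epse_def linf_lin)
lemma eps_expand: "eps x = linf (\<lambda>w. eps (wd w)) x"
  unfolding epse_def by (rule linf_cong) simp

lemma eps_pre: "s1 X \<Longrightarrow> eps (pre c X) = epsA c * (- mu) * eps X"
proof -
  assume X: "s1 X"
  have "eps (pre c X) = linf (\<lambda>w. eps (pre c (wd w))) X"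
    by (subst pre_expand) (simp add: eps_lin)
  also have "\<dots> = linf (\<lambda>w. epsA c * (- mu) * eps (wd w)) X"
  proof (rule linf_cong)
    fix w assume "w \<in> Poly_Mapping.keys X"
    then obtain v where "w = [v]" "v \<noteq> []" using s1_keys[OF X] by blast
    then show "eps (pre c (wd w)) = epsA c * (- mu) * eps (wd w)" by (simp add: epsw_cons)
  qed
  also have "\<dots> = epsA c * (- mu) * linf (\<lambda>w. eps (wd w)) X" by (rule linf_fun_mult)
  also have "\<dots> = epsA c * (- mu) * eps X" by (simp only: eps_expand[of X, symmetric])
  finally show ?thesis .
qed

lemma eps_mf: "s1 X \<Longrightarrow> eps (mf c X) = epsA c * eps X"
proof -
  assume X: "s1 X"
  have "eps (mf c X) = linf (\<lambda>w. eps (mf c (wd w))) X"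
    by (subst mfirst_expand) (simp add: eps_lin)
  also have "\<dots> = linf (\<lambda>w. epsA c * eps (wd w)) X"
  proof (rule linf_cong)
    fix w assume "w \<in> Poly_Mapping.keys X"
    then obtain b v where "w = [b # v]" using s1_keys[OF X] by (metis neq_Nil_conv)
    then show "eps (mf c (wd w)) = epsA c * eps (wd w)"
      by (cases v) (simp_all add: epsA_mult)
  qed
  also have "\<dots> = epsA c * linf (\<lambda>w. eps (wd w)) X" by (rule linf_fun_mult)
  also have "\<dots> = epsA c * eps X" by (simp only: eps_expand[of X, symmetric])
  finally show ?thesis .
qed

lemma eps_Q: "v \<noteq> [] \<Longrightarrow> w \<noteq> [] \<Longrightarrow> eps (Q v w) = ew v * ew w"
proof (induction "length v + length w" arbitrary: v w rule: less_induct)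
  case less
  obtain a v' where v: "v = a # v'" using less(2) by (cases v) auto
  obtain b w' where w: "w = b # w'" using less(3) by (cases w) auto
  show ?case
  proof (cases "v' = []")
    case True
    then show ?thesis using v w by (cases w') (simp_all add: epsA_mult)
  next
    case v': False
    show ?thesis
    proof (cases "w' = []")
      case True
      then show ?thesis using v w v' by (simp add: epsA_mult epsw_cons)
    next
      case False
      have i1: "eps (Q v' (e # w')) = ew v' * ew (e # w')" using less(1)[of v' "e # w'"] v w v' by simp
      have i2: "eps (Q (e # v') w') = ew (e # v') * ew w'" using less(1)[of "e # v'" w'] v w False by simp
      have i3: "eps (Q v' w') = ew v' * ew w'" using less(1)[of v' w'] v w v' False by simp
      have "eps (Q v w) = epsA a * epsA b * (- mu) * (eps (Q v' (e # w')) + eps (Q (e # v') w') + lam * eps (Q v' w'))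
          + kap * (epsA a * epsA b * eps (Q v' w'))"
        using v w v' False by (simp add: eps_add eps_tsmult eps_pre eps_mf Q_s1 epsA_mult algebra_simps)
      also have "\<dots> = ew v * ew w"
        using v w v' False i1 i2 i3 by (simp add: epsw_cons epsA_unit kap_eq algebra_simps)
      finally show ?thesis .
    qed
  qed
qed

lemma eps_dp: "s1 x \<Longrightarrow> s1 y \<Longrightarrow> eps (dp x y) = eps x * eps y"
proof -
  assume x: "s1 x" and y: "s1 y"
  have "eps (dp x y) = linf (\<lambda>w. linf (\<lambda>u. eps (Q (hd w) (hd u))) y) x"
    by (simp add: dp_s1_expand[OF x y] eps_lin)
  also have "\<dots> = linf (\<lambda>w. linf (\<lambda>u. eps (wd w) * eps (wd u)) y) x"
    apply (rule linf_cong)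
    apply (rule linf_cong)
    subgoal for w u using s1_keys[OF x, of w] s1_keys[OF y, of u] by (auto simp: eps_Q)
    done
  also have "\<dots> = linf (\<lambda>w. eps y * eps (wd w)) x"
  proof (rule linf_cong)
    fix w
    have "linf (\<lambda>u. eps (wd w) * eps (wd u)) y = eps (wd w) * linf (\<lambda>u. eps (wd u)) y" by (rule linf_fun_mult)
    also have "\<dots> = eps (wd w) * eps y" by (simp only: eps_expand[of y, symmetric])
    finally show "linf (\<lambda>u. eps (wd w) * eps (wd u)) y = eps y * eps (wd w)" by (simp add: mult.commute)
  qed
  also have "\<dots> = eps y * linf (\<lambda>w. eps (wd w)) x" by (rule linf_fun_mult)
  also have "\<dots> = eps x * eps y" by (simp only: eps_expand[of x, symmetric] mult.commute)
  finally show ?thesis .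
qed

lemma eps_one [simp]: "eps one = 1"
  by (simp add: epsA_unit)

lemma dp_tprod1: "s1 X \<Longrightarrow> s1 X' \<Longrightarrow> dp (tprod X Y) (tprod X' Y') = tprod (dp X X') (dp Y Y')"
  by (rule dp_tprod[OF s1_sk s1_sk])

lemma PB_tprod:
  assumes "s1 A" "s1 B"
  shows "PB (tprod A B) = tsmult (eps B) (tprod (P A) one) + tsmult (mu * eps B) (tprod A one) + tprod A (P B)"
proof (rule lin_ext1[where F = "\<lambda>A. PB (tprod A B)" and
      G = "\<lambda>A. tsmult (eps B) (tprod (P A) one) + tsmult (mu * eps B) (tprod A one) + tprod A (P B)"])
  fix a assume a: "a \<in> Poly_Mapping.keys A"
  obtain p where p: "a = [p]" "p \<noteq> []" using s1_keys[OF assms(1) a] by blast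
  show "PB (tprod (wd a) B) = tsmult (eps B) (tprod (P (wd a)) one) + tsmult (mu * eps B) (tprod (wd a) one) + tprod (wd a) (P B)"
  proof (rule lin_ext1[where F = "\<lambda>B. PB (tprod (wd a) B)" and
      G = "\<lambda>B. tsmult (eps B) (tprod (P (wd a)) one) + tsmult (mu * eps B) (tprod (wd a) one) + tprod (wd a) (P B)"])
    fix b assume b: "b \<in> Poly_Mapping.keys B"
    obtain q where q: "b = [q]" "q \<noteq> []" using s1_keys[OF assms(2) b] by blast
    show "PB (tprod (wd a) (wd b)) = tsmult (eps (wd b)) (tprod (P (wd a)) one) + tsmult (mu * eps (wd b)) (tprod (wd a) one) + tprod (wd a) (P (wd b))"
      using p q by (simp add: PB_def')
  qed (simp_all add: PB_def' lin_add lin_tsmult tprod_add_right tprod_tsmult_right pre_add pre_tsmult eps_add eps_tsmult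
      tsmult_add_left tsmult_add_right algebra_simps)
qed (simp_all add: PB_def' lin_add lin_tsmult tprod_add_left tprod_tsmult_left pre_add pre_tsmult
      tsmult_add_right algebra_simps)

lemma PB_erb_tprod:
  assumes A: "s1 A" and B: "s1 B" and C: "s1 C" and D: "s1 D"
  shows "dp (PB (tprod A B)) (PB (tprod C D)) = PB (dp (tprod A B) (PB (tprod C D))) + PB (dp (PB (tprod A B)) (tprod C D))
    + tsmult lam (PB (dp (tprod A B) (tprod C D))) + tsmult kap (dp (tprod A B) (tprod C D))"
proof -
  have so: "s1 one" by simp
  note ss = A B C D so pre_s1 dp_s1 s1_add s1_tsmult
  note rules = PB_tprod dp_tprod1 erb dp_one_left dp_one_right eps_pre eps_dp eps_one
    dp_lin_simps tprod_add_left tprod_add_right tprod_tsmult_left tprod_tsmult_right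
    PB_def'[symmetric] pre_add pre_tsmult eps_add eps_tsmult tsmult_add_right
  have PBlin: "PB (x + y) = PB x + PB y" "PB (tsmult c x) = tsmult c (PB x)" for x y c
    by (simp_all add: PB_def' lin_add lin_tsmult)
  show ?thesis
    apply (simp add: ss PB_tprod dp_tprod1 erb dp_one_left dp_one_right eps_pre eps_dp
      dp_lin_simps tprod_add_left tprod_add_right tprod_tsmult_left tprod_tsmult_right
      PBlin pre_add pre_tsmult eps_add eps_tsmult tsmult_add_right m_unit epsA_unit tsmult_kap)
    apply (rule poly_mapping_eqI)
    apply (simp add: lookup_add algebra_simps)
    done
qed

lemma PB_lin: "PB (x + y) = PB x + PB y" "PB (tsmult c x) = tsmult c (PB x)" "PB (x - y) = PB x - PB y"
  by (simp_all add: PB_def' lin_add lin_tsmult lin_diff)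

lemma PB_erb:
  assumes "s2 X" "s2 Y"
  shows "dp (PB X) (PB Y) = PB (dp X (PB Y)) + PB (dp (PB X) Y) + tsmult lam (PB (dp X Y)) + tsmult kap (dp X Y)"
proof (rule bilin_ext[where F = "\<lambda>X Y. dp (PB X) (PB Y)" and
      G = "\<lambda>X Y. PB (dp X (PB Y)) + PB (dp (PB X) Y) + tsmult lam (PB (dp X Y)) + tsmult kap (dp X Y)"])
  fix v w assume v: "v \<in> Poly_Mapping.keys X" and w: "w \<in> Poly_Mapping.keys Y"
  obtain p q where 1: "v = [p, q]" "p \<noteq> []" "q \<noteq> []" using s2_keys[OF assms(1) v] by blast
  obtain p' q' where 2: "w = [p', q']" "p' \<noteq> []" "q' \<noteq> []" using s2_keys[OF assms(2) w] by blast
  have t: "wd [a, b] = tprod (wd [a]) (wd [b])" for a b :: "'a list" by simp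
  show "dp (PB (wd v)) (PB (wd w)) = PB (dp (wd v) (PB (wd w))) + PB (dp (PB (wd v)) (wd w)) +
      tsmult lam (PB (dp (wd v) (wd w))) + tsmult kap (dp (wd v) (wd w))"
    unfolding 1 2 t by (rule PB_erb_tprod) (use 1 2 in simp_all)
qed (simp_all add: dp_lin_simps PB_lin tsmult_add_right ac_simps)

lemma lin_ext1_eqa:
  assumes "\<And>x y. F (x + y) = F x + F y" "\<And>c x. F (tsmult c x) = tsmult c (F x)"
    "\<And>x y. G (x + y) = G x + G y" "\<And>c x. G (tsmult c x) = tsmult c (G x)"
    "\<And>w. w \<in> Poly_Mapping.keys x \<Longrightarrow> eqa (F (wd w)) (G (wd w))"
  shows "eqa (F x) (G x)"
proof -
  have "F x = lin (\<lambda>w. F (wd w)) x" by (rule lin_eq_linear) (simp_all add: assms)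
  moreover have "G x = lin (\<lambda>w. G (wd w)) x" by (rule lin_eq_linear) (simp_all add: assms)
  moreover have "eqa (lin (\<lambda>w. F (wd w)) x) (lin (\<lambda>w. G (wd w)) x)" by (rule eqa_lin_cong) (simp add: assms)
  ultimately show ?thesis by simp
qed

lemma bilin_ext_eqa:
  assumes F1: "\<And>x x' y. F (x + x') y = F x y + F x' y" and F2: "\<And>c x y. F (tsmult c x) y = tsmult c (F x y)"
    and F3: "\<And>x y y'. F x (y + y') = F x y + F x y'" and F4: "\<And>c x y. F x (tsmult c y) = tsmult c (F x y)"
    and G1: "\<And>x x' y. G (x + x') y = G x y + G x' y" and G2: "\<And>c x y. G (tsmult c x) y = tsmult c (G x y)"
    and G3: "\<And>x y y'. G x (y + y') = G x y + G x y'" and G4: "\<And>c x y. G x (tsmult c y) = tsmult c (G x y)"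
    and eq: "\<And>v w. v \<in> Poly_Mapping.keys x \<Longrightarrow> w \<in> Poly_Mapping.keys y \<Longrightarrow> eqa (F (wd v) (wd w)) (G (wd v) (wd w))"
  shows "eqa (F x y) (G x y)"
proof (rule lin_ext1_eqa[where F = "\<lambda>x. F x y" and G = "\<lambda>x. G x y"])
  fix v assume v: "v \<in> Poly_Mapping.keys x"
  show "eqa (F (wd v) y) (G (wd v) y)"
    by (rule lin_ext1_eqa[where F = "\<lambda>y. F (wd v) y" and G = "\<lambda>y. G (wd v) y"]) (simp_all add: F3 F4 G3 G4 eq v)
qed (simp_all add: F1 F2 G1 G2)

lemma De_lin: "Dea (x + y) = Dea x + Dea y" "Dea (tsmult c x) = tsmult c (Dea x)" "Dea (x - y) = Dea x - Dea y"
  "Dea 0 = 0"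
  by (simp_all add: De_def' lin_add lin_tsmult lin_diff)

lemma De_wd1 [simp]: "Dea (wd [v]) = Dwa v"
  by (simp add: De_def')

lemma s2_DA: "s2 (DA a)"
  unfolding s2_def using DA_shape[of a] by fastforce

lemma s2_PB: "s2 X \<Longrightarrow> s2 (PB X)"
  unfolding PB_def' by (rule s2_lin) (use s2_keys in \<open>fastforce simp: s2_add s2_tsmult\<close>)

lemma s2_Dw: "s2 (Dwa v)"
proof (induction v)
  case Nil then show ?case by simp
next
  case (Cons a l) then show ?case by (cases "l = []") (simp_all add: s2_DA Dw_cons2 dp_s2 s2_PB)
qed

lemma s2_De: "s2 (Dea x)"
  unfolding De_def' by (rule s2_lin) (simp add: Dew_def s2_Dw split: list.split)

lemma De_pre: "s1 X \<Longrightarrow> Dea (pre c X) = dp (DA c) (PB (Dea X))"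
proof -
  assume X: "s1 X"
  show ?thesis
  proof (rule lin_ext1[where F = "\<lambda>X. Dea (pre c X)" and G = "\<lambda>X. dp (DA c) (PB (Dea X))"])
    fix w assume "w \<in> Poly_Mapping.keys X"
    then obtain u where "w = [u]" "u \<noteq> []" using s1_keys[OF X] by blast
    then show "Dea (pre c (wd w)) = dp (DA c) (PB (Dea (wd w)))" by (simp add: Dw_cons2)
  qed (simp_all add: De_lin pre_add pre_tsmult PB_lin dp_lin_simps)
qed

lemma De_mf: "s1 X \<Longrightarrow> eqa (Dea (mf c X)) (dp (DA c) (Dea X))"
proof -
  assume X: "s1 X"
  show ?thesis
  proof (rule lin_ext1_eqa[where F = "\<lambda>X. Dea (mf c X)" and G = "\<lambda>X. dp (DA c) (Dea X)"])
    fix w assume "w \<in> Poly_Mapping.keys X"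
    then obtain b u where w: "w = [b # u]" using s1_keys[OF X] by (metis neq_Nil_conv)
    show "eqa (Dea (mf c (wd w))) (dp (DA c) (Dea (wd w)))"
    proof (cases "u = []")
      case True
      then show ?thesis using w DA_mult'[of c b] by simp
    next
      case False
      have "eqa (dp (DA (m c b)) (PB (Dwa u))) (dp (dp (DA c) (DA b)) (PB (Dwa u)))"
        by (rule eqa_dp[OF DA_mult' eqa_refl])
      also have "dp (dp (DA c) (DA b)) (PB (Dwa u)) = dp (DA c) (dp (DA b) (PB (Dwa u)))"
        by (rule dp_assoc2[OF s2_DA s2_DA s2_PB[OF s2_Dw]])
      finally show ?thesis using w False by (simp add: Dw_cons2)
    qed
  qed (simp_all add: De_lin mfirst_add mfirst_tsmult dp_lin_simps)
qed

lemma DA_e_unit: "s2 Y \<Longrightarrow> eqa (dp (DA e) Y) Y"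
  using eqa_dp[OF DA_unit' eqa_refl, of Y] dp_one2 by simp

lemma Dw_e: "u \<noteq> [] \<Longrightarrow> eqa (Dwa (e # u)) (PB (Dwa u))"
  by (simp add: Dw_cons2 DA_e_unit s2_PB s2_Dw)

lemma Dmult_words: "v \<noteq> [] \<Longrightarrow> w \<noteq> [] \<Longrightarrow> eqa (Dea (Q v w)) (dp (Dwa v) (Dwa w))"
proof (induction "length v + length w" arbitrary: v w rule: less_induct)
  case less
  have single: "eqa (Dea (Q [a] z)) (dp (Dwa [a]) (Dwa z))" if "z \<noteq> []" for a z
  proof -
    have "Q [a] z = mf a (wd [z])" using dp_single[of "wd [z]" a] that by simp
    then show ?thesis using De_mf[of "wd [z]" a] that by simp
  qed
  obtain a v' where v: "v = a # v'" using less(2) by (cases v) auto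
  obtain b w' where w: "w = b # w'" using less(3) by (cases w) auto
  show ?case
  proof (cases "v' = []")
    case True then show ?thesis using single[OF less(3)] v by simp
  next
    case v': False
    show ?thesis
    proof (cases "w' = []")
      case True then show ?thesis using single[OF less(2), of b] w Q_comm[of v "[b]"] dp_comm by simp
    next
      case w': False
      define X where "X = Dwa v'"
      define Y where "Y = Dwa w'"
      have sX: "s2 X" and sY: "s2 Y" by (simp_all add: X_def Y_def s2_Dw)
      have i1': "eqa (Dea (Q v' (e # w'))) (dp (Dwa v') (Dwa (e # w')))"
        using less(1)[of v' "e # w'"] v w v' by simp
      have i1: "eqa (Dea (Q v' (e # w'))) (dp X (PB Y))"
        unfolding X_def Y_def by (rule eqa_trans[OF i1' eqa_dp[OF eqa_refl Dw_e[OF w']]])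
      have i2': "eqa (Dea (Q (e # v') w')) (dp (Dwa (e # v')) (Dwa w'))"
        using less(1)[of "e # v'" w'] v w w' by simp
      have i2: "eqa (Dea (Q (e # v') w')) (dp (PB X) Y)"
        unfolding X_def Y_def by (rule eqa_trans[OF i2' eqa_dp[OF Dw_e[OF v'] eqa_refl]])
      have i3: "eqa (Dea (Q v' w')) (dp X Y)"
        using less(1)[of v' w'] v w v' w' unfolding X_def Y_def by simp
      have i4: "eqa (Dea (mf (m a b) (Q v' w'))) (dp (DA (m a b)) (dp X Y))"
        using eqa_trans[OF De_mf[OF Q_s1] eqa_dp[OF eqa_refl i3]] by simp
      have "Dea (Q v w) = dp (DA (m a b)) (PB (Dea (Q v' (e # w')))) + dp (DA (m a b)) (PB (Dea (Q (e # v') w')))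
          + tsmult lam (dp (DA (m a b)) (PB (Dea (Q v' w')))) + tsmult kap (Dea (mf (m a b) (Q v' w')))"
        using v w v' w' by (simp add: De_lin De_pre Q_s1 dp_lin_simps)
      also have "eqa \<dots> (dp (DA (m a b)) (PB (dp X (PB Y))) + dp (DA (m a b)) (PB (dp (PB X) Y))
          + tsmult lam (dp (DA (m a b)) (PB (dp X Y))) + tsmult kap (dp (DA (m a b)) (dp X Y)))"
        by (intro eqa_add eqa_tsmult eqa_dp eqa_refl eqa_PB i1 i2 i3 i4)
      also have "\<dots> = dp (DA (m a b)) (dp (PB X) (PB Y))"
        by (simp add: PB_erb[OF sX sY] dp_lin_simps)
      also have "eqa \<dots> (dp (dp (DA a) (DA b)) (dp (PB X) (PB Y)))"
        by (rule eqa_dp[OF DA_mult' eqa_refl])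
      also have "\<dots> = dp (dp (DA a) (PB X)) (dp (DA b) (PB Y))"
        by (rule dp_swap2[OF s2_DA s2_DA s2_PB[OF sX] s2_PB[OF sY]])
      also have "\<dots> = dp (Dwa v) (Dwa w)"
        using v w v' w' by (simp add: Dw_cons2 X_def Y_def)
      finally show ?thesis .
    qed
  qed
qed

end


context shb
begin

lemma teq_lin_cong:
  "(\<And>w. w \<in> Poly_Mapping.keys x \<Longrightarrow> teq s (f w) (g w)) \<Longrightarrow> teq s (lin f x) (lin g x)"
  unfolding teq_def by (rule lin_cong_kspan)

lemma teq_refl: "teq s x x"
  by (simp add: teq_def kspan_zero)

lemma teq_nilword: "[] \<in> set w \<Longrightarrow> teq s 0 (wd w)"
proof -
  assume "[] \<in> set w"
  then have "wd w \<in> tensor_rels s" unfolding tensor_rels_eq by blast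
  then show ?thesis unfolding teq_def using kspan_uminus[OF kspan_gen] by simp
qed

lemma Sh_keys: "x \<in> Sh \<Longrightarrow> w \<in> Poly_Mapping.keys x \<Longrightarrow> \<exists>v. w = [v]"
  by (simp add: Sh_def)

subsection \<open>Multiplicativity of the comultiplication and the counit\<close>

lemma Dmult:
  assumes "x \<in> Sh" "y \<in> Sh"
  shows "eqa (Dea (dp x y)) (dp (Dea x) (Dea y))"
proof (rule bilin_ext_eqa[where F = "\<lambda>x y. Dea (dp x y)" and G = "\<lambda>x y. dp (Dea x) (Dea y)"])
  fix v w assume v: "v \<in> Poly_Mapping.keys x" and w: "w \<in> Poly_Mapping.keys y"
  obtain p where p: "v = [p]" using Sh_keys[OF assms(1) v] by blast
  obtain q where q: "w = [q]" using Sh_keys[OF assms(2) w] by blast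
  show "eqa (Dea (dp (wd v) (wd w))) (dp (Dea (wd v)) (Dea (wd w)))"
  proof (cases "p = [] \<or> q = []")
    case True then show ?thesis using p q by (auto simp: De_lin)
  next
    case False then show ?thesis using p q Dmult_words[of p q] by simp
  qed
qed (simp_all add: De_lin dp_lin_simps)

lemma eps_mult:
  assumes "x \<in> Sh" "y \<in> Sh"
  shows "eps (dp x y) = eps x * eps y"
proof -
  have "eps (dp x y) = linf (\<lambda>v. linf (\<lambda>w. eps (dp (wd v) (wd w))) y) x"
    by (subst dp_expand_left, subst dp_expand_right) (simp add: eps_lin dp_lin_left)
  also have "\<dots> = linf (\<lambda>v. linf (\<lambda>w. eps (wd v) * eps (wd w)) y) x"
  proof (rule linf_cong, rule linf_cong)
    fix v w assume v: "v \<in> Poly_Mapping.keys x" and w: "w \<in> Poly_Mapping.keys y"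
    obtain p where p: "v = [p]" using Sh_keys[OF assms(1) v] by blast
    obtain q where q: "w = [q]" using Sh_keys[OF assms(2) w] by blast
    show "eps (dp (wd v) (wd w)) = eps (wd v) * eps (wd w)"
    proof (cases "p = [] \<or> q = []")
      case True then show ?thesis using p q by auto
    next
      case False then show ?thesis using p q eps_Q[of p q] by simp
    qed
  qed
  also have "\<dots> = linf (\<lambda>v. eps y * eps (wd v)) x"
  proof (rule linf_cong)
    fix v
    have "linf (\<lambda>w. eps (wd v) * eps (wd w)) y = eps (wd v) * linf (\<lambda>w. eps (wd w)) y" by (rule linf_fun_mult)
    also have "\<dots> = eps (wd v) * eps y" by (simp only: eps_expand[of y, symmetric])
    finally show "linf (\<lambda>w. eps (wd v) * eps (wd w)) y = eps y * eps (wd v)" by (simp add: mult.commute)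
  qed
  also have "\<dots> = eps y * linf (\<lambda>w. eps (wd w)) x" by (rule linf_fun_mult)
  also have "\<dots> = eps x * eps y" by (simp only: eps_expand[of x, symmetric] mult.commute)
  finally show ?thesis .
qed

subsection \<open>Counit\<close>

abbreviation EL :: "('a,'k) tw \<Rightarrow> ('a,'k) tw" where
  "EL \<equiv> tmap2 (\<lambda>v. tsmult (ew v) (wd [])) (\<lambda>v. wd [v])"
abbreviation ER :: "('a,'k) tw \<Rightarrow> ('a,'k) tw" where
  "ER \<equiv> tmap2 (\<lambda>v. wd [v]) (\<lambda>v. tsmult (ew v) (wd []))"

lemma lin_hd_s1: "s1 B \<Longrightarrow> lin (\<lambda>w. wd [hd w]) B = B"
proof -
  assume B: "s1 B"
  have "lin (\<lambda>w. wd [hd w]) B = lin wd B" by (rule lin_cong) (use s1_keys[OF B] in force)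
  then show ?thesis by (simp add: lin_wd_id)
qed

lemma linf_hd_s1: "s1 A \<Longrightarrow> linf (\<lambda>w. ew (hd w)) A = eps A"
  unfolding epse_def by (rule linf_cong) (use s1_keys in force)

lemma lin_De_s1: "s1 A \<Longrightarrow> lin (\<lambda>w. Dwa (hd w)) A = Dea A"
  unfolding De_def' by (rule lin_cong) (use s1_keys in force)

lemma EL_tprod:
  assumes A: "s1 A" and B: "s1 B"
  shows "EL (tprod A B) = tsmult (eps A) B"
proof -
  have "EL (tprod A B) = tprod (lin (\<lambda>w. tsmult (ew (hd w)) (wd [])) A) (lin (\<lambda>w. wd [hd w]) B)"
    by (rule tmap2_tprod[OF s1_sk[OF A] s1_sk[OF B]])
  also have "\<dots> = tsmult (eps A) B"
    by (simp only: lin_const linf_hd_s1[OF A] lin_hd_s1[OF B] tprod_tsmult_left tprod_nil_left)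
  finally show ?thesis .
qed

lemma ER_tprod:
  assumes A: "s1 A" and B: "s1 B"
  shows "ER (tprod A B) = tsmult (eps B) A"
proof -
  have "ER (tprod A B) = tprod (lin (\<lambda>w. wd [hd w]) A) (lin (\<lambda>w. tsmult (ew (hd w)) (wd [])) B)"
    by (rule tmap2_tprod[OF s1_sk[OF A] s1_sk[OF B]])
  also have "\<dots> = tsmult (eps B) A"
    by (simp only: lin_const linf_hd_s1[OF B] lin_hd_s1[OF A] tprod_tsmult_right tprod_nil_right)
  finally show ?thesis .
qed

lemma tmap2_lins: "tmap2 f g (x + y) = tmap2 f g x + tmap2 f g y" "tmap2 f g (tsmult c x) = tsmult c (tmap2 f g x)"
  by (simp_all add: tmap2_add tmap2_tsmult)

lemma wd2_tprod: "wd [p, q] = tprod (wd [p]) (wd [q])"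
  by simp

lemma EL_mult: "s2 X \<Longrightarrow> s2 Y \<Longrightarrow> EL (dp X Y) = dp (EL X) (EL Y)"
proof -
  assume X: "s2 X" and Y: "s2 Y"
  show ?thesis
  proof (rule bilin_ext[where F = "\<lambda>X Y. EL (dp X Y)" and G = "\<lambda>X Y. dp (EL X) (EL Y)"])
    fix v w assume v: "v \<in> Poly_Mapping.keys X" and w: "w \<in> Poly_Mapping.keys Y"
    obtain p1 q1 where 1: "v = [p1, q1]" "p1 \<noteq> []" "q1 \<noteq> []" using s2_keys[OF X v] by blast
    obtain p2 q2 where 2: "w = [p2, q2]" "p2 \<noteq> []" "q2 \<noteq> []" using s2_keys[OF Y w] by blast
    show "EL (dp (wd v) (wd w)) = dp (EL (wd v)) (EL (wd w))"
      using 1 2 by (simp add: EL_tprod Q_s1 eps_Q dp_tsmult_left dp_tsmult_right tprod_tsmult_left mult.commute)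
  qed (simp_all add: tmap2_lins dp_lin_simps)
qed

lemma ER_mult: "s2 X \<Longrightarrow> s2 Y \<Longrightarrow> ER (dp X Y) = dp (ER X) (ER Y)"
proof -
  assume X: "s2 X" and Y: "s2 Y"
  show ?thesis
  proof (rule bilin_ext[where F = "\<lambda>X Y. ER (dp X Y)" and G = "\<lambda>X Y. dp (ER X) (ER Y)"])
    fix v w assume v: "v \<in> Poly_Mapping.keys X" and w: "w \<in> Poly_Mapping.keys Y"
    obtain p1 q1 where 1: "v = [p1, q1]" "p1 \<noteq> []" "q1 \<noteq> []" using s2_keys[OF X v] by blast
    obtain p2 q2 where 2: "w = [p2, q2]" "p2 \<noteq> []" "q2 \<noteq> []" using s2_keys[OF Y w] by blast
    show "ER (dp (wd v) (wd w)) = dp (ER (wd v)) (ER (wd w))"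
      using 1 2 by (simp add: ER_tprod Q_s1 eps_Q dp_tsmult_left dp_tsmult_right tprod_tsmult_right mult.commute)
  qed (simp_all add: tmap2_lins dp_lin_simps)
qed

lemma EL_PB: "s2 Z \<Longrightarrow> EL (PB Z) = P (EL Z)"
proof -
  assume Z: "s2 Z"
  show ?thesis
  proof (rule lin_ext1[where F = "\<lambda>Z. EL (PB Z)" and G = "\<lambda>Z. P (EL Z)"])
    fix w assume w: "w \<in> Poly_Mapping.keys Z"
    obtain v u where 1: "w = [v, u]" "v \<noteq> []" "u \<noteq> []" using s2_keys[OF Z w] by blast
    have "EL (PB (wd w)) = tsmult (ew u * (epsA e * (- mu) * ew v)) (wd [[e]]) + tsmult (mu * ew u * ew v) (wd [[e]]) + tsmult (ew v) (wd [e # u])"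
      using 1 by (simp add: PB_def' tmap2_lins epsw_cons mult.assoc tprod_tsmult_left)
    also have "\<dots> = P (EL (wd w))"
      using 1 by (simp add: epsA_unit pre_tsmult tprod_tsmult_left tsmult_add_left[symmetric] algebra_simps)
    finally show "EL (PB (wd w)) = P (EL (wd w))" .
  qed (simp_all add: tmap2_lins PB_lin pre_add pre_tsmult)
qed

lemma ER_PB: "s2 Z \<Longrightarrow> ER (PB Z) = P (ER Z)"
proof -
  assume Z: "s2 Z"
  show ?thesis
  proof (rule lin_ext1[where F = "\<lambda>Z. ER (PB Z)" and G = "\<lambda>Z. P (ER Z)"])
    fix w assume w: "w \<in> Poly_Mapping.keys Z"
    obtain v u where 1: "w = [v, u]" "v \<noteq> []" "u \<noteq> []" using s2_keys[OF Z w] by blast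
    have "ER (PB (wd w)) = tsmult (ew u * epsA e) (wd [e # v]) + tsmult (mu * ew u * epsA e) (wd [v]) + tsmult (epsA e * (- mu) * ew u) (wd [v])"
      using 1 by (simp add: PB_def' tmap2_lins epsw_cons mult.assoc tprod_tsmult_right)
    also have "\<dots> = P (ER (wd w))"
      using 1 by (simp add: epsA_unit pre_tsmult tprod_tsmult_right add.assoc tsmult_add_left[symmetric] algebra_simps)
    finally show "ER (PB (wd w)) = P (ER (wd w))" .
  qed (simp_all add: tmap2_lins PB_lin pre_add pre_tsmult)
qed

lemma nz_EL_DA: "nz (EL (DA a))"
  unfolding tmap2_def
proof (rule nz_lin)
  fix w assume "w \<in> Poly_Mapping.keys (DA a)"
  then obtain p q where "w = [[p], [q]]" using DA_shape[of a] by blast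
  then show "nz (case w of [v, u] \<Rightarrow> tprod (tsmult (ew v) (wd [])) (wd [u]) | _ \<Rightarrow> 0)"
    by (simp add: nz_tsmult tprod_tsmult_left)
qed
lemma nz_ER_DA: "nz (ER (DA a))"
  unfolding tmap2_def
proof (rule nz_lin)
  fix w assume "w \<in> Poly_Mapping.keys (DA a)"
  then obtain p q where "w = [[p], [q]]" using DA_shape[of a] by blast
  then show "nz (case w of [v, u] \<Rightarrow> tprod (wd [v]) (tsmult (ew u) (wd [])) | _ \<Rightarrow> 0)"
    by (simp add: nz_tsmult tprod_tsmult_right)
qed

lemma EL_DA: "eqa (EL (DA a)) (wd [[a]])"
proof -
  have "tmap2 (\<lambda>v. case v of [a] \<Rightarrow> tsmult (epsA a) (wd []) | _ \<Rightarrow> 0) (\<lambda>v. wd [v]) (DA a) = EL (DA a)"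
    unfolding tmap2_def by (rule lin_cong) (use DA_shape in force)
  then show ?thesis using teq_eqa[OF counit_A_left[of a] _ ] nz_EL_DA by simp
qed

lemma ER_DA: "eqa (ER (DA a)) (wd [[a]])"
proof -
  have "tmap2 (\<lambda>v. wd [v]) (\<lambda>v. case v of [a] \<Rightarrow> tsmult (epsA a) (wd []) | _ \<Rightarrow> 0) (DA a) = ER (DA a)"
    unfolding tmap2_def by (rule lin_cong) (use DA_shape in force)
  then show ?thesis using teq_eqa[OF counit_A_right[of a] _ ] nz_ER_DA by simp
qed

lemma counit_words: "v \<noteq> [] \<Longrightarrow> eqa (EL (Dwa v)) (wd [v]) \<and> eqa (ER (Dwa v)) (wd [v])"
proof (induction v)
  case Nil then show ?case by simp
next
  case (Cons a l)
  show ?case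
  proof (cases "l = []")
    case True then show ?thesis using EL_DA ER_DA by simp
  next
    case False
    have s: "s2 (PB (Dwa l))" by (rule s2_PB[OF s2_Dw])
    have "EL (Dwa (a # l)) = dp (EL (DA a)) (P (EL (Dwa l)))"
      using False by (simp add: Dw_cons2 EL_mult[OF s2_DA s] EL_PB[OF s2_Dw])
    also have "eqa \<dots> (dp (wd [[a]]) (P (wd [l])))"
      by (intro eqa_dp eqa_pre EL_DA) (use Cons False in blast)
    also have "\<dots> = wd [a # l]"
      using False by (simp add: dp_single wd_cons[symmetric] m_unit_r)
    finally have 1: "eqa (EL (Dwa (a # l))) (wd [a # l])" .
    have "ER (Dwa (a # l)) = dp (ER (DA a)) (P (ER (Dwa l)))"
      using False by (simp add: Dw_cons2 ER_mult[OF s2_DA s] ER_PB[OF s2_Dw])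
    also have "eqa \<dots> (dp (wd [[a]]) (P (wd [l])))"
      by (intro eqa_dp eqa_pre ER_DA) (use Cons False in blast)
    also have "\<dots> = wd [a # l]"
      using False by (simp add: dp_single wd_cons[symmetric] m_unit_r)
    finally have 2: "eqa (ER (Dwa (a # l))) (wd [a # l])" .
    show ?thesis using 1 2 by blast
  qed
qed

lemma counit_Sh:
  assumes "x \<in> Sh"
  shows "teq s (EL (Dea x)) x \<and> teq s (ER (Dea x)) x"
proof -
  have L: "EL (Dea x) = lin (\<lambda>w. EL (Dew w)) x" by (simp add: De_def' tmap2_lin)
  have R: "ER (Dea x) = lin (\<lambda>w. ER (Dew w)) x" by (simp add: De_def' tmap2_lin)
  have key: "teq s (EL (Dew w)) (wd w) \<and> teq s (ER (Dew w)) (wd w)" if hw: "w \<in> Poly_Mapping.keys x" for w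
  proof -
    obtain v where v: "w = [v]" using Sh_keys[OF assms hw] by blast
    show ?thesis
    proof (cases "v = []")
      case True then show ?thesis using v teq_nilword[of w] by simp
    next
      case False then show ?thesis using v counit_words[of v] eqa_teq by simp
    qed
  qed
  have "teq s (lin (\<lambda>w. EL (Dew w)) x) (lin wd x)" by (rule teq_lin_cong) (use key in blast)
  moreover have "teq s (lin (\<lambda>w. ER (Dew w)) x) (lin wd x)" by (rule teq_lin_cong) (use key in blast)
  ultimately show ?thesis using L R by (simp add: lin_wd_id)
qed

subsection \<open>Coassociativity\<close>

abbreviation LL :: "('a,'k) tw \<Rightarrow> ('a,'k) tw" where "LL \<equiv> tmap2 Dwa (\<lambda>v. wd [v])"
abbreviation RR :: "('a,'k) tw \<Rightarrow> ('a,'k) tw" where "RR \<equiv> tmap2 (\<lambda>v. wd [v]) Dwa"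

lemma LL_tprod:
  assumes A: "s1 A" and B: "s1 B"
  shows "LL (tprod A B) = tprod (Dea A) B"
proof -
  have "LL (tprod A B) = tprod (lin (\<lambda>w. Dwa (hd w)) A) (lin (\<lambda>w. wd [hd w]) B)"
    by (rule tmap2_tprod[OF s1_sk[OF A] s1_sk[OF B]])
  then show ?thesis by (simp only: lin_De_s1[OF A] lin_hd_s1[OF B])
qed

lemma RR_tprod:
  assumes A: "s1 A" and B: "s1 B"
  shows "RR (tprod A B) = tprod A (Dea B)"
proof -
  have "RR (tprod A B) = tprod (lin (\<lambda>w. wd [hd w]) A) (lin (\<lambda>w. Dwa (hd w)) B)"
    by (rule tmap2_tprod[OF s1_sk[OF A] s1_sk[OF B]])
  then show ?thesis by (simp only: lin_De_s1[OF B] lin_hd_s1[OF A])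
qed

lemma LL_mult: "s2 X \<Longrightarrow> s2 Y \<Longrightarrow> eqa (LL (dp X Y)) (dp (LL X) (LL Y))"
proof -
  assume X: "s2 X" and Y: "s2 Y"
  show ?thesis
  proof (rule bilin_ext_eqa[where F = "\<lambda>X Y. LL (dp X Y)" and G = "\<lambda>X Y. dp (LL X) (LL Y)"])
    fix v w assume v: "v \<in> Poly_Mapping.keys X" and w: "w \<in> Poly_Mapping.keys Y"
    obtain p1 q1 where 1: "v = [p1, q1]" "p1 \<noteq> []" "q1 \<noteq> []" using s2_keys[OF X v] by blast
    obtain p2 q2 where 2: "w = [p2, q2]" "p2 \<noteq> []" "q2 \<noteq> []" using s2_keys[OF Y w] by blast
    have "LL (dp (wd v) (wd w)) = tprod (Dea (Q p1 p2)) (Q q1 q2)"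
      using 1 2 by (simp add: LL_tprod Q_s1)
    also have "eqa \<dots> (tprod (dp (Dwa p1) (Dwa p2)) (Q q1 q2))"
      by (rule eqa_tprod[OF Dmult_words eqa_refl]) (use 1 2 in simp_all)
    also have "\<dots> = dp (LL (wd v)) (LL (wd w))"
      using 1 2 by (simp add: dp_tprod[OF s2_sk[OF s2_Dw] s2_sk[OF s2_Dw]])
    finally show "eqa (LL (dp (wd v) (wd w))) (dp (LL (wd v)) (LL (wd w)))" .
  qed (simp_all add: tmap2_lins dp_lin_simps)
qed

lemma RR_mult: "s2 X \<Longrightarrow> s2 Y \<Longrightarrow> eqa (RR (dp X Y)) (dp (RR X) (RR Y))"
proof -
  assume X: "s2 X" and Y: "s2 Y"
  have sk1: "sk 1 (wd [p] :: ('a,'k) tw)" for p by (simp add: sk_def)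
  show ?thesis
  proof (rule bilin_ext_eqa[where F = "\<lambda>X Y. RR (dp X Y)" and G = "\<lambda>X Y. dp (RR X) (RR Y)"])
    fix v w assume v: "v \<in> Poly_Mapping.keys X" and w: "w \<in> Poly_Mapping.keys Y"
    obtain p1 q1 where 1: "v = [p1, q1]" "p1 \<noteq> []" "q1 \<noteq> []" using s2_keys[OF X v] by blast
    obtain p2 q2 where 2: "w = [p2, q2]" "p2 \<noteq> []" "q2 \<noteq> []" using s2_keys[OF Y w] by blast
    have "RR (dp (wd v) (wd w)) = tprod (Q p1 p2) (Dea (Q q1 q2))"
      using 1 2 by (simp add: RR_tprod Q_s1)
    also have "eqa \<dots> (tprod (Q p1 p2) (dp (Dwa q1) (Dwa q2)))"
      by (rule eqa_tprod[OF eqa_refl Dmult_words]) (use 1 2 in simp_all)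
    also have "\<dots> = dp (RR (wd v)) (RR (wd w))"
      using 1 2 by (simp add: dp_tprod[OF sk1 sk1])
    finally show "eqa (RR (dp (wd v) (wd w))) (dp (RR (wd v)) (RR (wd w)))" .
  qed (simp_all add: tmap2_lins dp_lin_simps)
qed

definition P3w :: "'a list list \<Rightarrow> ('a,'k) tw" where
  "P3w w = (case w of [a, b, c] \<Rightarrow> tprod (PB (wd [a, b])) (tsmult (ew c) one) + tsmult (mu * ew c) (wd [a, b, [e]]) + wd [a, b, e # c]
     | _ \<Rightarrow> 0)"

definition P3 :: "('a,'k) tw \<Rightarrow> ('a,'k) tw" where "P3 x = lin P3w x"

lemma P3w3 [simp]: "P3w [a, b, c] = tprod (PB (wd [a, b])) (tsmult (ew c) one) + tsmult (mu * ew c) (wd [a, b, [e]]) + wd [a, b, e # c]"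
  by (simp add: P3w_def)

lemma P3w_len: "length w \<noteq> 3 \<Longrightarrow> P3w w = 0"
  unfolding P3w_def by (rule case3_zero)

lemma P3_lin: "P3 (x + y) = P3 x + P3 y" "P3 (tsmult c x) = tsmult c (P3 x)"
  by (simp_all add: P3_def lin_add lin_tsmult)

lemma P3_mlw: "mlw P3w"
proof (rule mlwI)
  fix us xs x y ys vs
  let ?D = "P3w (us @ (xs @ (x + y) # ys) # vs) - P3w (us @ (xs @ x # ys) # vs) - P3w (us @ (xs @ y # ys) # vs)"
  have lenc: "length us + length vs = 2 \<Longrightarrow> us = [] \<or> (\<exists>a. us = [a]) \<or> (\<exists>a b. us = [a, b])"
    by (cases us rule: remdups_adj.cases) auto
  show "?D \<in> KA"
  proof (cases "length us + length vs = 2")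
    case True
    then consider "us = []" | a where "us = [a]" | a b where "us = [a, b]" using lenc by blast
    then show ?thesis
    proof cases
      case 1
      then obtain b c where vs: "vs = [b, c]" using True by (cases vs rule: remdups_adj.cases) auto
      have "?D = tprod (PB (addgen [] xs x y ys [b])) (tsmult (ew c) one) + tsmult (mu * ew c) (addgen [] xs x y ys [b, [e]])
          + addgen [] xs x y ys [b, e # c]"
        unfolding 1 vs by (simp add: addgen_def PB_lin tprod_diff_left tsmult_diff_right)
      also have "\<dots> \<in> KA" by (intro KA_add KA_tsmult tprod_KA_left PB_KA addgen_KA)
      finally show ?thesis .
    next
      case (2 a)
      then obtain c where vs: "vs = [c]" using True by (cases vs) auto
      have "?D = tprod (PB (addgen [a] xs x y ys [])) (tsmult (ew c) one) + tsmult (mu * ew c) (addgen [a] xs x y ys [[e]])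
          + addgen [a] xs x y ys [e # c]"
        unfolding 2 vs by (simp add: addgen_def PB_lin tprod_diff_left tsmult_diff_right)
      also have "\<dots> \<in> KA" by (intro KA_add KA_tsmult tprod_KA_left PB_KA addgen_KA)
      finally show ?thesis .
    next
      case (3 a b)
      then have vs: "vs = []" using True by simp
      have "?D = addgen [a, b] (e # xs) x y ys []"
        unfolding 3 vs by (simp add: addgen_def ew_add tsmult_add_left tprod_add_right algebra_simps)
      also have "\<dots> \<in> KA" by (rule addgen_KA)
      finally show ?thesis .
    qed
  next
    case False
    then show ?thesis by (simp add: P3w_len KA_zero)
  qed
next
  fix us xs c x ys vs
  let ?D = "P3w (us @ (xs @ s c x # ys) # vs) - tsmult c (P3w (us @ (xs @ x # ys) # vs))"
  have lenc: "length us + length vs = 2 \<Longrightarrow> us = [] \<or> (\<exists>a. us = [a]) \<or> (\<exists>a b. us = [a, b])"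
    by (cases us rule: remdups_adj.cases) auto
  show "?D \<in> KA"
  proof (cases "length us + length vs = 2")
    case True
    then consider "us = []" | a where "us = [a]" | a b where "us = [a, b]" using lenc by blast
    then show ?thesis
    proof cases
      case 1
      then obtain b d where vs: "vs = [b, d]" using True by (cases vs rule: remdups_adj.cases) auto
      have "?D = tprod (PB (scagen [] xs c x ys [b])) (tsmult (ew d) one) + tsmult (mu * ew d) (scagen [] xs c x ys [b, [e]])
          + scagen [] xs c x ys [b, e # d]"
        unfolding 1 vs by (simp add: scagen_def PB_lin tprod_diff_left tprod_tsmult_left tsmult_diff_right tsmult_add_right algebra_simps)
      also have "\<dots> \<in> KA" by (intro KA_add KA_tsmult tprod_KA_left PB_KA scagen_KA)
      finally show ?thesis .
    next
      case (2 a)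
      then obtain d where vs: "vs = [d]" using True by (cases vs) auto
      have "?D = tprod (PB (scagen [a] xs c x ys [])) (tsmult (ew d) one) + tsmult (mu * ew d) (scagen [a] xs c x ys [[e]])
          + scagen [a] xs c x ys [e # d]"
        unfolding 2 vs by (simp add: scagen_def PB_lin tprod_diff_left tprod_tsmult_left tsmult_diff_right tsmult_add_right algebra_simps)
      also have "\<dots> \<in> KA" by (intro KA_add KA_tsmult tprod_KA_left PB_KA scagen_KA)
      finally show ?thesis .
    next
      case (3 a b)
      then have vs: "vs = []" using True by simp
      have "?D = scagen [a, b] (e # xs) c x ys []"
        unfolding 3 vs by (simp add: scagen_def ew_sca tprod_tsmult_right tsmult_add_right algebra_simps)
      also have "\<dots> \<in> KA" by (rule scagen_KA)
      finally show ?thesis .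
    qed
  next
    case False
    then show ?thesis by (simp add: P3w_len KA_zero)
  qed
qed

lemma eqa_P3: "eqa x y \<Longrightarrow> eqa (P3 x) (P3 y)"
  unfolding P3_def by (rule lin_resp[OF P3_mlw])

lemma P3_tprod_right:
  assumes C: "s2 C"
  shows "P3 (tprod C (wd [u])) = tprod (PB C) (tsmult (ew u) one) + tsmult (mu * ew u) (tprod C one) + tprod C (wd [e # u])"
proof (rule lin_ext1[where F = "\<lambda>C. P3 (tprod C (wd [u]))" and
    G = "\<lambda>C. tprod (PB C) (tsmult (ew u) one) + tsmult (mu * ew u) (tprod C one) + tprod C (wd [e # u])"])
  fix w assume "w \<in> Poly_Mapping.keys C"
  then obtain a b where "w = [a, b]" using s2_keys[OF C] by blast
  then show "P3 (tprod (wd w) (wd [u])) = tprod (PB (wd w)) (tsmult (ew u) one) + tsmult (mu * ew u) (tprod (wd w) one) + tprod (wd w) (wd [e # u])"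
    by (simp add: P3_def)
qed (simp_all add: P3_lin PB_lin tprod_add_left tprod_tsmult_left tsmult_add_right algebra_simps)

definition EE :: "('a,'k) tw \<Rightarrow> 'k" where
  "EE Y = linf (\<lambda>w. case w of [p, q] \<Rightarrow> ew p * ew q | _ \<Rightarrow> 0) Y"

lemma P3_tprod_left:
  assumes Y: "s2 Y"
  shows "P3 (tprod (wd [v]) Y) = tsmult (EE Y) (wd [e # v, [e], [e]]) + tsmult (mu * EE Y) (wd [v, [e], [e]]) + tprod (wd [v]) (PB Y)"
proof (rule lin_ext1[where F = "\<lambda>Y. P3 (tprod (wd [v]) Y)" and
    G = "\<lambda>Y. tsmult (EE Y) (wd [e # v, [e], [e]]) + tsmult (mu * EE Y) (wd [v, [e], [e]]) + tprod (wd [v]) (PB Y)"])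
  fix w assume "w \<in> Poly_Mapping.keys Y"
  then obtain p q where "w = [p, q]" using s2_keys[OF Y] by blast
  then show "P3 (tprod (wd [v]) (wd w)) = tsmult (EE (wd w)) (wd [e # v, [e], [e]]) + tsmult (mu * EE (wd w)) (wd [v, [e], [e]]) + tprod (wd [v]) (PB (wd w))"
    by (simp add: P3_def EE_def PB_def' tprod_add_left tprod_add_right tprod_tsmult_left tprod_tsmult_right tsmult_add_right algebra_simps)
qed (simp_all add: P3_lin PB_lin EE_def linf_add linf_tsmult tprod_add_right tprod_tsmult_right tsmult_add_left tsmult_add_right algebra_simps)

lemma EE_ER: "eps (ER Y) = EE Y"
  unfolding tmap2_def EE_def eps_lin
  by (rule linf_cong) (auto simp: tprod_tsmult_right eps_tsmult mult.commute split: list.split)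

lemma EE_Dw: "u \<noteq> [] \<Longrightarrow> EE (Dwa u) = ew u"
proof -
  assume u: "u \<noteq> []"
  have "eps (ER (Dwa u)) = eps (wd [u])"
    by (rule teq_eps[OF eqa_teq]) (use counit_words[OF u] in blast)
  then show ?thesis by (simp add: EE_ER)
qed

lemma LL_PB: "s2 Z \<Longrightarrow> eqa (LL (PB Z)) (P3 (LL Z))"
proof -
  assume Z: "s2 Z"
  show ?thesis
  proof (rule lin_ext1_eqa[where F = "\<lambda>Z. LL (PB Z)" and G = "\<lambda>Z. P3 (LL Z)"])
    fix w assume w: "w \<in> Poly_Mapping.keys Z"
    obtain v u where 1: "w = [v, u]" "v \<noteq> []" "u \<noteq> []" using s2_keys[OF Z w] by blast
    have "LL (PB (wd w)) = tsmult (ew u) (tprod (Dwa (e # v)) one) + tsmult (mu * ew u) (tprod (Dwa v) one) + tprod (Dwa v) (wd [e # u])"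
      using 1 by (simp add: PB_def' tmap2_lins)
    also have "eqa \<dots> (tsmult (ew u) (tprod (PB (Dwa v)) one) + tsmult (mu * ew u) (tprod (Dwa v) one) + tprod (Dwa v) (wd [e # u]))"
      by (intro eqa_add eqa_tsmult eqa_tprod eqa_refl Dw_e) (use 1 in simp)
    also have "\<dots> = P3 (LL (wd w))"
      using 1 by (simp add: P3_tprod_right s2_Dw tprod_tsmult_right)
    finally show "eqa (LL (PB (wd w))) (P3 (LL (wd w)))" .
  qed (simp_all add: tmap2_lins PB_lin P3_lin)
qed

lemma RR_PB: "s2 Z \<Longrightarrow> eqa (RR (PB Z)) (P3 (RR Z))"
proof -
  assume Z: "s2 Z"
  show ?thesis
  proof (rule lin_ext1_eqa[where F = "\<lambda>Z. RR (PB Z)" and G = "\<lambda>Z. P3 (RR Z)"])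
    fix w assume w: "w \<in> Poly_Mapping.keys Z"
    obtain v u where 1: "w = [v, u]" "v \<noteq> []" "u \<noteq> []" using s2_keys[OF Z w] by blast
    have "RR (PB (wd w)) = tsmult (ew u) (tprod (wd [e # v]) (DA e)) + tsmult (mu * ew u) (tprod (wd [v]) (DA e)) + tprod (wd [v]) (Dwa (e # u))"
      using 1 by (simp add: PB_def' tmap2_lins)
    also have "eqa \<dots> (tsmult (ew u) (tprod (wd [e # v]) one2) + tsmult (mu * ew u) (tprod (wd [v]) one2) + tprod (wd [v]) (PB (Dwa u)))"
      by (intro eqa_add eqa_tsmult eqa_tprod eqa_refl Dw_e DA_unit') (use 1 in simp)
    also have "\<dots> = P3 (RR (wd w))"
      using 1 by (simp add: P3_tprod_left s2_Dw EE_Dw)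
    finally show "eqa (RR (PB (wd w))) (P3 (RR (wd w)))" .
  qed (simp_all add: tmap2_lins PB_lin P3_lin)
qed

lemma coassoc_DA: "eqa (LL (DA a)) (RR (DA a))"
proof -
  have l: "tmap2 (\<lambda>v. case v of [a] \<Rightarrow> DA a | _ \<Rightarrow> 0) (\<lambda>v. wd [v]) (DA a) = LL (DA a)"
    unfolding tmap2_def by (rule lin_cong) (use DA_shape in force)
  have r: "tmap2 (\<lambda>v. wd [v]) (\<lambda>v. case v of [a] \<Rightarrow> DA a | _ \<Rightarrow> 0) (DA a) = RR (DA a)"
    unfolding tmap2_def by (rule lin_cong) (use DA_shape in force)
  have nl: "nz (LL (DA a))"
    unfolding tmap2_def
  proof (rule nz_lin)
    fix w assume "w \<in> Poly_Mapping.keys (DA a)"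
    then obtain p q where "w = [[p], [q]]" using DA_shape[of a] by blast
    then show "nz (case w of [v, u] \<Rightarrow> tprod (Dwa v) (wd [u]) | _ \<Rightarrow> 0)"
      by (simp add: nz_tprod nz_DA)
  qed
  have nr: "nz (RR (DA a))"
    unfolding tmap2_def
  proof (rule nz_lin)
    fix w assume "w \<in> Poly_Mapping.keys (DA a)"
    then obtain p q where "w = [[p], [q]]" using DA_shape[of a] by blast
    then show "nz (case w of [v, u] \<Rightarrow> tprod (wd [v]) (Dwa u) | _ \<Rightarrow> 0)"
      by (simp add: nz_tprod nz_DA)
  qed
  show ?thesis using teq_eqa[OF coassoc_A[of a]] l r nl nr by simp
qed

lemma coassoc_words: "v \<noteq> [] \<Longrightarrow> eqa (LL (Dwa v)) (RR (Dwa v))"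
proof (induction v)
  case Nil then show ?case by simp
next
  case (Cons a l)
  show ?case
  proof (cases "l = []")
    case True then show ?thesis using coassoc_DA by simp
  next
    case False
    have s: "s2 (PB (Dwa l))" by (rule s2_PB[OF s2_Dw])
    have "LL (Dwa (a # l)) = LL (dp (DA a) (PB (Dwa l)))" using False by (simp add: Dw_cons2)
    also have "eqa \<dots> (dp (LL (DA a)) (LL (PB (Dwa l))))" by (rule LL_mult[OF s2_DA s])
    also have "eqa \<dots> (dp (LL (DA a)) (P3 (LL (Dwa l))))" by (rule eqa_dp[OF eqa_refl LL_PB[OF s2_Dw]])
    also have "eqa \<dots> (dp (RR (DA a)) (P3 (RR (Dwa l))))"
      by (rule eqa_dp[OF coassoc_DA eqa_P3]) (use Cons False in blast)
    also have "eqa \<dots> (dp (RR (DA a)) (RR (PB (Dwa l))))" by (rule eqa_dp[OF eqa_refl eqa_sym[OF RR_PB[OF s2_Dw]]])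
    also have "eqa \<dots> (RR (dp (DA a) (PB (Dwa l))))" by (rule eqa_sym[OF RR_mult[OF s2_DA s]])
    also have "\<dots> = RR (Dwa (a # l))" using False by (simp add: Dw_cons2)
    finally show ?thesis .
  qed
qed

lemma coassoc_Sh:
  assumes "x \<in> Sh"
  shows "teq s (LL (Dea x)) (RR (Dea x))"
proof -
  have "LL (Dea x) = lin (\<lambda>w. LL (Dew w)) x" by (simp add: De_def' tmap2_lin)
  moreover have "RR (Dea x) = lin (\<lambda>w. RR (Dew w)) x" by (simp add: De_def' tmap2_lin)
  moreover have "teq s (lin (\<lambda>w. LL (Dew w)) x) (lin (\<lambda>w. RR (Dew w)) x)"
  proof (rule teq_lin_cong)
    fix w assume hw: "w \<in> Poly_Mapping.keys x"
    obtain v where v: "w = [v]" using Sh_keys[OF assms hw] by blast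
    show "teq s (LL (Dew w)) (RR (Dew w))"
    proof (cases "v = []")
      case True then show ?thesis using v by (simp add: teq_refl)
    next
      case False then show ?thesis using v coassoc_words[OF False] eqa_teq by simp
    qed
  qed
  ultimately show ?thesis by simp
qed

end


context shb
begin

lemma prj_lin: "prj (x + y) = prj x + prj y" "prj (tsmult c x) = tsmult c (prj x)"
  by (simp_all add: prj_def lin_add lin_tsmult)

lemma dp_prj_left: "dp x y = dp (prj x) y"
proof -
  have "dp (prj x) y = lin (\<lambda>w. dp (if [] \<in> set w then 0 else wd w) y) x"
    by (simp add: prj_def dp_lin_left)
  also have "\<dots> = lin (\<lambda>w. dp (wd w) y) x"
  proof (rule lin_cong)
    fix w
    show "dp (if [] \<in> set w then 0 else wd w) y = dp (wd w) y"
    proof (cases "[] \<in> set w")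
      case True
      then have "W w = (\<lambda>_. 0)" by (intro ext) (simp add: W_nil)
      then have "dp (wd w) y = 0" by (simp add: dp_as_lin[of "wd w"])
      then show ?thesis using True by simp
    qed simp
  qed
  also have "\<dots> = dp x y" by (rule dp_expand_left[symmetric])
  finally show ?thesis ..
qed

lemma dp_prj_right: "dp x y = dp x (prj y)"
  using dp_prj_left[of y x] dp_comm by metis

lemma prj_s1: "x \<in> Sh \<Longrightarrow> s1 (prj x)"
  unfolding prj_def
proof (rule s1_lin)
  fix w assume "x \<in> Sh" "w \<in> Poly_Mapping.keys x"
  then obtain v where "w = [v]" using Sh_keys by blast
  then show "s1 (if [] \<in> set w then 0 else wd w)" by auto
qed

lemma teq_prj: "teq s (prj x) x"
proof -
  have "prj x - x = lin (\<lambda>w. (if [] \<in> set w then 0 else wd w) - wd w) x"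
    by (simp add: prj_def lin_fun_diff lin_wd_id)
  also have "\<dots> \<in> kspan (tensor_rels s)"
  proof (rule kspan_lin_keys)
    fix w
    show "(if [] \<in> set w then 0 else wd w) - wd w \<in> kspan (tensor_rels s)"
    proof (cases "[] \<in> set w")
      case True
      then have "wd w \<in> tensor_rels s" unfolding tensor_rels_eq by blast
      then show ?thesis using True kspan_uminus[OF kspan_gen] by simp
    qed (simp add: kspan_zero)
  qed
  finally show ?thesis by (simp add: teq_def)
qed

lemma s1_Sh: "s1 x \<Longrightarrow> x \<in> Sh"
  unfolding Sh_def using s1_keys by blast

lemma s2_Sh2: "s2 x \<Longrightarrow> x \<in> Sh2"
  unfolding Sh2_def using s2_keys by blast

lemma teq_tsmult: "teq s x y \<Longrightarrow> teq s (tsmult c x) (tsmult c y)"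
  unfolding teq_def using kspan_tsmult[of "x - y" _ c] by (simp add: tsmult_diff_right)

lemma ue_one: "ue e c = tsmult c one"
  by (simp add: ue_def)

lemma main:
  shows
        "(\<forall>x\<in>Sh. \<forall>y\<in>Sh. dprod m e lam kap x y \<in> Sh)
     \<and> (\<forall>x\<in>Sh. \<forall>x'\<in>Sh. \<forall>y\<in>Sh. teq s x x' \<longrightarrow>
          teq s (dprod m e lam kap x y) (dprod m e lam kap x' y)
        \<and> teq s (dprod m e lam kap y x) (dprod m e lam kap y x'))
     \<and> (\<forall>x\<in>Sh. \<forall>y\<in>Sh. \<forall>z\<in>Sh. \<forall>c.
          teq s (dprod m e lam kap (x + y) z) (dprod m e lam kap x z + dprod m e lam kap y z)
        \<and> teq s (dprod m e lam kap z (x + y)) (dprod m e lam kap z x + dprod m e lam kap z y)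
        \<and> teq s (dprod m e lam kap (tsmult c x) y) (tsmult c (dprod m e lam kap x y))
        \<and> teq s (dprod m e lam kap x (tsmult c y)) (tsmult c (dprod m e lam kap x y)))
     \<and> (\<forall>x\<in>Sh. \<forall>y\<in>Sh. \<forall>z\<in>Sh.
          teq s (dprod m e lam kap (dprod m e lam kap x y) z) (dprod m e lam kap x (dprod m e lam kap y z)))
     \<and> (\<forall>x\<in>Sh. \<forall>c.
          teq s (dprod m e lam kap (ue e c) x) (tsmult c x)
        \<and> teq s (dprod m e lam kap x (ue e c)) (tsmult c x))
         \<and> (\<forall>x\<in>Sh. De m e lam kap mu DA epsA x \<in> Sh2)
     \<and> (\<forall>x\<in>Sh. \<forall>x'\<in>Sh. teq s x x' \<longrightarrow>
          teq s (De m e lam kap mu DA epsA x) (De m e lam kap mu DA epsA x')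
        \<and> epse epsA mu x = epse epsA mu x')
     \<and> (\<forall>x\<in>Sh. \<forall>y\<in>Sh. \<forall>c.
          teq s (De m e lam kap mu DA epsA (x + y)) (De m e lam kap mu DA epsA x + De m e lam kap mu DA epsA y)
        \<and> teq s (De m e lam kap mu DA epsA (tsmult c x)) (tsmult c (De m e lam kap mu DA epsA x))
        \<and> epse epsA mu (x + y) = epse epsA mu x + epse epsA mu y
        \<and> epse epsA mu (tsmult c x) = c * epse epsA mu x)
     \<and> (\<forall>x\<in>Sh.
          teq s (tmap2 (Dw m e lam kap mu DA epsA) (\<lambda>v. wd [v]) (De m e lam kap mu DA epsA x))
                (tmap2 (\<lambda>v. wd [v]) (Dw m e lam kap mu DA epsA) (De m e lam kap mu DA epsA x)))
     \<and> (\<forall>x\<in>Sh.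
          teq s (tmap2 (\<lambda>v. tsmult (epsw epsA mu v) (wd [])) (\<lambda>v. wd [v]) (De m e lam kap mu DA epsA x)) x
        \<and> teq s (tmap2 (\<lambda>v. wd [v]) (\<lambda>v. tsmult (epsw epsA mu v) (wd [])) (De m e lam kap mu DA epsA x)) x)
         \<and> (\<forall>x\<in>Sh. \<forall>y\<in>Sh.
          teq s (De m e lam kap mu DA epsA (dprod m e lam kap x y))
                (dprod m e lam kap (De m e lam kap mu DA epsA x) (De m e lam kap mu DA epsA y))
        \<and> epse epsA mu (dprod m e lam kap x y) = epse epsA mu x * epse epsA mu y)
     \<and> teq s (De m e lam kap mu DA epsA (ue e 1)) (wd [[e], [e]])
     \<and> epse epsA mu (ue e 1) = 1"
  proof (intro conjI)
  show "\<forall>x\<in>Sh. \<forall>y\<in>Sh. dp x y \<in> Sh"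
  proof (intro ballI)
    fix x y :: "('a,'k) tw" assume "x \<in> Sh" "y \<in> Sh"
    then have "dp x y = dp (prj x) (prj y)" "s1 (dp (prj x) (prj y))"
      using dp_prj_left dp_prj_right dp_s1 prj_s1 by metis+
    then show "dp x y \<in> Sh" using s1_Sh by simp
  qed
  show "\<forall>x\<in>Sh. \<forall>x'\<in>Sh. \<forall>y\<in>Sh. teq s x x' \<longrightarrow> teq s (dp x y) (dp x' y) \<and> teq s (dp y x) (dp y x')"
    by (auto intro: eqa_teq teq_dp_left teq_dp_right)
  show "\<forall>x\<in>Sh. \<forall>y\<in>Sh. \<forall>z\<in>Sh. \<forall>c. teq s (dp (x + y) z) (dp x z + dp y z) \<and> teq s (dp z (x + y)) (dp z x + dp z y) \<and>
      teq s (dp (tsmult c x) y) (tsmult c (dp x y)) \<and> teq s (dp x (tsmult c y)) (tsmult c (dp x y))"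
    by (simp add: dp_lin_simps teq_refl)
  show "\<forall>x\<in>Sh. \<forall>y\<in>Sh. \<forall>z\<in>Sh. teq s (dp (dp x y) z) (dp x (dp y z))"
  proof (intro ballI)
    fix x y z :: "('a,'k) tw" assume x: "x \<in> Sh" and y: "y \<in> Sh" and z: "z \<in> Sh"
    have "dp (dp x y) z = dp (dp (prj x) (prj y)) (prj z)"
      using dp_prj_left dp_prj_right by metis
    also have "\<dots> = dp (prj x) (dp (prj y) (prj z))"
      by (rule dp_assoc[OF prj_s1[OF x] prj_s1[OF y] prj_s1[OF z]])
    also have "\<dots> = dp x (dp y z)"
      using dp_prj_left dp_prj_right by metis
    finally show "teq s (dp (dp x y) z) (dp x (dp y z))" by (simp add: teq_refl)
  qed
  show "\<forall>x\<in>Sh. \<forall>c. teq s (dp (ue e c) x) (tsmult c x) \<and> teq s (dp x (ue e c)) (tsmult c x)"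
  proof (intro ballI allI)
    fix x :: "('a,'k) tw" and c :: 'k assume x: "x \<in> Sh"
    have "dp (ue e c) x = tsmult c (prj x)"
      using dp_one_left[OF prj_s1[OF x]] dp_prj_right[of one x] by (simp add: ue_one dp_tsmult_left)
    moreover have "dp x (ue e c) = tsmult c (prj x)"
      using dp_one_right[OF prj_s1[OF x]] dp_prj_left[of x one] by (simp add: ue_one dp_tsmult_right)
    ultimately show "teq s (dp (ue e c) x) (tsmult c x) \<and> teq s (dp x (ue e c)) (tsmult c x)"
      using teq_tsmult[OF teq_prj] by simp
  qed
  show "\<forall>x\<in>Sh. Dea x \<in> Sh2"
    using s2_De s2_Sh2 by blast
  show "\<forall>x\<in>Sh. \<forall>x'\<in>Sh. teq s x x' \<longrightarrow> teq s (Dea x) (Dea x') \<and> eps x = eps x'"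
    by (auto intro: eqa_teq teq_De teq_eps)
  show "\<forall>x\<in>Sh. \<forall>y\<in>Sh. \<forall>c. teq s (Dea (x + y)) (Dea x + Dea y) \<and> teq s (Dea (tsmult c x)) (tsmult c (Dea x)) \<and>
      eps (x + y) = eps x + eps y \<and> eps (tsmult c x) = c * eps x"
    by (simp add: De_lin eps_add eps_tsmult teq_refl)
  show "\<forall>x\<in>Sh. teq s (LL (Dea x)) (RR (Dea x))"
    using coassoc_Sh by blast
  show "\<forall>x\<in>Sh. teq s (EL (Dea x)) x \<and> teq s (ER (Dea x)) x"
    using counit_Sh by blast
  show "\<forall>x\<in>Sh. \<forall>y\<in>Sh. teq s (Dea (dp x y)) (dp (Dea x) (Dea y)) \<and> eps (dp x y) = eps x * eps y"
    using Dmult eps_mult eqa_teq by blast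
  show "teq s (Dea (ue e 1)) (wd [[e], [e]])"
    by (simp add: ue_one DA_unit)
  show "eps (ue e 1) = 1"
    by (simp add: ue_one epsA_unit)
qed

end

theorem theorem4p7:
  fixes s :: "'k::comm_ring_1 \<Rightarrow> 'a::ab_group_add \<Rightarrow> 'a"
    and m :: "'a \<Rightarrow> 'a \<Rightarrow> 'a" and e :: 'a
    and DA :: "'a \<Rightarrow> ('a,'k) tw" and epsA :: "'a \<Rightarrow> 'k"
    and lam kap mu :: 'k
  assumes root: "mu ^ 2 - lam * mu + kap = 0"
    \<comment> \<open>A is a k-module\<close>
    and module: "Modules.module s"
    \<comment> \<open>A is a commutative k-algebra with multiplication m and unit e\<close>
    and m_add_left: "\<And>x y z. m (x + y) z = m x z + m y z"
    and m_add_right: "\<And>x y z. m x (y + z) = m x y + m x z"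
    and m_scale_left: "\<And>c x y. m (s c x) y = s c (m x y)"
    and m_scale_right: "\<And>c x y. m x (s c y) = s c (m x y)"
    and m_assoc: "\<And>x y z. m (m x y) z = m x (m y z)"
    and m_comm: "\<And>x y. m x y = m y x"
    and m_unit: "\<And>x. m e x = x"
    \<comment> \<open>A is a coalgebra: Delta_A takes values in A (x) A and is k-linear, eps_A is k-linear\<close>
    and DA_shape: "\<And>x. \<forall>w\<in>Poly_Mapping.keys (DA x). \<exists>a b. w = [[a], [b]]"
    and DA_add: "\<And>x y. teq s (DA (x + y)) (DA x + DA y)"
    and DA_scale: "\<And>c x. teq s (DA (s c x)) (tsmult c (DA x))"
    and epsA_add: "\<And>x y. epsA (x + y) = epsA x + epsA y"
    and epsA_scale: "\<And>c x. epsA (s c x) = c * epsA x"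
    and coassoc_A: "\<And>x. teq s
          (tmap2 (\<lambda>v. case v of [a] \<Rightarrow> DA a | _ \<Rightarrow> 0) (\<lambda>v. wd [v]) (DA x))
          (tmap2 (\<lambda>v. wd [v]) (\<lambda>v. case v of [a] \<Rightarrow> DA a | _ \<Rightarrow> 0) (DA x))"
    and counit_A_left: "\<And>x. teq s
          (tmap2 (\<lambda>v. case v of [a] \<Rightarrow> tsmult (epsA a) (wd []) | _ \<Rightarrow> 0) (\<lambda>v. wd [v]) (DA x))
          (wd [[x]])"
    and counit_A_right: "\<And>x. teq s
          (tmap2 (\<lambda>v. wd [v]) (\<lambda>v. case v of [a] \<Rightarrow> tsmult (epsA a) (wd []) | _ \<Rightarrow> 0) (DA x))
          (wd [[x]])"
    \<comment> \<open>Delta_A and eps_A are algebra homomorphisms\<close>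
    and DA_mult: "\<And>x y. teq s (DA (m x y)) (dprod m e lam kap (DA x) (DA y))"
    and DA_unit: "teq s (DA e) (wd [[e], [e]])"
    and epsA_mult: "\<And>x y. epsA (m x y) = epsA x * epsA y"
    and epsA_unit: "epsA e = 1"
  shows
    \<comment> \<open>(Sh_e(A), <>, u_e) is a k-algebra\<close>
    "(\<forall>x\<in>Sh. \<forall>y\<in>Sh. dprod m e lam kap x y \<in> Sh)
     \<and> (\<forall>x\<in>Sh. \<forall>x'\<in>Sh. \<forall>y\<in>Sh. teq s x x' \<longrightarrow>
          teq s (dprod m e lam kap x y) (dprod m e lam kap x' y)
        \<and> teq s (dprod m e lam kap y x) (dprod m e lam kap y x'))
     \<and> (\<forall>x\<in>Sh. \<forall>y\<in>Sh. \<forall>z\<in>Sh. \<forall>c.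
          teq s (dprod m e lam kap (x + y) z) (dprod m e lam kap x z + dprod m e lam kap y z)
        \<and> teq s (dprod m e lam kap z (x + y)) (dprod m e lam kap z x + dprod m e lam kap z y)
        \<and> teq s (dprod m e lam kap (tsmult c x) y) (tsmult c (dprod m e lam kap x y))
        \<and> teq s (dprod m e lam kap x (tsmult c y)) (tsmult c (dprod m e lam kap x y)))
     \<and> (\<forall>x\<in>Sh. \<forall>y\<in>Sh. \<forall>z\<in>Sh.
          teq s (dprod m e lam kap (dprod m e lam kap x y) z) (dprod m e lam kap x (dprod m e lam kap y z)))
     \<and> (\<forall>x\<in>Sh. \<forall>c.
          teq s (dprod m e lam kap (ue e c) x) (tsmult c x)
        \<and> teq s (dprod m e lam kap x (ue e c)) (tsmult c x))
    \<comment> \<open>(Sh_e(A), Delta_e, eps_e) is a k-coalgebra\<close>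
     \<and> (\<forall>x\<in>Sh. De m e lam kap mu DA epsA x \<in> Sh2)
     \<and> (\<forall>x\<in>Sh. \<forall>x'\<in>Sh. teq s x x' \<longrightarrow>
          teq s (De m e lam kap mu DA epsA x) (De m e lam kap mu DA epsA x')
        \<and> epse epsA mu x = epse epsA mu x')
     \<and> (\<forall>x\<in>Sh. \<forall>y\<in>Sh. \<forall>c.
          teq s (De m e lam kap mu DA epsA (x + y)) (De m e lam kap mu DA epsA x + De m e lam kap mu DA epsA y)
        \<and> teq s (De m e lam kap mu DA epsA (tsmult c x)) (tsmult c (De m e lam kap mu DA epsA x))
        \<and> epse epsA mu (x + y) = epse epsA mu x + epse epsA mu y
        \<and> epse epsA mu (tsmult c x) = c * epse epsA mu x)
     \<and> (\<forall>x\<in>Sh.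
          teq s (tmap2 (Dw m e lam kap mu DA epsA) (\<lambda>v. wd [v]) (De m e lam kap mu DA epsA x))
                (tmap2 (\<lambda>v. wd [v]) (Dw m e lam kap mu DA epsA) (De m e lam kap mu DA epsA x)))
     \<and> (\<forall>x\<in>Sh.
          teq s (tmap2 (\<lambda>v. tsmult (epsw epsA mu v) (wd [])) (\<lambda>v. wd [v]) (De m e lam kap mu DA epsA x)) x
        \<and> teq s (tmap2 (\<lambda>v. wd [v]) (\<lambda>v. tsmult (epsw epsA mu v) (wd [])) (De m e lam kap mu DA epsA x)) x)
    \<comment> \<open>Delta_e and eps_e are algebra homomorphisms\<close>
     \<and> (\<forall>x\<in>Sh. \<forall>y\<in>Sh.
          teq s (De m e lam kap mu DA epsA (dprod m e lam kap x y))
                (dprod m e lam kap (De m e lam kap mu DA epsA x) (De m e lam kap mu DA epsA y))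
        \<and> epse epsA mu (dprod m e lam kap x y) = epse epsA mu x * epse epsA mu y)
     \<and> teq s (De m e lam kap mu DA epsA (ue e 1)) (wd [[e], [e]])
     \<and> epse epsA mu (ue e 1) = 1"
proof -
  interpret S: shb m e lam kap s DA epsA mu
    by unfold_locales (fact assms)+
  show ?thesis by (rule S.main)
qed


end
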